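(* For all $x,y\in\{5,6,7,8\}$ (not necessarily distinct) there is a snark $G$ with a Hist $T$ such that $oc(G,T)$ is the multiset $\{x,y\}$.
   Context: A snark is a cyclically $4$-edge-connected cubic (3-regular) graph of girth at least $5$ that admits no proper $3$-edge-colouring. A Hist of a cubic graph $G$ is a spanning tree $T$ of $G$ with no vertex of degree two (so every vertex of $T$ has degree $1$ or $3$). Given a Hist $T$ of a cubic graph $G$, the edges of $G$ not in $T$ form vertex-disjoint cycles whose vertices are exactly the leaves of $T$; these are the outer cycles of $(G,T)$. If $C_1,\dots,C_k$ are all outer cycles, $oc(G,T)$ denotes the multiset $\{|V(C_1)|,\dots,|V(C_k)|\}$ of their lengths. *)

theory Defs
  imports Main "HOL-Library.Multiset"
begin

definition simple_graph :: "'a set \<Rightarrow> 'a set set \<Rightarrow> bool" where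
  "simple_graph V E \<longleftrightarrow> finite V \<and>
     (\<forall>e\<in>E. \<exists>u v. e = {u, v} \<and> u \<noteq> v \<and> u \<in> V \<and> v \<in> V)"

definition degree :: "'a set set \<Rightarrow> 'a \<Rightarrow> nat" where
  "degree F v = card {e\<in>F. v \<in> e}"

definition cubic :: "'a set \<Rightarrow> 'a set set \<Rightarrow> bool" where
  "cubic V E \<longleftrightarrow> simple_graph V E \<and> (\<forall>v\<in>V. degree E v = 3)"

definition is_cycle :: "'a set set \<Rightarrow> 'a list \<Rightarrow> bool" where
  "is_cycle F vs \<longleftrightarrow> length vs \<ge> 3 \<and> distinct vs \<and>
     (\<forall>i < length vs. {vs ! i, vs ! ((i + 1) mod length vs)} \<in> F)"

definition girth_ge :: "'a set set \<Rightarrow> nat \<Rightarrow> bool" where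
  "girth_ge E k \<longleftrightarrow> (\<forall>vs. is_cycle E vs \<longrightarrow> length vs \<ge> k)"

definition cut_edges :: "'a set \<Rightarrow> 'a set set \<Rightarrow> 'a set \<Rightarrow> 'a set set" where
  "cut_edges V E X = {e\<in>E. \<exists>u\<in>X. \<exists>v\<in>V - X. e = {u, v}}"

definition cyclically_k_edge_connected :: "nat \<Rightarrow> 'a set \<Rightarrow> 'a set set \<Rightarrow> bool" where
  "cyclically_k_edge_connected k V E \<longleftrightarrow>
     (\<forall>X \<subseteq> V. card (cut_edges V E X) < k \<longrightarrow>
        \<not> ((\<exists>vs. is_cycle E vs \<and> set vs \<subseteq> X) \<and> (\<exists>vs. is_cycle E vs \<and> set vs \<subseteq> V - X)))"

definition three_edge_colourable :: "'a set set \<Rightarrow> bool" where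
  "three_edge_colourable E \<longleftrightarrow>
     (\<exists>c :: 'a set \<Rightarrow> nat. (\<forall>e\<in>E. c e < 3) \<and>
        (\<forall>e1\<in>E. \<forall>e2\<in>E. e1 \<noteq> e2 \<and> e1 \<inter> e2 \<noteq> {} \<longrightarrow> c e1 \<noteq> c e2))"

definition snark :: "'a set \<Rightarrow> 'a set set \<Rightarrow> bool" where
  "snark V E \<longleftrightarrow> cubic V E \<and> cyclically_k_edge_connected 4 V E \<and> girth_ge E 5 \<and>
     \<not> three_edge_colourable E"

definition adj_rel :: "'a set set \<Rightarrow> ('a \<times> 'a) set" where
  "adj_rel F = {(u, v). {u, v} \<in> F}"

definition reach :: "'a set set \<Rightarrow> 'a \<Rightarrow> 'a \<Rightarrow> bool" where
  "reach F u v \<longleftrightarrow> (u, v) \<in> (adj_rel F)\<^sup>*"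

definition spanning_tree :: "'a set \<Rightarrow> 'a set set \<Rightarrow> 'a set set \<Rightarrow> bool" where
  "spanning_tree V E T \<longleftrightarrow> T \<subseteq> E \<and> (\<forall>u\<in>V. \<forall>v\<in>V. reach T u v) \<and>
     \<not> (\<exists>vs. is_cycle T vs)"

definition hist :: "'a set \<Rightarrow> 'a set set \<Rightarrow> 'a set set \<Rightarrow> bool" where
  "hist V E T \<longleftrightarrow> spanning_tree V E T \<and> (\<forall>v\<in>V. degree T v = 1 \<or> degree T v = 3)"

definition leaves :: "'a set \<Rightarrow> 'a set set \<Rightarrow> 'a set" where
  "leaves V T = {v\<in>V. degree T v = 1}"

definition outer_cycles :: "'a set \<Rightarrow> 'a set set \<Rightarrow> 'a set set \<Rightarrow> 'a set set" where
  "outer_cycles V E T =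
     {{v\<in>leaves V T. reach (E - T) u v} | u. u \<in> leaves V T}"

definition oc :: "'a set \<Rightarrow> 'a set set \<Rightarrow> 'a set set \<Rightarrow> nat multiset" where
  "oc V E T = image_mset card (mset_set (outer_cycles V E T))"

end

theory Submission
  imports Defs
begin


definition mk :: "nat \<times> nat \<Rightarrow> nat set" where "mk p = {fst p, snd p}"

definition nrm :: "nat \<times> nat \<Rightarrow> nat \<times> nat" where
  "nrm p = (min (fst p) (snd p), max (fst p) (snd p))"

definition wf_es :: "nat \<Rightarrow> (nat\<times>nat) list \<Rightarrow> bool" where
  "wf_es n es \<longleftrightarrow> distinct es \<and> list_all (\<lambda>p. fst p < snd p \<and> snd p < n) es"

definition degl :: "(nat\<times>nat) list \<Rightarrow> nat \<Rightarrow> nat" where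
  "degl es v = length (filter (\<lambda>p. v = fst p \<or> v = snd p) es)"

lemma mk_nrm[simp]: "mk (nrm p) = mk p"
  by (cases "fst p \<le> snd p") (auto simp: mk_def nrm_def min_def max_def)

lemma mk_eq_iff: "fst p < snd p \<Longrightarrow> fst q < snd q \<Longrightarrow> mk p = mk q \<longleftrightarrow> p = q"
  by (cases p; cases q) (auto simp: mk_def doubleton_eq_iff)

lemma wf_es_D: "wf_es n es \<Longrightarrow> p \<in> set es \<Longrightarrow> fst p < snd p \<and> snd p < n"
  by (auto simp: wf_es_def list_all_iff)

lemma inj_mk: assumes w: "wf_es n es" shows "inj_on mk (set es)"
  unfolding inj_on_def
proof (intro ballI impI)
  fix p q assume p: "p \<in> set es" and q: "q \<in> set es" and e: "mk p = mk q"
  from wf_es_D[OF w p] wf_es_D[OF w q] have "fst p < snd p" "fst q < snd q" by auto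
  with e show "p = q" using mk_eq_iff by blast
qed

lemma degree_eq: assumes "wf_es n es" shows "degree (mk ` set es) v = degl es v"
proof -
  have "{e \<in> mk ` set es. v \<in> e} = mk ` set (filter (\<lambda>p. v = fst p \<or> v = snd p) es)"
    by (auto simp: mk_def)
  moreover have "inj_on mk (set (filter (\<lambda>p. v = fst p \<or> v = snd p) es))"
    using inj_mk[OF assms] by (rule inj_on_subset) auto
  moreover have "distinct (filter (\<lambda>p. v = fst p \<or> v = snd p) es)"
    using assms by (simp add: wf_es_def)
  moreover have "card (set (filter (\<lambda>p. v = fst p \<or> v = snd p) es)) = length (filter (\<lambda>p. v = fst p \<or> v = snd p) es)"
    using calculation(3) by (rule distinct_card)
  ultimately show ?thesis
    unfolding degree_def degl_def by (simp only: card_image)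
qed

lemma mk_in_E: assumes w: "wf_es n es" and l: "fst p < snd p" and m: "mk p \<in> mk ` set es"
  shows "p \<in> set es"
proof -
  from m obtain q where q: "q \<in> set es" "mk p = mk q" by auto
  from wf_es_D[OF w q(1)] have "fst q < snd q" by auto
  with l q(2) have "p = q" using mk_eq_iff by blast
  with q(1) show ?thesis by simp
qed

lemma nrm_lt: "a \<noteq> b \<Longrightarrow> fst (nrm (a,b)) < snd (nrm (a,b))"
  by (auto simp: nrm_def)

lemma edge_in: "wf_es n es \<Longrightarrow> {a,b} \<in> mk ` set es \<Longrightarrow> a \<noteq> b \<and> nrm (a,b) \<in> set es \<and> a < n \<and> b < n"
proof -
  assume w: "wf_es n es" and e: "{a,b} \<in> mk ` set es"
  then obtain p where p: "p \<in> set es" "{a,b} = mk p" by auto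
  from wf_es_D[OF w p(1)] have "fst p < snd p" "snd p < n" by auto
  with p(2) have ab: "a \<noteq> b" "a < n" "b < n" by (auto simp: mk_def doubleton_eq_iff)
  have "mk (nrm (a,b)) \<in> mk ` set es" using e by (subst mk_nrm) (simp add: mk_def)
  then have "nrm (a,b) \<in> set es" using mk_in_E[OF w nrm_lt[OF ab(1)]] by simp
  with ab show ?thesis by simp
qed

lemma cubic_ok:
  assumes w: "wf_es n es" and d: "list_all (\<lambda>v. degl es v = 3) [0..<n]"
  shows "cubic {0..<n} (mk ` set es)"
  unfolding cubic_def simple_graph_def
proof (intro conjI ballI)
  show "finite {0..<n}" by simp
next
  fix e assume "e \<in> mk ` set es"
  then obtain p where "p \<in> set es" "e = mk p" by auto
  moreover have "fst p < snd p \<and> snd p < n" using wf_es_D[OF w] calculation(1) by blast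
  ultimately have "e = {fst p, snd p} \<and> fst p \<noteq> snd p \<and> fst p \<in> {0..<n} \<and> snd p \<in> {0..<n}"
    by (auto simp: mk_def)
  then show "\<exists>u v. e = {u, v} \<and> u \<noteq> v \<and> u \<in> {0..<n} \<and> v \<in> {0..<n}" by blast
next
  fix v assume "v \<in> {0..<n}"
  with d show "degree (mk ` set es) v = 3" by (simp add: degree_eq[OF w] list_all_iff)
qed

definition nb :: "(nat\<times>nat) list \<Rightarrow> nat \<Rightarrow> nat list" where
  "nb es v = map (\<lambda>p. if fst p = v then snd p else fst p) (filter (\<lambda>p. v = fst p \<or> v = snd p) es)"

lemma nb_in: assumes "wf_es n es" "{u,v} \<in> mk ` set es" shows "v \<in> set (nb es u)"
proof -
  from edge_in[OF assms] have "u \<noteq> v" "nrm (u,v) \<in> set es" by auto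
  then show ?thesis
  proof (cases "u < v")
    case True
    with \<open>nrm (u,v) \<in> set es\<close> have "(u,v) \<in> set es" by (simp add: nrm_def)
    then have "(u,v) \<in> set (filter (\<lambda>p. u = fst p \<or> u = snd p) es)" by simp
    then show ?thesis unfolding nb_def set_map by (rule rev_image_eqI) simp
  next
    case False
    with \<open>u \<noteq> v\<close> \<open>nrm (u,v) \<in> set es\<close> have "(v,u) \<in> set es" by (simp add: nrm_def)
    then have "(v,u) \<in> set (filter (\<lambda>p. u = fst p \<or> u = snd p) es)" by simp
    then show ?thesis unfolding nb_def set_map by (rule rev_image_eqI) (use \<open>u \<noteq> v\<close> in simp)
  qed
qed

definition check_girth :: "nat \<Rightarrow> (nat\<times>nat) list \<Rightarrow> bool" where
  "check_girth n es = list_all (\<lambda>a. list_all (\<lambda>b. list_all (\<lambda>c. c = a \<or>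
      (a \<notin> set (nb es c) \<and> list_all (\<lambda>d. d = b \<or> d = a \<or> a \<notin> set (nb es d)) (nb es c)))
     (nb es b)) (nb es a)) [0..<n]"

lemma girth_ok:
  assumes w: "wf_es n es" and g: "check_girth n es"
  shows "girth_ge (mk ` set es) 5"
  unfolding girth_ge_def
proof (intro allI impI)
  fix vs assume c: "is_cycle (mk ` set es) vs"
  let ?E = "mk ` set es"
  from c have l3: "length vs \<ge> 3" and dis: "distinct vs"
    and ed: "\<And>i. i < length vs \<Longrightarrow> {vs ! i, vs ! ((i + 1) mod length vs)} \<in> ?E"
    by (auto simp: is_cycle_def)
  show "length vs \<ge> 5"
  proof (rule ccontr)
    assume "\<not> 5 \<le> length vs"
    then have "length vs = 3 \<or> length vs = 4" using l3 by auto
    then show False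
    proof
      assume L: "length vs = 3"
      define a b c where "a = vs!0" "b = vs!1" "c = vs!2"
      have m: "(0+1) mod length vs = 1" "(1+1) mod length vs = 2" "(2+1) mod length vs = 0" using L by simp_all
      have e1: "{a,b} \<in> ?E" using ed[of 0] L unfolding m by (simp add: a_b_c_def)
      have e2: "{b,c} \<in> ?E" using ed[of 1] L unfolding m by (simp add: a_b_c_def)
      have e3: "{c,a} \<in> ?E" using ed[of 2] L unfolding m by (simp add: a_b_c_def)
      have an: "a < n" using edge_in[OF w e1] by simp
      have "b \<in> set (nb es a)" "c \<in> set (nb es b)" "a \<in> set (nb es c)"
        using nb_in[OF w e1] nb_in[OF w e2] nb_in[OF w e3] by auto
      moreover have "c \<noteq> a" using dis L by (simp add: a_b_c_def nth_eq_iff_index_eq)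
      moreover have "list_all (\<lambda>b. list_all (\<lambda>c. c = a \<or>
      (a \<notin> set (nb es c) \<and> list_all (\<lambda>d. d = b \<or> d = a \<or> a \<notin> set (nb es d)) (nb es c)))
     (nb es b)) (nb es a)" using g an unfolding check_girth_def list_all_iff by simp
      ultimately have H: "b \<in> set (nb es a)" "c \<in> set (nb es b)" "a \<in> set (nb es c)"
        "c \<noteq> a" "\<forall>b\<in>set (nb es a). \<forall>c\<in>set (nb es b). c = a \<or>
      (a \<notin> set (nb es c) \<and> (\<forall>d\<in>set (nb es c). d = b \<or> d = a \<or> a \<notin> set (nb es d)))"
        by (simp_all only: list_all_iff not_False_eq_True)
      from H(5) H(1) have "\<forall>c\<in>set (nb es b). c = a \<or>
      (a \<notin> set (nb es c) \<and> (\<forall>d\<in>set (nb es c). d = b \<or> d = a \<or> a \<notin> set (nb es d)))" by (rule bspec)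
      from this H(2) have "c = a \<or>
      (a \<notin> set (nb es c) \<and> (\<forall>d\<in>set (nb es c). d = b \<or> d = a \<or> a \<notin> set (nb es d)))" by (rule bspec)
      with H(3,4) show False by simp
    next
      assume L: "length vs = 4"
      define a b c d where "a = vs!0" "b = vs!1" "c = vs!2" "d = vs!3"
      have m: "(0+1) mod length vs = 1" "(1+1) mod length vs = 2" "(2+1) mod length vs = 3" "(3+1) mod length vs = 0" using L by simp_all
      have e1: "{a,b} \<in> ?E" using ed[of 0] L unfolding m by (simp add: a_b_c_d_def)
      have e2: "{b,c} \<in> ?E" using ed[of 1] L unfolding m by (simp add: a_b_c_d_def)
      have e3: "{c,d} \<in> ?E" using ed[of 2] L unfolding m by (simp add: a_b_c_d_def)
      have e4: "{d,a} \<in> ?E" using ed[of 3] L unfolding m by (simp add: a_b_c_d_def)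
      have an: "a < n" using edge_in[OF w e1] by simp
      have "b \<in> set (nb es a)" "c \<in> set (nb es b)" "d \<in> set (nb es c)" "a \<in> set (nb es d)"
        using nb_in[OF w e1] nb_in[OF w e2] nb_in[OF w e3] nb_in[OF w e4] by auto
      moreover have "c \<noteq> a" "d \<noteq> b" "d \<noteq> a" using dis L by (simp_all add: a_b_c_d_def nth_eq_iff_index_eq)
      moreover have "list_all (\<lambda>b. list_all (\<lambda>c. c = a \<or>
      (a \<notin> set (nb es c) \<and> list_all (\<lambda>d. d = b \<or> d = a \<or> a \<notin> set (nb es d)) (nb es c)))
     (nb es b)) (nb es a)" using g an unfolding check_girth_def list_all_iff by simp
      ultimately have H: "b \<in> set (nb es a)" "c \<in> set (nb es b)" "d \<in> set (nb es c)" "a \<in> set (nb es d)"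
        "c \<noteq> a" "d \<noteq> b" "d \<noteq> a" "\<forall>b\<in>set (nb es a). \<forall>c\<in>set (nb es b). c = a \<or>
      (a \<notin> set (nb es c) \<and> (\<forall>d\<in>set (nb es c). d = b \<or> d = a \<or> a \<notin> set (nb es d)))"
        by (simp_all only: list_all_iff not_False_eq_True)
      from H(8) H(1) have "\<forall>c\<in>set (nb es b). c = a \<or>
      (a \<notin> set (nb es c) \<and> (\<forall>d\<in>set (nb es c). d = b \<or> d = a \<or> a \<notin> set (nb es d)))" by (rule bspec)
      from this H(2) have "c = a \<or>
      (a \<notin> set (nb es c) \<and> (\<forall>d\<in>set (nb es c). d = b \<or> d = a \<or> a \<notin> set (nb es d)))" by (rule bspec)
      with H(5) have "\<forall>d\<in>set (nb es c). d = b \<or> d = a \<or> a \<notin> set (nb es d)" by simp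
      from this H(3) have "d = b \<or> d = a \<or> a \<notin> set (nb es d)" by (rule bspec)
      with H(4,6,7) show False by simp
    qed
  qed
qed



fun touches :: "nat\<times>nat \<Rightarrow> nat\<times>nat \<Rightarrow> bool" where
 "touches (a,b) (c,d) = (a=c \<or> a=d \<or> b=c \<or> b=d)"
definition okc :: "nat\<times>nat \<Rightarrow> nat \<Rightarrow> ((nat\<times>nat)\<times>nat) list \<Rightarrow> bool" where
 "okc e c asg = list_all (\<lambda>(f,d). touches e f \<longrightarrow> d \<noteq> c) asg"
fun srch :: "(nat\<times>nat) list \<Rightarrow> ((nat\<times>nat)\<times>nat) list \<Rightarrow> bool" where
 "srch [] asg = True"
| "srch (e#es) asg = ((if okc e 0 asg then srch es ((e,0)#asg) else False) \<or>
     (if okc e 1 asg then srch es ((e,1)#asg) else False) \<or> (if okc e 2 asg then srch es ((e,2)#asg) else False))"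

lemma touches_mk: "touches e f \<Longrightarrow> mk e \<inter> mk f \<noteq> {}"
  by (cases e; cases f) (auto simp: mk_def)

lemma srch_complete:
  assumes w: "wf_es n es"
    and col: "\<forall>e\<in>mk ` set es. col e < (3::nat)"
    and prp: "\<forall>e1\<in>mk ` set es. \<forall>e2\<in>mk ` set es. e1 \<noteq> e2 \<and> e1 \<inter> e2 \<noteq> {} \<longrightarrow> col e1 \<noteq> col e2"
  shows "set rest \<subseteq> set es \<Longrightarrow> set (map fst asg) \<subseteq> set es \<Longrightarrow> distinct (rest @ map fst asg)
     \<Longrightarrow> (\<forall>x\<in>set asg. col (mk (fst x)) = snd x) \<Longrightarrow> srch rest asg"
proof (induction rest arbitrary: asg)
  case Nil show ?case by simp
next
  case (Cons e rest)
  define c where "c = col (mk e)"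
  have eE: "e \<in> set es" using Cons.prems(1) by simp
  have c3: "c < 3" using col eE unfolding c_def by blast
  have ok: "okc e c asg"
    unfolding okc_def list_all_iff
  proof
    fix x assume x: "x \<in> set asg"
    obtain f d where xfd: "x = (f,d)" by (cases x)
    have fE: "f \<in> set es" using Cons.prems(2) x xfd by force
    have fe: "f \<noteq> e" using Cons.prems(3) x xfd by force
    have mfe: "mk f \<noteq> mk e" using inj_mk[OF w] fE eE fe unfolding inj_on_def by blast
    have d: "d = col (mk f)" using Cons.prems(4) x xfd by force
    show "case x of (f, d) \<Rightarrow> touches e f \<longrightarrow> d \<noteq> c"
    proof (simp add: xfd, intro impI)
      assume "touches e f"
      then have "mk e \<inter> mk f \<noteq> {}" by (rule touches_mk)
      then have "col (mk e) \<noteq> col (mk f)" using prp fE eE mfe by blast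
      then show "d \<noteq> c" using d c_def by simp
    qed
  qed
  have rec: "srch rest ((e,c)#asg)"
  proof (rule Cons.IH)
    show "set rest \<subseteq> set es" using Cons.prems(1) by simp
    show "set (map fst ((e, c) # asg)) \<subseteq> set es" using Cons.prems(2) eE by simp
    show "distinct (rest @ map fst ((e, c) # asg))" using Cons.prems(3) by auto
    show "\<forall>x\<in>set ((e, c) # asg). col (mk (fst x)) = snd x" using Cons.prems(4) c_def by simp
  qed
  have "c = 0 \<or> c = 1 \<or> c = 2" using c3 by arith
  then show ?case using ok rec by auto
qed

lemma three_cover: "(a1::nat) < 3 \<Longrightarrow> a2 < 3 \<Longrightarrow> a3 < 3 \<Longrightarrow> a1 \<noteq> a2 \<Longrightarrow> a1 \<noteq> a3 \<Longrightarrow> a2 \<noteq> a3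
   \<Longrightarrow> z < 3 \<Longrightarrow> z = a1 \<or> z = a2 \<or> z = a3"
  by arith

definition check_col :: "(nat\<times>nat) list \<Rightarrow> (nat\<times>nat) list \<Rightarrow> nat\<times>nat \<Rightarrow> nat\<times>nat \<Rightarrow> nat\<times>nat \<Rightarrow> bool" where
  "check_col es rest e1 e2 e3 \<longleftrightarrow> list_all (\<lambda>p. p \<in> set es) (rest @ [e1,e2,e3]) \<and> distinct (rest @ [e1,e2,e3])
     \<and> touches e1 e2 \<and> touches e1 e3 \<and> touches e2 e3 \<and> \<not> srch rest [(e1,0),(e2,1),(e3,2)]"

lemma noncol:
  assumes w: "wf_es n es" and ch: "check_col es rest e1 e2 e3"
  shows "\<not> three_edge_colourable (mk ` set es)"
proof
  assume "three_edge_colourable (mk ` set es)"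
  then obtain col :: "nat set \<Rightarrow> nat" where col: "\<forall>e\<in>mk ` set es. col e < 3"
    and prp: "\<forall>e1\<in>mk ` set es. \<forall>e2\<in>mk ` set es. e1 \<noteq> e2 \<and> e1 \<inter> e2 \<noteq> {} \<longrightarrow> col e1 \<noteq> col e2"
    unfolding three_edge_colourable_def by blast
  from ch have sub: "set (rest @ [e1,e2,e3]) \<subseteq> set es" and dis: "distinct (rest @ [e1,e2,e3])"
    and t: "touches e1 e2" "touches e1 e3" "touches e2 e3"
    and ns: "\<not> srch rest [(e1,0),(e2,1),(e3,2)]"
    unfolding check_col_def list_all_iff by auto
  have E: "e1 \<in> set es" "e2 \<in> set es" "e3 \<in> set es" using sub by auto
  have D: "e1 \<noteq> e2" "e1 \<noteq> e3" "e2 \<noteq> e3" using dis by auto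
  have M: "mk e1 \<noteq> mk e2" "mk e1 \<noteq> mk e3" "mk e2 \<noteq> mk e3"
    using inj_mk[OF w] E D unfolding inj_on_def by blast+
  define a1 where "a1 = col (mk e1)"
  define a2 where "a2 = col (mk e2)"
  define a3 where "a3 = col (mk e3)"
  have A3: "a1 < 3" "a2 < 3" "a3 < 3" using col E unfolding a1_def a2_def a3_def by auto
  have AD: "a1 \<noteq> a2" "a1 \<noteq> a3" "a2 \<noteq> a3"
    using prp E M touches_mk[OF t(1)] touches_mk[OF t(2)] touches_mk[OF t(3)]
    unfolding a1_def a2_def a3_def by blast+
  define pi :: "nat \<Rightarrow> nat" where "pi z = (if z = a1 then 0 else if z = a2 then 1 else 2)" for z
  have piinj: "pi z = pi z' \<Longrightarrow> z < 3 \<Longrightarrow> z' < 3 \<Longrightarrow> z = z'" for z z'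
    using three_cover[OF A3 AD, of z] three_cover[OF A3 AD, of z'] AD
    unfolding pi_def by (auto split: if_splits)
  define col' where "col' e = pi (col e)" for e
  have "srch rest [(e1,0),(e2,1),(e3,2)]"
  proof (rule srch_complete[OF w])
    show "\<forall>e\<in>mk ` set es. col' e < 3" unfolding col'_def pi_def by auto
    show "\<forall>e1\<in>mk ` set es. \<forall>e2\<in>mk ` set es. e1 \<noteq> e2 \<and> e1 \<inter> e2 \<noteq> {} \<longrightarrow> col' e1 \<noteq> col' e2"
    proof (intro ballI impI)
      fix x y assume x: "x \<in> mk ` set es" and y: "y \<in> mk ` set es" and xy: "x \<noteq> y \<and> x \<inter> y \<noteq> {}"
      then have "col x \<noteq> col y" using prp by blast
      moreover have "col x < 3" "col y < 3" using col x y by auto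
      ultimately show "col' x \<noteq> col' y" unfolding col'_def using piinj by blast
    qed
    show "set rest \<subseteq> set es" using sub by simp
    show "set (map fst [(e1, 0), (e2, 1), (e3, 2)]) \<subseteq> set es" using E by simp
    show "distinct (rest @ map fst [(e1, 0::nat), (e2, 1), (e3, 2)])" using dis by simp
    show "\<forall>x\<in>set [(e1, 0), (e2, 1), (e3, 2)]. col' (mk (fst x)) = snd x"
    proof -
      have "col' (mk e1) = 0" "col' (mk e2) = 1" "col' (mk e3) = 2"
        using AD unfolding col'_def pi_def a1_def a2_def a3_def by auto
      then show ?thesis by simp
    qed
  qed
  with ns show False by simp
qed



definition pedges :: "nat list \<Rightarrow> (nat\<times>nat) list" where "pedges p = map nrm (zip p (tl p))"

definition walk :: "(nat\<times>nat) list \<Rightarrow> nat list \<Rightarrow> bool" where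
  "walk es p = list_all (\<lambda>x. snd x \<in> set (nb es (fst x))) (zip p (tl p))"

definition valid_entry :: "(nat\<times>nat) list \<Rightarrow> (nat\<times>nat) \<Rightarrow> (nat\<times>nat)\<times>nat list list \<Rightarrow> bool" where
 "valid_entry es e y = (case y of (f,ps) \<Rightarrow> length ps = 4 \<and>
    list_all (\<lambda>p. p \<noteq> [] \<and> (hd p = fst e \<or> hd p = snd e) \<and> (last p = fst f \<or> last p = snd f) \<and> walk es p) ps \<and>
    list_all (\<lambda>k. list_all (\<lambda>l. k < l \<longrightarrow> list_all (\<lambda>g. g \<notin> set (pedges (ps!l))) (pedges (ps!k))) [0..<4]) [0..<4])"

definition nontouch :: "nat \<Rightarrow> (nat\<times>nat) list \<Rightarrow> nat\<times>nat \<Rightarrow> (nat\<times>nat) list" where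
  "nontouch n es s = concat (map (\<lambda>c. map (\<lambda>d. (c,d)) (filter (\<lambda>d. c < d \<and> \<not> touches s (c,d)) (nb es c))) [0..<n])"

definition check_c4c :: "nat \<Rightarrow> (nat\<times>nat) list \<Rightarrow> (nat\<times>nat) list \<Rightarrow> ((nat\<times>nat)\<times>((nat\<times>nat)\<times>nat list list) list) list \<Rightarrow> bool" where
 "check_c4c n es fl certs = (length certs = 4 \<and> distinct (map fst certs) \<and>
    list_all (\<lambda>x. fst (fst x) < snd (fst x) \<and> snd (fst x) \<in> set (nb es (fst (fst x))) \<and>
       map fst (snd x) = filter (\<lambda>f. \<not> touches (fst x) f) fl \<and> list_all (valid_entry es (fst x)) (snd x)) certs)"

lemma nb_sound: assumes w: "wf_es n es" and v: "v \<in> set (nb es u)"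
  shows "{u,v} \<in> mk ` set es"
proof -
  from v obtain p where p0: "p \<in> set (filter (\<lambda>p. u = fst p \<or> u = snd p) es)" and p3: "v = (if fst p = u then snd p else fst p)"
    unfolding nb_def set_map by (rule imageE)
  from p0 have p: "p \<in> set es" "u = fst p \<or> u = snd p" "v = (if fst p = u then snd p else fst p)"
    using p3 by simp_all
  from wf_es_D[OF w p(1)] have "fst p < snd p" by simp
  with p(2,3) have "{u,v} = mk p" by (auto simp: mk_def)
  with p(1) show ?thesis by blast
qed

lemma walk_edges: assumes w: "wf_es n es" and wk: "walk es p"
  shows "list_all (\<lambda>g. g \<in> set es) (pedges p)"
  unfolding list_all_iff
proof
  fix g assume "g \<in> set (pedges p)"
  then obtain x where x: "x \<in> set (zip p (tl p))" "g = nrm x" unfolding pedges_def by auto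
  from wk x(1) have "snd x \<in> set (nb es (fst x))" unfolding walk_def list_all_iff by blast
  from nb_sound[OF w this] have E: "{fst x, snd x} \<in> mk ` set es" .
  from edge_in[OF w E] have "nrm (fst x, snd x) \<in> set es" by simp
  with x(2) show "g \<in> set es" by simp
qed

lemma cross: "p \<noteq> [] \<Longrightarrow> (hd p \<in> X) \<noteq> (last p \<in> X) \<Longrightarrow> \<exists>i. Suc i < length p \<and> (p!i \<in> X) \<noteq> (p!Suc i \<in> X)"
proof (induction p)
  case Nil then show ?case by simp
next
  case (Cons a p)
  show ?case
  proof (cases "p = []")
    case True with Cons.prems show ?thesis by simp
  next
    case False
    show ?thesis
    proof (cases "(a \<in> X) = (hd p \<in> X)")
      case True
      with Cons.prems False have "(hd p \<in> X) \<noteq> (last p \<in> X)" by simp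
      from Cons.IH[OF False this] obtain i where "Suc i < length p" "(p!i \<in> X) \<noteq> (p!Suc i \<in> X)" by blast
      then show ?thesis by (intro exI[of _ "Suc i"]) simp
    next
      case F2: False
      then show ?thesis using False by (intro exI[of _ 0]) (simp add: hd_conv_nth)
    qed
  qed
qed

lemma pedges_nth: "Suc i < length p \<Longrightarrow> nrm (p!i, p!Suc i) \<in> set (pedges p)"
proof -
  assume i: "Suc i < length p"
  then have "zip p (tl p) ! i = (p!i, p!Suc i)" by (simp add: nth_tl)
  moreover have "i < length (zip p (tl p))" using i by simp
  ultimately have "(p!i, p!Suc i) \<in> set (zip p (tl p))" by (metis nth_mem)
  then show ?thesis unfolding pedges_def by simp
qed

lemma path_cut:
  assumes w: "wf_es n es" and p: "p \<noteq> []" and pe: "list_all (\<lambda>g. g \<in> set es) (pedges p)"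
    and c: "(hd p \<in> X) \<noteq> (last p \<in> X)"
  shows "\<exists>g\<in>set (pedges p). mk g \<in> cut_edges {0..<n} (mk ` set es) X"
proof -
  from cross[OF p c] obtain i where i: "Suc i < length p" "(p!i \<in> X) \<noteq> (p!Suc i \<in> X)" by blast
  define g where "g = nrm (p!i, p!Suc i)"
  have gp: "g \<in> set (pedges p)" using pedges_nth[OF i(1)] g_def by simp
  then have gE: "g \<in> set es" using pe by (simp add: list_all_iff)
  have mg: "mk g = {p!i, p!Suc i}" unfolding g_def mk_nrm by (simp add: mk_def)
  have "{p!i, p!Suc i} \<in> mk ` set es" using gE mg by (metis image_eqI)
  from edge_in[OF w this] have lt: "p!i < n" "p!Suc i < n" by auto
  have "mk g \<in> cut_edges {0..<n} (mk ` set es) X"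
  proof (cases "p!i \<in> X")
    case True
    with i(2) lt have "p!Suc i \<in> {0..<n} - X" by simp
    with True show ?thesis unfolding cut_edges_def using gE mg by blast
  next
    case False
    with i(2) lt have "p!Suc i \<in> X" "p!i \<in> {0..<n} - X" by auto
    moreover have "mk g = {p!Suc i, p!i}" using mg by (simp add: insert_commute)
    ultimately show ?thesis unfolding cut_edges_def using gE by blast
  qed
  with gp show ?thesis by blast
qed

lemma touches_iff: "touches e f \<longleftrightarrow> (fst e = fst f \<or> fst e = snd f \<or> snd e = fst f \<or> snd e = snd f)"
  by (cases e; cases f) simp

lemma c4_side:
  assumes w: "wf_es n es" and ch: "check_c4c n es fl certs"
    and hit: "\<And>vs. is_cycle (mk ` set es) vs \<Longrightarrow> \<exists>i<length vs. nrm (vs!i, vs!((i+1) mod length vs)) \<in> set fl"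
    and sL: "(s, L) \<in> set certs" and s: "fst s \<in> X" "snd s \<in> X"
    and cy: "is_cycle (mk ` set es) vs" "set vs \<subseteq> {0..<n} - X"
  shows "4 \<le> card (cut_edges {0..<n} (mk ` set es) X)"
proof -
  let ?cut = "cut_edges {0..<n} (mk ` set es) X"
  from cy(1) have ed: "\<And>i. i < length vs \<Longrightarrow> {vs!i, vs!((i+1) mod length vs)} \<in> mk ` set es"
    unfolding is_cycle_def by auto
  from hit[OF cy(1)] obtain i where i: "i < length vs" and fl: "nrm (vs!i, vs!((i+1) mod length vs)) \<in> set fl" by blast
  define j where "j = (i+1) mod length vs"
  have j: "j < length vs" using i unfolding j_def by (intro mod_less_divisor) linarith
  have eij: "{vs!i, vs!j} \<in> mk ` set es" using ed[OF i] unfolding j_def .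
  define f where "f = nrm (vs!i, vs!j)"
  have ffl: "f \<in> set fl" using fl unfolding f_def j_def .
  from edge_in[OF w eij] have fE: "f \<in> set es" unfolding f_def by simp_all
  have "vs!i \<in> set vs" "vs!j \<in> set vs" using i j by (simp_all add: nth_mem)
  then have v01: "vs!i \<notin> X" "vs!j \<notin> X" using cy(2) by auto
  have fX: "fst f \<notin> X" "snd f \<notin> X" using v01 unfolding f_def nrm_def by (auto simp: min_def max_def)
  have nt: "\<not> touches s f" using s(1,2) fX unfolding touches_iff by auto
  have "f \<in> set (filter (\<lambda>f. \<not> touches s f) fl)" using ffl nt by simp
  moreover from ch sL have Lc: "map fst L = filter (\<lambda>f. \<not> touches s f) fl" and ve: "list_all (valid_entry es s) L"
    unfolding check_c4c_def list_all_iff by auto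
  ultimately have "f \<in> set (map fst L)" by simp
  then obtain ps where fps: "(f, ps) \<in> set L" by auto
  from ve fps have "valid_entry es s (f, ps)" unfolding list_all_iff by blast
  then have l4: "length ps = 4"
    and pp0: "\<forall>p\<in>set ps. p \<noteq> [] \<and> (hd p = fst s \<or> hd p = snd s) \<and> (last p = fst f \<or> last p = snd f) \<and> walk es p"
    and dj: "\<forall>k\<in>set [0..<4]. \<forall>l\<in>set [0..<4]. k < l \<longrightarrow> (\<forall>g\<in>set (pedges (ps!k)). g \<notin> set (pedges (ps!l)))"
    unfolding valid_entry_def list_all_iff by auto
  have pp: "\<forall>p\<in>set ps. p \<noteq> [] \<and> (hd p = fst s \<or> hd p = snd s) \<and> (last p = fst f \<or> last p = snd f) \<and> (\<forall>g\<in>set (pedges p). g \<in> set es)"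
    using pp0 walk_edges[OF w] unfolding list_all_iff by blast
  have "\<forall>k\<in>{..<4::nat}. \<exists>g. g \<in> set (pedges (ps!k)) \<and> mk g \<in> ?cut"
  proof
    fix k :: nat assume "k \<in> {..<4}"
    then have "ps!k \<in> set ps" using l4 by simp
    with pp have P: "ps!k \<noteq> []" "hd (ps!k) = fst s \<or> hd (ps!k) = snd s" "last (ps!k) = fst f \<or> last (ps!k) = snd f"
      "\<forall>g\<in>set (pedges (ps!k)). g \<in> set es" by auto
    have "hd (ps!k) \<in> X" using P(2) s by auto
    moreover have "last (ps!k) \<notin> X" using P(3) fX by auto
    ultimately have "(hd (ps!k) \<in> X) \<noteq> (last (ps!k) \<in> X)" by simp
    from path_cut[OF w P(1) _ this] P(4) show "\<exists>g. g \<in> set (pedges (ps!k)) \<and> mk g \<in> ?cut"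
      unfolding list_all_iff by blast
  qed
  then obtain gf where gf: "\<forall>k\<in>{..<4::nat}. gf k \<in> set (pedges (ps!k)) \<and> mk (gf k) \<in> ?cut"
    by (metis bchoice)
  have gfE: "gf k \<in> set es" if "k < 4" for k
  proof -
    have "ps!k \<in> set ps" using l4 that by simp
    with pp gf that show ?thesis by auto
  qed
  have dj': "g \<notin> set (pedges (ps!l))" if "k < 4" "l < 4" "k < l" "g \<in> set (pedges (ps!k))" for k l g
  proof -
    have "k \<in> set [0..<4]" "l \<in> set [0..<4]" using that by auto
    then show ?thesis using dj that(3,4) by blast
  qed
  have inj: "inj_on gf {..<4}"
  proof (rule inj_onI)
    fix k l assume k: "k \<in> {..<4::nat}" and l: "l \<in> {..<4::nat}" and e: "gf k = gf l"
    show "k = l"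
    proof (rule ccontr)
      assume "k \<noteq> l"
      then have "k < l \<or> l < k" by arith
      then show False
      proof
        assume kl: "k < l"
        have k4: "k < 4" "l < 4" using k l by auto
        have "gf k \<in> set (pedges (ps!k))" using gf k by blast
        from dj'[OF k4 kl this] have "gf k \<notin> set (pedges (ps!l))" .
        moreover have "gf l \<in> set (pedges (ps!l))" using gf l by blast
        ultimately show False using e by simp
      next
        assume lk: "l < k"
        have k4: "k < 4" "l < 4" using k l by auto
        have "gf l \<in> set (pedges (ps!l))" using gf l by blast
        from dj'[OF k4(2,1) lk this] have "gf l \<notin> set (pedges (ps!k))" .
        moreover have "gf k \<in> set (pedges (ps!k))" using gf k by blast
        ultimately show False using e by simp
      qed
    qed
  qed
  have inj2: "inj_on (mk \<circ> gf) {..<4}"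
  proof (rule comp_inj_on[OF inj])
    show "inj_on mk (gf ` {..<4})" using inj_mk[OF w] by (rule inj_on_subset) (use gfE in auto)
  qed
  have sub: "(mk \<circ> gf) ` {..<4} \<subseteq> ?cut" using gf by auto
  have fin: "finite ?cut" unfolding cut_edges_def by simp
  have "card ((mk \<circ> gf) ` {..<4}) = 4" using card_image[OF inj2] by simp
  with card_mono[OF fin sub] show ?thesis by simp
qed

lemma cut_sym: "X \<subseteq> V \<Longrightarrow> cut_edges V E (V - X) = cut_edges V E X"
  unfolding cut_edges_def by (auto simp: double_diff insert_commute)

lemma c4c_ok:
  assumes w: "wf_es n es" and ch: "check_c4c n es fl certs"
    and hit: "\<And>vs. is_cycle (mk ` set es) vs \<Longrightarrow> \<exists>i<length vs. nrm (vs!i, vs!((i+1) mod length vs)) \<in> set fl"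
  shows "cyclically_k_edge_connected 4 {0..<n} (mk ` set es)"
  unfolding cyclically_k_edge_connected_def
proof (intro allI impI notI)
  fix X assume X: "X \<subseteq> {0..<n}" and c: "card (cut_edges {0..<n} (mk ` set es) X) < 4"
    and cyc: "(\<exists>vs. is_cycle (mk ` set es) vs \<and> set vs \<subseteq> X) \<and> (\<exists>vs. is_cycle (mk ` set es) vs \<and> set vs \<subseteq> {0..<n} - X)"
  let ?cut = "cut_edges {0..<n} (mk ` set es) X"
  from cyc obtain v1 v2 where v1: "is_cycle (mk ` set es) v1" "set v1 \<subseteq> X"
    and v2: "is_cycle (mk ` set es) v2" "set v2 \<subseteq> {0..<n} - X" by blast
  define S where "S = map fst certs"
  have SL12: "length S = 4" "distinct S" using ch unfolding S_def check_c4c_def by auto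
  have "set S \<subseteq> set es"
  proof
    fix s assume "s \<in> set S"
    then obtain x where x: "x \<in> set certs" "s = fst x" unfolding S_def by auto
    with ch have "fst s < snd s" "snd s \<in> set (nb es (fst s))" unfolding check_c4c_def list_all_iff by auto
    from edge_in[OF w nb_sound[OF w this(2)]] this(1) show "s \<in> set es" by (simp add: nrm_def)
  qed
  with SL12 have SL: "length S = 4" "distinct S" "set S \<subseteq> set es" by auto
  have injS: "inj_on mk (set S)" using inj_mk[OF w] SL(3) by (rule inj_on_subset)
  have cS: "card (mk ` set S) = 4" using card_image[OF injS] SL distinct_card by metis
  have fin: "finite ?cut" unfolding cut_edges_def by simp
  have "\<not> mk ` set S \<subseteq> ?cut"
  proof
    assume "mk ` set S \<subseteq> ?cut"
    from card_mono[OF fin this] cS c show False by simp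
  qed
  then obtain s where sS: "s \<in> set S" and ns: "mk s \<notin> ?cut" by blast
  have sE: "s \<in> set es" using sS SL(3) by blast
  from sS obtain L where sLc: "(s, L) \<in> set certs" unfolding S_def by auto
  from wf_es_D[OF w sE] have sl: "fst s < n" "snd s < n" by auto
  have same: "(fst s \<in> X) = (snd s \<in> X)"
  proof (rule ccontr)
    assume d: "(fst s \<in> X) \<noteq> (snd s \<in> X)"
    have "mk s \<in> ?cut"
    proof (cases "fst s \<in> X")
      case True
      with d sl have "snd s \<in> {0..<n} - X" by simp
      with True sE show ?thesis unfolding cut_edges_def mk_def by blast
    next
      case False
      with d sl have "snd s \<in> X" "fst s \<in> {0..<n} - X" by auto
      moreover have "mk s = {snd s, fst s}" by (simp add: mk_def insert_commute)
      ultimately show ?thesis using sE unfolding cut_edges_def by blast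
    qed
    with ns show False by simp
  qed
  show False
  proof (cases "fst s \<in> X")
    case True
    with same have "snd s \<in> X" by simp
    from c4_side[OF w ch hit sLc True this v2] c show False by simp
  next
    case False
    with same have a1: "fst s \<in> {0..<n} - X" and a2: "snd s \<in> {0..<n} - X" using sl by auto
    have a3: "set v1 \<subseteq> {0..<n} - ({0..<n} - X)" using v1(2) X by blast
    have "4 \<le> card (cut_edges {0..<n} (mk ` set es) ({0..<n} - X))"
      by (rule c4_side[OF w ch hit sLc a1 a2 v1(1) a3])
    with cut_sym[OF X] c show False by simp
  qed
qed



definition check_tree :: "nat \<Rightarrow> (nat\<times>nat) list \<Rightarrow> nat list \<Rightarrow> nat list \<Rightarrow> bool" where
 "check_tree n ts par dep \<longleftrightarrow>
   list_all (\<lambda>p. (par!snd p = fst p \<and> dep!fst p < dep!snd p) \<or> (par!fst p = snd p \<and> dep!snd p < dep!fst p)) ts \<and>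
   list_all (\<lambda>v. v = 0 \<or> (nrm (v, par!v) \<in> set ts \<and> dep!(par!v) < dep!v)) [0..<n] \<and> 0 < n \<and>
   list_all (\<lambda>v. degl ts v = 1 \<or> degl ts v = 3) [0..<n]"

lemma adj_sym: "(u,v) \<in> adj_rel F \<Longrightarrow> (v,u) \<in> adj_rel F"
  by (simp add: adj_rel_def insert_commute)

lemma reach_sym: assumes "reach F u v" shows "reach F v u"
proof -
  from assms have "(u,v) \<in> (adj_rel F)\<^sup>*" by (simp add: reach_def)
  then have "(v,u) \<in> (adj_rel F)\<^sup>*"
  proof (induction rule: rtrancl_induct)
    case base then show ?case by simp
  next
    case (step y z)
    from adj_sym[OF step(2)] step(3) show ?case by (rule converse_rtrancl_into_rtrancl)
  qed
  then show ?thesis by (simp add: reach_def)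
qed

lemma reach_trans: "reach F u v \<Longrightarrow> reach F v w \<Longrightarrow> reach F u w"
  unfolding reach_def by (rule rtrancl_trans)

lemma reach_edge_step: "reach F u v \<Longrightarrow> {v,w} \<in> F \<Longrightarrow> reach F u w"
  unfolding reach_def by (rule rtrancl_into_rtrancl) (simp_all add: adj_rel_def)

lemma reach_refl: "reach F u u" by (simp add: reach_def)

lemma tree_conn:
  assumes w: "wf_es n ts" and ct: "check_tree n ts par dep"
  shows "v < n \<Longrightarrow> reach (mk ` set ts) v 0"
proof (induction "dep!v" arbitrary: v rule: less_induct)
  case less
  from ct have P: "\<forall>v\<in>set [0..<n]. v = 0 \<or> (nrm (v, par!v) \<in> set ts \<and> dep!(par!v) < dep!v)"
    unfolding check_tree_def list_all_iff by blast
  show ?case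
  proof (cases "v = 0")
    case True then show ?thesis by (simp add: reach_refl)
  next
    case False
    have "v \<in> set [0..<n]" using less.prems by simp
    with P have "v = 0 \<or> (nrm (v, par!v) \<in> set ts \<and> dep!(par!v) < dep!v)" by (rule bspec)
    with False have e: "nrm (v, par!v) \<in> set ts" and d: "dep!(par!v) < dep!v" by auto
    have "mk (nrm (v, par!v)) \<in> mk ` set ts" using e by blast
    then have E: "{v, par!v} \<in> mk ` set ts" unfolding mk_nrm by (simp add: mk_def)
    from edge_in[OF w E] have pn: "par!v < n" by simp
    have "reach (mk ` set ts) v (par!v)" using reach_edge_step[OF reach_refl E] .
    moreover have "reach (mk ` set ts) (par!v) 0" using less.hyps[OF d pn] .
    ultimately show ?thesis by (rule reach_trans)
  qed
qed

lemma edge_dir: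
  assumes w: "wf_es n ts" and ct: "check_tree n ts par dep" and e: "{x,y} \<in> mk ` set ts"
  shows "(par!y = x \<and> dep!x < dep!y) \<or> (par!x = y \<and> dep!y < dep!x)"
proof -
  from e obtain p where p: "p \<in> set ts" "{x,y} = mk p" by auto
  from ct p(1) have C: "(par!snd p = fst p \<and> dep!fst p < dep!snd p) \<or> (par!fst p = snd p \<and> dep!snd p < dep!fst p)"
    unfolding check_tree_def list_all_iff by blast
  from p(2) have "(x = fst p \<and> y = snd p) \<or> (x = snd p \<and> y = fst p)"
    unfolding mk_def doubleton_eq_iff by blast
  then show ?thesis using C by auto
qed

lemma mod_facts:
  assumes "(L::nat) \<ge> 3" "i < L"
  shows "(i + 1) mod L = (if i + 1 = L then 0 else i + 1)"
    and "(i + L - 1) mod L = (if i = 0 then L - 1 else i - 1)"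
    and "((i + L - 1) mod L + 1) mod L = i"
proof -
  show A: "(i + 1) mod L = (if i + 1 = L then 0 else i + 1)" using assms by auto
  show B: "(i + L - 1) mod L = (if i = 0 then L - 1 else i - 1)"
  proof (cases "i = 0")
    case True then show ?thesis using assms by simp
  next
    case False
    then have "i + L - 1 = (i - 1) + L" by simp
    then have "(i + L - 1) mod L = (i - 1) mod L" by simp
    also have "\<dots> = i - 1" using assms by simp
    finally show ?thesis using False by simp
  qed
  show "((i + L - 1) mod L + 1) mod L = i"
    unfolding B using assms by auto
qed

lemma tree_acyclic:
  assumes w: "wf_es n ts" and ct: "check_tree n ts par dep"
  shows "\<not> is_cycle (mk ` set ts) vs"
proof
  assume c: "is_cycle (mk ` set ts) vs"
  define L where "L = length vs"
  from c have l3: "L \<ge> 3" and dis: "distinct vs"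
    and ed: "\<And>i. i < L \<Longrightarrow> {vs ! i, vs ! ((i + 1) mod L)} \<in> mk ` set ts"
    unfolding L_def is_cycle_def by auto
  define f where "f j = dep!(vs!j)" for j
  have "0 \<in> {..<L}" using l3 by simp
  then have ne: "f ` {..<L} \<noteq> {}" by blast
  have fin: "finite (f ` {..<L})" by simp
  from Max_in[OF fin ne] obtain i where i: "i < L" "f i = Max (f ` {..<L})" by auto
  have mx: "f j \<le> f i" if "j < L" for j using Max_ge[OF fin] that i(2) by auto
  define nx where "nx = (i + 1) mod L"
  define pv where "pv = (i + L - 1) mod L"
  have nxL: "nx < L" and pvL: "pv < L" using l3 unfolding nx_def pv_def by auto
  have pv1: "(pv + 1) mod L = i" using mod_facts(3)[OF l3 i(1)] unfolding pv_def .
  have e1: "{vs!i, vs!nx} \<in> mk ` set ts" using ed[OF i(1)] unfolding nx_def .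
  have e2: "{vs!pv, vs!i} \<in> mk ` set ts" using ed[OF pvL] unfolding pv1 .
  have "par!(vs!i) = vs!nx"
    using edge_dir[OF w ct e1] mx[OF nxL] unfolding f_def by auto
  moreover have "par!(vs!i) = vs!pv"
    using edge_dir[OF w ct e2] mx[OF pvL] unfolding f_def by auto
  ultimately have "vs!nx = vs!pv" by simp
  with dis nxL pvL have "nx = pv" unfolding L_def by (simp add: nth_eq_iff_index_eq)
  then show False
    using mod_facts(1,2)[OF l3 i(1)] l3 i(1) unfolding nx_def pv_def by (auto split: if_splits)
qed

lemma wf_append: "wf_es n (ts @ os) \<Longrightarrow> wf_es n ts \<and> wf_es n os"
  by (simp add: wf_es_def)

lemma hist_ok:
  assumes w: "wf_es n (ts @ os)" and ct: "check_tree n ts par dep"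
  shows "hist {0..<n} (mk ` set (ts @ os)) (mk ` set ts)"
proof -
  have wt: "wf_es n ts" using wf_append[OF w] by simp
  have st: "spanning_tree {0..<n} (mk ` set (ts @ os)) (mk ` set ts)"
    unfolding spanning_tree_def
  proof (intro conjI ballI)
    show "mk ` set ts \<subseteq> mk ` set (ts @ os)" by auto
    fix u v assume u: "u \<in> {0..<n}" and v: "v \<in> {0..<n}"
    have "reach (mk ` set ts) u 0" using tree_conn[OF wt ct] u by simp
    moreover have "reach (mk ` set ts) 0 v" using tree_conn[OF wt ct] v by (simp add: reach_sym)
    ultimately show "reach (mk ` set ts) u v" by (rule reach_trans)
  next
    show "\<not> (\<exists>vs. is_cycle (mk ` set ts) vs)" using tree_acyclic[OF wt ct] by blast
  qed
  moreover have "\<forall>v\<in>{0..<n}. degree (mk ` set ts) v = 1 \<or> degree (mk ` set ts) v = 3"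
    using ct unfolding degree_eq[OF wt] check_tree_def list_all_iff by auto
  ultimately show ?thesis unfolding hist_def by blast
qed



definition cyc :: "(nat\<times>nat) list \<Rightarrow> nat list \<Rightarrow> bool" where
  "cyc os c = list_all (\<lambda>i. nrm (c!i, c!((i+1) mod length c)) \<in> set os) [0..<length c]"

definition check_oc :: "nat \<Rightarrow> (nat\<times>nat) list \<Rightarrow> (nat\<times>nat) list \<Rightarrow> nat list \<Rightarrow> nat list \<Rightarrow> bool" where
  "check_oc n ts os c1 c2 \<longleftrightarrow> list_all (\<lambda>v. (degl ts v = 1) = (v \<in> set c1 \<or> v \<in> set c2)) [0..<n] \<and>
     distinct c1 \<and> distinct c2 \<and> c1 \<noteq> [] \<and> c2 \<noteq> [] \<and> list_all (\<lambda>v. v \<notin> set c2) c1 \<and>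
     list_all (\<lambda>v. v < n) (c1 @ c2) \<and> cyc os c1 \<and> cyc os c2 \<and>
     list_all (\<lambda>p. (fst p \<in> set c1) = (snd p \<in> set c1)) os \<and>
     list_all (\<lambda>p. (fst p \<in> set c2) = (snd p \<in> set c2)) os"

lemma E_minus_T:
  assumes w: "wf_es n (ts @ os)"
  shows "mk ` set (ts @ os) - mk ` set ts = mk ` set os"
proof -
  have inj: "inj_on mk (set (ts @ os))" using inj_mk[OF w] .
  have d: "set ts \<inter> set os = {}" using w by (simp add: wf_es_def)
  have "mk ` set os \<inter> mk ` set ts = {}"
  proof (rule ccontr)
    assume "mk ` set os \<inter> mk ` set ts \<noteq> {}"
    then obtain p q where p: "p \<in> set os" and q: "q \<in> set ts" and e: "mk p = mk q" by blast
    have "p = q" using inj p q e unfolding inj_on_def by simp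
    with p q d show False by blast
  qed
  then show ?thesis by auto
qed

lemma closure:
  assumes cl: "list_all (\<lambda>p. (fst p \<in> S) = (snd p \<in> S)) os"
    and r: "reach (mk ` set os) u v" and u: "u \<in> S"
  shows "v \<in> S"
proof -
  from r have "(u,v) \<in> (adj_rel (mk ` set os))\<^sup>*" by (simp add: reach_def)
  then show ?thesis
  proof (induction rule: rtrancl_induct)
    case base then show ?case using u .
  next
    case (step y z)
    from step(2) have "{y,z} \<in> mk ` set os" by (simp add: adj_rel_def)
    then obtain p where p: "p \<in> set os" "{y,z} = mk p" by auto
    from cl p(1) have C: "(fst p \<in> S) = (snd p \<in> S)" by (simp add: list_all_iff)
    from p(2) have "(y = fst p \<and> z = snd p) \<or> (y = snd p \<and> z = fst p)"
      unfolding mk_def doubleton_eq_iff by blast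
    with C step(3) show ?case by auto
  qed
qed

lemma cyc_reach:
  assumes cy: "cyc os c"
  shows "i < length c \<Longrightarrow> reach (mk ` set os) (c!0) (c!i)"
proof (induction i)
  case 0 then show ?case by (simp add: reach_refl)
next
  case (Suc i)
  then have i: "i < length c" by simp
  from cy i have "nrm (c!i, c!((i+1) mod length c)) \<in> set os" unfolding cyc_def list_all_iff by simp
  moreover have "(i+1) mod length c = Suc i" using Suc.prems by simp
  ultimately have "nrm (c!i, c!Suc i) \<in> set os" by simp
  then have "mk (nrm (c!i, c!Suc i)) \<in> mk ` set os" by blast
  then have "{c!i, c!Suc i} \<in> mk ` set os" unfolding mk_nrm by (simp add: mk_def)
  with Suc.IH[OF i] show ?case by (rule reach_edge_step)
qed

lemma cyc_reach2:
  assumes cy: "cyc os c" and u: "u \<in> set c" and v: "v \<in> set c"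
  shows "reach (mk ` set os) u v"
proof -
  from u obtain i where i: "i < length c" "u = c!i" by (auto simp: in_set_conv_nth)
  from v obtain j where j: "j < length c" "v = c!j" by (auto simp: in_set_conv_nth)
  have "reach (mk ` set os) u (c!0)" using cyc_reach[OF cy i(1)] i(2) by (simp add: reach_sym)
  moreover have "reach (mk ` set os) (c!0) v" using cyc_reach[OF cy j(1)] j(2) by simp
  ultimately show ?thesis by (rule reach_trans)
qed

lemma oc_ok:
  assumes w: "wf_es n (ts @ os)" and co: "check_oc n ts os c1 c2"
  shows "oc {0..<n} (mk ` set (ts @ os)) (mk ` set ts) = {#length c1, length c2#}"
proof -
  have wt: "wf_es n ts" using wf_append[OF w] by simp
  from co have lv: "\<forall>v\<in>set [0..<n]. (degl ts v = 1) = (v \<in> set c1 \<or> v \<in> set c2)"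
    and d1: "distinct c1" and d2: "distinct c2" and n1: "c1 \<noteq> []" and n2: "c2 \<noteq> []"
    and dj: "\<forall>v\<in>set c1. v \<notin> set c2" and ln: "\<forall>v\<in>set (c1 @ c2). v < n"
    and cy1: "cyc os c1" and cy2: "cyc os c2"
    and cl1: "list_all (\<lambda>p. (fst p \<in> set c1) = (snd p \<in> set c1)) os"
    and cl2: "list_all (\<lambda>p. (fst p \<in> set c2) = (snd p \<in> set c2)) os"
    unfolding check_oc_def list_all_iff by blast+
  have lvs: "leaves {0..<n} (mk ` set ts) = set c1 \<union> set c2"
  proof
    show "leaves {0..<n} (mk ` set ts) \<subseteq> set c1 \<union> set c2"
    proof
      fix v assume "v \<in> leaves {0..<n} (mk ` set ts)"
      then have v: "v \<in> set [0..<n]" "degl ts v = 1" unfolding leaves_def degree_eq[OF wt] by auto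
      from lv v(1) have "(degl ts v = 1) = (v \<in> set c1 \<or> v \<in> set c2)" by (rule bspec)
      with v(2) show "v \<in> set c1 \<union> set c2" by simp
    qed
    show "set c1 \<union> set c2 \<subseteq> leaves {0..<n} (mk ` set ts)"
    proof
      fix v assume v: "v \<in> set c1 \<union> set c2"
      then have vn: "v < n" using ln by auto
      then have "v \<in> set [0..<n]" by simp
      with lv have "(degl ts v = 1) = (v \<in> set c1 \<or> v \<in> set c2)" by (rule bspec)
      with v vn show "v \<in> leaves {0..<n} (mk ` set ts)" unfolding leaves_def degree_eq[OF wt] by auto
    qed
  qed
  have EmT: "mk ` set (ts @ os) - mk ` set ts = mk ` set os" by (rule E_minus_T[OF w])
  have comp: "{v \<in> leaves {0..<n} (mk ` set ts). reach (mk ` set os) u v} = set c"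
    if c: "c = c1 \<or> c = c2" and u: "u \<in> set c" for u c
  proof
    have cyc': "cyc os c" using c cy1 cy2 by auto
    have cl: "list_all (\<lambda>p. (fst p \<in> set c) = (snd p \<in> set c)) os" using c cl1 cl2 by auto
    show "{v \<in> leaves {0..<n} (mk ` set ts). reach (mk ` set os) u v} \<subseteq> set c"
      using closure[OF cl _ u] by blast
    show "set c \<subseteq> {v \<in> leaves {0..<n} (mk ` set ts). reach (mk ` set os) u v}"
      using cyc_reach2[OF cyc' u] lvs c by auto
  qed
  have h1: "c1!0 \<in> set c1" using n1 by simp
  have h2: "c2!0 \<in> set c2" using n2 by simp
  have OC: "outer_cycles {0..<n} (mk ` set (ts @ os)) (mk ` set ts) = {set c1, set c2}"
    unfolding outer_cycles_def EmT
  proof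
    show "{{v \<in> leaves {0..<n} (mk ` set ts). reach (mk ` set os) u v} |u. u \<in> leaves {0..<n} (mk ` set ts)} \<subseteq> {set c1, set c2}"
    proof
      fix C assume "C \<in> {{v \<in> leaves {0..<n} (mk ` set ts). reach (mk ` set os) u v} |u. u \<in> leaves {0..<n} (mk ` set ts)}"
      then obtain u where C: "C = {v \<in> leaves {0..<n} (mk ` set ts). reach (mk ` set os) u v}"
        and u: "u \<in> set c1 \<union> set c2" using lvs by blast
      then show "C \<in> {set c1, set c2}" using comp[of c1 u] comp[of c2 u] by auto
    qed
    show "{set c1, set c2} \<subseteq> {{v \<in> leaves {0..<n} (mk ` set ts). reach (mk ` set os) u v} |u. u \<in> leaves {0..<n} (mk ` set ts)}"
    proof -
      have "set c1 = {v \<in> leaves {0..<n} (mk ` set ts). reach (mk ` set os) (c1!0) v}"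
        using comp[of c1 "c1!0"] h1 by simp
      moreover have "set c2 = {v \<in> leaves {0..<n} (mk ` set ts). reach (mk ` set os) (c2!0) v}"
        using comp[of c2 "c2!0"] h2 by simp
      moreover have "c1!0 \<in> leaves {0..<n} (mk ` set ts)" "c2!0 \<in> leaves {0..<n} (mk ` set ts)"
        using lvs h1 h2 by auto
      ultimately show ?thesis by blast
    qed
  qed
  have neq: "set c1 \<noteq> set c2" using dj h1 by blast
  have "oc {0..<n} (mk ` set (ts @ os)) (mk ` set ts) = image_mset card (mset_set {set c1, set c2})"
    unfolding oc_def OC ..
  also have "\<dots> = {#card (set c1), card (set c2)#}" using neq by simp
  also have "\<dots> = {#length c1, length c2#}" using d1 d2 by (simp add: distinct_card)
  finally show ?thesis .
qed

lemma cyc_hits: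
  assumes w: "wf_es n (ts @ os)" and ct: "check_tree n ts par dep" and c: "is_cycle (mk ` set (ts @ os)) vs"
  shows "\<exists>i<length vs. nrm (vs!i, vs!((i+1) mod length vs)) \<in> set os"
proof (rule ccontr)
  assume "\<not> ?thesis"
  then have no: "\<And>i. i < length vs \<Longrightarrow> nrm (vs!i, vs!((i+1) mod length vs)) \<notin> set os" by blast
  have wt: "wf_es n ts" using wf_append[OF w] by simp
  have "is_cycle (mk ` set ts) vs" unfolding is_cycle_def
  proof (intro conjI allI impI)
    show "length vs \<ge> 3" "distinct vs" using c by (simp_all add: is_cycle_def)
    fix i assume i: "i < length vs"
    have e: "{vs!i, vs!((i+1) mod length vs)} \<in> mk ` set (ts @ os)" using c i unfolding is_cycle_def by blast
    from edge_in[OF w e] have "nrm (vs!i, vs!((i+1) mod length vs)) \<in> set (ts @ os)" by simp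
    with no[OF i] have "nrm (vs!i, vs!((i+1) mod length vs)) \<in> set ts" by simp
    then have "mk (nrm (vs!i, vs!((i+1) mod length vs))) \<in> mk ` set ts" by blast
    then show "{vs!i, vs!((i+1) mod length vs)} \<in> mk ` set ts" unfolding mk_nrm by (simp add: mk_def)
  qed
  with tree_acyclic[OF wt ct] show False by simp
qed

lemma upt4: "[0..<4] = [0,1,2,3::nat]" by code_simp

definition check_all where
  "check_all n ts os cert rest e1 e2 e3 par dep c1 c2 \<longleftrightarrow>
    wf_es n (ts @ os) \<and> list_all (\<lambda>v. degl (ts @ os) v = 3) [0..<n] \<and> check_girth n (ts @ os) \<and>
    check_col (ts @ os) rest e1 e2 e3 \<and> check_c4c n (ts @ os) os cert \<and> check_tree n ts par dep \<and>
    check_oc n ts os c1 c2"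

theorem check_all_sound:
  assumes "check_all n ts os cert rest e1 e2 e3 par dep c1 c2"
  shows "snark {0..<n} (mk ` set (ts @ os)) \<and> hist {0..<n} (mk ` set (ts @ os)) (mk ` set ts) \<and>
    oc {0..<n} (mk ` set (ts @ os)) (mk ` set ts) = {#length c1, length c2#}"
proof -
  from assms have w: "wf_es n (ts @ os)" and d: "list_all (\<lambda>v. degl (ts @ os) v = 3) [0..<n]"
    and g: "check_girth n (ts @ os)" and cc: "check_col (ts @ os) rest e1 e2 e3"
    and c4: "check_c4c n (ts @ os) os cert" and ct: "check_tree n ts par dep"
    and co: "check_oc n ts os c1 c2"
    unfolding check_all_def by blast+
  have "snark {0..<n} (mk ` set (ts @ os))"
    unfolding snark_def using cubic_ok[OF w d] c4c_ok[OF w c4 cyc_hits[OF w ct]] girth_ok[OF w g] noncol[OF w cc] by blast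
  with hist_ok[OF w ct] oc_ok[OF w co] show ?thesis by blast
qed

lemma inst_helper: "check_all n ts os cert rest e1 e2 e3 par dep c1 c2 \<Longrightarrow> length c1 = a \<Longrightarrow> length c2 = b \<Longrightarrow>
   \<exists>(V::nat set) E T. snark V E \<and> hist V E T \<and> oc V E T = {#a, b#}"
  using check_all_sound by blast


definition d55_ts :: "(nat\<times>nat) list" where "d55_ts = [(0,4), (0,5), (0,13), (1,12), (2,7), (3,4), (4,9), (5,8), (5,10), (6,9), (7,9), (7,14), (11,12), (12,17), (14,16), (14,17), (15,17)]"
definition d55_os :: "(nat\<times>nat) list" where "d55_os = [(1,2), (1,6), (2,3), (3,8), (6,8), (10,11), (10,15), (11,16), (13,15), (13,16)]"
definition d55_rest :: "(nat\<times>nat) list" where "d55_rest = [(6,8), (6,9), (2,3), (2,7), (7,9), (4,9), (7,14), (3,4), (3,8), (5,8), (0,4), (0,5), (0,13), (5,10), (13,15), (13,16), (14,16), (11,16), (14,17), (10,11), (10,15), (15,17), (11,12), (12,17)]"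
definition d55_cert :: "((nat\<times>nat)\<times>((nat\<times>nat)\<times>nat list list) list) list" where "d55_cert = [((0,4),[((1,2),[[0, 13, 15, 17, 12, 1], [0, 5, 8, 6, 1], [4, 9, 7, 2], [4, 3, 2]]), ((1,6),[[0, 13, 15, 17, 12, 1], [0, 5, 8, 6], [4, 3, 2, 1], [4, 9, 6]]), ((2,3),[[0, 13, 15, 17, 12, 1, 2], [0, 5, 8, 3], [4, 9, 7, 2], [4, 3]]), ((3,8),[[0, 13, 16, 14, 7, 2, 3], [0, 5, 8], [4, 9, 6, 8], [4, 3]]), ((6,8),[[0, 13, 15, 17, 12, 1, 6], [0, 5, 8], [4, 9, 6], [4, 3, 8]]), ((10,11),[[0, 13, 15, 10], [0, 5, 10], [4, 9, 7, 14, 16, 11], [4, 3, 2, 1, 12, 11]]), ((10,15),[[0, 13, 15], [0, 5, 10], [4, 3, 2, 1, 12, 11, 10], [4, 9, 7, 14, 17, 15]]), ((11,16),[[0, 5, 10, 11], [0, 13, 16], [4, 3, 2, 1, 12, 11], [4, 9, 7, 14, 16]]), ((13,15),[[0, 5, 10, 15], [0, 13], [4, 3, 2, 1, 12, 17, 15], [4, 9, 7, 14, 16, 13]]), ((13,16),[[0, 5, 10, 11, 16], [0, 13], [4, 3, 2, 1, 12, 17, 15, 13], [4, 9, 7, 14, 16]])]), ((0,5),[((1,2),[[0, 13, 16, 14, 7, 2], [0, 4, 3, 2], [5, 10, 11, 12, 1], [5, 8, 6, 1]]), ((1,6),[[0, 13, 16, 14, 7, 2, 1], [0, 4, 9, 6],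 [5, 10, 11, 12, 1], [5, 8, 6]]), ((2,3),[[0, 13, 16, 14, 7, 2], [0, 4, 3], [5, 10, 11, 12, 1, 2], [5, 8, 3]]), ((3,8),[[0, 13, 16, 14, 7, 2, 3], [0, 4, 3], [5, 10, 11, 12, 1, 6, 8], [5, 8]]), ((6,8),[[0, 13, 16, 14, 7, 9, 6], [0, 4, 3, 8], [5, 10, 11, 12, 1, 6], [5, 8]]), ((10,11),[[0, 4, 9, 7, 14, 16, 11], [0, 13, 15, 10], [5, 8, 6, 1, 12, 11], [5, 10]]), ((10,15),[[0, 4, 9, 7, 14, 17, 15], [0, 13, 15], [5, 8, 6, 1, 12, 11, 10], [5, 10]]), ((11,16),[[0, 4, 9, 7, 14, 16], [0, 13, 16], [5, 8, 6, 1, 12, 11], [5, 10, 11]]), ((13,15),[[0, 4, 9, 7, 14, 16, 13], [0, 13], [5, 8, 6, 1, 12, 17, 15], [5, 10, 15]]), ((13,16),[[0, 4, 9, 7, 14, 16], [0, 13], [5, 8, 6, 1, 12, 17, 15, 13], [5, 10, 11, 16]])]), ((0,13),[((1,2),[[0, 5, 8, 6, 1], [0, 4, 3, 2], [13, 16, 14, 7, 2], [13, 15, 17, 12, 1]]), ((1,6),[[0, 4, 9, 6], [0, 5, 8, 6], [13, 16, 14, 7, 2, 1], [13, 15, 17, 12, 1]]), ((2,3),[[0, 5, 8, 3], [0, 4, 3], [13, 15, 17, 12, 1, 2], [13, 16, 14, 7, 2]]), ((3,8),[[0, 4, 3], [0, 5, 8], [13, 15, 17, 12, 1, 6, 8],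 [13, 16, 14, 7, 2, 3]]), ((6,8),[[0, 4, 3, 8], [0, 5, 8], [13, 16, 14, 7, 9, 6], [13, 15, 17, 12, 1, 6]]), ((10,11),[[0, 4, 3, 2, 1, 12, 11], [0, 5, 10], [13, 16, 11], [13, 15, 10]]), ((10,15),[[0, 4, 9, 7, 14, 17, 15], [0, 5, 10], [13, 16, 11, 10], [13, 15]]), ((11,16),[[0, 4, 9, 7, 14, 16], [0, 5, 10, 11], [13, 15, 17, 12, 11], [13, 16]])]), ((1,12),[((2,3),[[1, 6, 8, 3], [1, 2], [12, 11, 10, 5, 0, 4, 3], [12, 17, 14, 7, 2]]), ((3,8),[[1, 6, 8], [1, 2, 3], [12, 17, 15, 13, 0, 4, 3], [12, 11, 10, 5, 8]]), ((6,8),[[1, 2, 3, 8], [1, 6], [12, 17, 14, 7, 9, 6], [12, 11, 10, 5, 8]]), ((10,11),[[1, 2, 7, 14, 16, 11], [1, 6, 8, 5, 10], [12, 17, 15, 10], [12, 11]]), ((10,15),[[1, 2, 3, 4, 0, 13, 15], [1, 6, 8, 5, 10], [12, 17, 15], [12, 11, 10]]), ((11,16),[[1, 2, 3, 4, 0, 13, 16], [1, 6, 8, 5, 10, 11], [12, 17, 14, 16], [12, 11]]), ((13,15),[[1, 6, 9, 7, 14, 16, 13], [1, 2, 3, 4, 0, 13], [12, 11, 10, 15], [12, 17, 15]]), ((13,16),[[1, 6, 8, 5, 0, 13], [1, 2, 7, 14, 16], [12, 17, 15, 13], [12, 11, 16]])])]"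
lemma d55_nb:
  "nb (d55_ts @ d55_os) (Suc 0) = [12, 2, 6]"
  "nb (d55_ts @ d55_os) 0 = [4, 5, 13]"
  "nb (d55_ts @ d55_os) 1 = [12, 2, 6]"
  "nb (d55_ts @ d55_os) 2 = [7, 1, 3]"
  "nb (d55_ts @ d55_os) 3 = [4, 2, 8]"
  "nb (d55_ts @ d55_os) 4 = [0, 3, 9]"
  "nb (d55_ts @ d55_os) 5 = [0, 8, 10]"
  "nb (d55_ts @ d55_os) 6 = [9, 1, 8]"
  "nb (d55_ts @ d55_os) 7 = [2, 9, 14]"
  "nb (d55_ts @ d55_os) 8 = [5, 3, 6]"
  "nb (d55_ts @ d55_os) 9 = [4, 6, 7]"
  "nb (d55_ts @ d55_os) 10 = [5, 11, 15]"
  "nb (d55_ts @ d55_os) 11 = [12, 10, 16]"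
  "nb (d55_ts @ d55_os) 12 = [1, 11, 17]"
  "nb (d55_ts @ d55_os) 13 = [0, 15, 16]"
  "nb (d55_ts @ d55_os) 14 = [7, 16, 17]"
  "nb (d55_ts @ d55_os) 15 = [17, 10, 13]"
  "nb (d55_ts @ d55_os) 16 = [14, 11, 13]"
  "nb (d55_ts @ d55_os) 17 = [12, 14, 15]"
  by (simp_all add: nb_def d55_ts_def d55_os_def)
lemma d55_upt: "[0..<18] = [0, 1, 2, 3, 4, 5, 6, 7, 8, 9, 10, 11, 12, 13, 14, 15, 16, 17]" by code_simp
lemma d55_1: "wf_es 18 (d55_ts @ d55_os)" unfolding d55_ts_def d55_os_def d55_rest_def by code_simp
lemma d55_2: "list_all (\<lambda>v. degl (d55_ts @ d55_os) v = 3) [0..<18]" unfolding d55_ts_def d55_os_def d55_rest_def by code_simp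
lemma d55_3: "check_girth 18 (d55_ts @ d55_os)" by (simp add: check_girth_def d55_nb d55_upt)
lemma d55_4: "check_col (d55_ts @ d55_os) d55_rest (1,2) (1,6) (1,12)" unfolding d55_ts_def d55_os_def d55_rest_def by code_simp
lemma d55_5: "check_c4c 18 (d55_ts @ d55_os) d55_os d55_cert"
proof -
  have "check_c4c 18 (d55_ts @ d55_os) [(1,2), (1,6), (2,3), (3,8), (6,8), (10,11), (10,15), (11,16), (13,15), (13,16)] d55_cert"
    by (simp add: check_c4c_def valid_entry_def walk_def pedges_def nrm_def d55_nb upt4 d55_cert_def)
  then show ?thesis by (simp only: d55_os_def[symmetric])
qed
lemma d55_6: "check_tree 18 d55_ts [0, 12, 7, 4, 0, 0, 9, 9, 5, 4, 5, 12, 17, 0, 7, 17, 14, 14] [0, 7, 4, 2, 1, 1, 3, 3, 2, 2, 2, 7, 6, 1, 4, 6, 5, 5]" unfolding d55_ts_def d55_os_def d55_rest_def by code_simp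
lemma d55_7: "check_oc 18 d55_ts d55_os [1, 2, 3, 8, 6] [10, 11, 16, 13, 15]" unfolding d55_ts_def d55_os_def d55_rest_def by code_simp
lemma d55: "check_all 18 d55_ts d55_os d55_cert d55_rest (1,2) (1,6) (1,12) [0, 12, 7, 4, 0, 0, 9, 9, 5, 4, 5, 12, 17, 0, 7, 17, 14, 14] [0, 7, 4, 2, 1, 1, 3, 3, 2, 2, 2, 7, 6, 1, 4, 6, 5, 5] [1, 2, 3, 8, 6] [10, 11, 16, 13, 15]"
  unfolding check_all_def using d55_1 d55_2 d55_3 d55_4 d55_5 d55_6 d55_7 by blast

lemma p55: "\<exists>(V :: nat set) (E :: nat set set) T. snark V E \<and> hist V E T \<and> oc V E T = {#5, 5#}"
  by (rule inst_helper[OF d55]) simp_all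

definition d56_ts :: "(nat\<times>nat) list" where "d56_ts = [(0,4), (0,5), (0,13), (1,12), (2,7), (3,4), (4,9), (5,8), (5,18), (6,9), (7,9), (7,19), (10,15), (11,12), (12,17), (13,15), (13,16), (14,17), (15,17)]"
definition d56_os :: "(nat\<times>nat) list" where "d56_os = [(1,2), (1,6), (2,3), (3,8), (6,8), (10,11), (10,18), (11,16), (14,16), (14,19), (18,19)]"
definition d56_rest :: "(nat\<times>nat) list" where "d56_rest = [(6,8), (6,9), (2,3), (2,7), (7,9), (4,9), (7,19), (3,4), (3,8), (5,8), (0,4), (0,5), (0,13), (5,18), (18,19), (10,18), (14,19), (13,15), (13,16), (14,16), (11,16), (14,17), (10,11), (10,15), (15,17), (11,12), (12,17)]"
definition d56_cert :: "((nat\<times>nat)\<times>((nat\<times>nat)\<times>nat list list) list) list" where "d56_cert = [((0,4),[((1,2),[[0, 13, 15, 17, 12, 1], [0, 5, 8, 6, 1], [4, 9, 7, 2], [4, 3, 2]]), ((1,6),[[0, 13, 15, 17, 12, 1], [0, 5, 8, 6], [4, 3, 2, 1], [4, 9, 6]]), ((2,3),[[0, 13, 15, 17, 12, 1, 2], [0, 5, 8, 3], [4, 9, 7, 2], [4, 3]]), ((3,8),[[0, 13, 15, 17, 12, 1, 2, 3], [0, 5, 8], [4, 9, 6, 8], [4, 3]]), ((6,8),[[0, 13, 15, 17, 12, 1, 6], [0, 5, 8], [4, 9, 6], [4, 3, 8]]), ((10,11),[[0, 13, 15, 10], [0, 5, 18, 10], [4, 9, 7, 19, 14, 16, 11], [4,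 3, 2, 1, 12, 11]]), ((10,18),[[0, 13, 15, 10], [0, 5, 18], [4, 3, 2, 1, 12, 11, 10], [4, 9, 7, 19, 18]]), ((11,16),[[0, 5, 18, 10, 11], [0, 13, 16], [4, 9, 7, 19, 14, 16], [4, 3, 2, 1, 12, 11]]), ((14,16),[[0, 5, 18, 10, 15, 17, 14], [0, 13, 16], [4, 9, 7, 19, 14], [4, 3, 2, 1, 12, 11, 16]]), ((14,19),[[0, 13, 16, 14], [0, 5, 18, 19], [4, 3, 2, 1, 12, 17, 14], [4, 9, 7, 19]]), ((18,19),[[0, 13, 15, 10, 18], [0, 5, 18], [4, 3, 2, 1, 12, 17, 14, 19], [4, 9, 7, 19]])]), ((0,5),[((1,2),[[0, 13, 15, 17, 12, 1], [0, 4, 3, 2], [5, 18, 19, 7, 2], [5, 8, 6, 1]]), ((1,6),[[0, 13, 15, 17, 12, 1], [0, 4, 9, 6], [5, 18, 19, 7, 2, 1], [5, 8, 6]]), ((2,3),[[0, 13, 15, 17, 12, 1, 2], [0, 4, 3], [5, 18, 19, 7, 2], [5, 8, 3]]), ((3,8),[[0, 13, 15, 17, 12, 1, 6, 8], [0, 4, 3], [5, 18, 19, 7, 2, 3], [5, 8]]), ((6,8),[[0, 13, 15, 17, 12, 1, 6], [0, 4, 3, 8], [5, 18, 19, 7, 9, 6], [5, 8]]), ((10,11),[[0, 4, 9, 7, 19, 14, 16, 11], [0, 13, 15, 10], [5, 8, 6, 1, 12, 11], [5, 18, 10]]), ((10,18),[[0, 4, 9, 7, 19, 18], [0, 13, 15,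 10], [5, 8, 6, 1, 12, 11, 10], [5, 18]]), ((11,16),[[0, 4, 9, 7, 19, 14, 16], [0, 13, 16], [5, 8, 6, 1, 12, 11], [5, 18, 10, 11]]), ((14,16),[[0, 4, 9, 7, 19, 14], [0, 13, 16], [5, 8, 6, 1, 12, 11, 16], [5, 18, 10, 15, 17, 14]]), ((14,19),[[0, 4, 9, 7, 19], [0, 13, 16, 14], [5, 8, 6, 1, 12, 17, 14], [5, 18, 19]]), ((18,19),[[0, 13, 15, 10, 18], [0, 4, 9, 7, 19], [5, 8, 6, 1, 12, 17, 14, 19], [5, 18]])]), ((0,13),[((1,2),[[0, 5, 8, 6, 1], [0, 4, 3, 2], [13, 16, 14, 19, 7, 2], [13, 15, 17, 12, 1]]), ((1,6),[[0, 4, 9, 6], [0, 5, 8, 6], [13, 16, 14, 19, 7, 2, 1], [13, 15, 17, 12, 1]]), ((2,3),[[0, 5, 8, 3], [0, 4, 3], [13, 16, 14, 19, 7, 2], [13, 15, 17, 12, 1, 2]]), ((3,8),[[0, 4, 3], [0, 5, 8], [13, 16, 14, 19, 7, 9, 6, 8], [13, 15, 17, 12, 1, 2, 3]]), ((6,8),[[0, 4, 3, 8], [0, 5, 8], [13, 16, 14, 19, 7, 9, 6], [13, 15, 17, 12, 1, 6]]), ((10,11),[[0, 4, 3, 2, 1, 12, 11], [0, 5, 18, 10], [13, 16, 11], [13, 15, 10]]), ((10,18),[[0, 4, 9, 7, 19, 18], [0, 5, 18], [13, 16, 11, 10], [13, 15, 10]]), ((11,16),[[0, 4, 3, 2, 1,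 12, 11], [0, 5, 18, 19, 14, 16], [13, 15, 10, 11], [13, 16]]), ((14,16),[[0, 4, 3, 2, 1, 12, 11, 16], [0, 5, 18, 19, 14], [13, 15, 17, 14], [13, 16]]), ((14,19),[[0, 4, 9, 7, 19], [0, 5, 18, 19], [13, 15, 17, 14], [13, 16, 14]]), ((18,19),[[0, 4, 9, 7, 19], [0, 5, 18], [13, 16, 14, 19], [13, 15, 10, 18]])]), ((1,12),[((2,3),[[1, 6, 8, 3], [1, 2], [12, 11, 16, 13, 0, 4, 3], [12, 17, 14, 19, 7, 2]]), ((3,8),[[1, 6, 8], [1, 2, 3], [12, 17, 15, 13, 0, 4, 3], [12, 11, 10, 18, 5, 8]]), ((6,8),[[1, 2, 3, 8], [1, 6], [12, 17, 14, 19, 7, 9, 6], [12, 11, 10, 18, 5, 8]]), ((10,11),[[1, 6, 8, 5, 0, 13, 16, 11], [1, 2, 7, 19, 18, 10], [12, 17, 15, 10], [12, 11]]), ((10,18),[[1, 6, 8, 5, 18], [1, 2, 7, 19, 18], [12, 17, 15, 10], [12, 11, 10]]), ((11,16),[[1, 6, 8, 5, 18, 10, 11], [1, 2, 3, 4, 0, 13, 16], [12, 17, 14, 16], [12, 11]]), ((14,16),[[1, 6, 8, 5, 0, 13, 16], [1, 2, 7, 19, 14], [12, 17, 14], [12, 11, 16]]), ((14,19),[[1, 6, 8, 5, 18, 19], [1, 2, 7, 19], [12, 11, 16, 14], [12, 17, 14]]), ((18,19),[[1, 6, 8, 5, 18], [1, 2, 7, 19], [12, 17, 14, 19], [12, 11,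 10, 18]])])]"
lemma d56_nb:
  "nb (d56_ts @ d56_os) (Suc 0) = [12, 2, 6]"
  "nb (d56_ts @ d56_os) 0 = [4, 5, 13]"
  "nb (d56_ts @ d56_os) 1 = [12, 2, 6]"
  "nb (d56_ts @ d56_os) 2 = [7, 1, 3]"
  "nb (d56_ts @ d56_os) 3 = [4, 2, 8]"
  "nb (d56_ts @ d56_os) 4 = [0, 3, 9]"
  "nb (d56_ts @ d56_os) 5 = [0, 8, 18]"
  "nb (d56_ts @ d56_os) 6 = [9, 1, 8]"
  "nb (d56_ts @ d56_os) 7 = [2, 9, 19]"
  "nb (d56_ts @ d56_os) 8 = [5, 3, 6]"
  "nb (d56_ts @ d56_os) 9 = [4, 6, 7]"
  "nb (d56_ts @ d56_os) 10 = [15, 11, 18]"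
  "nb (d56_ts @ d56_os) 11 = [12, 10, 16]"
  "nb (d56_ts @ d56_os) 12 = [1, 11, 17]"
  "nb (d56_ts @ d56_os) 13 = [0, 15, 16]"
  "nb (d56_ts @ d56_os) 14 = [17, 16, 19]"
  "nb (d56_ts @ d56_os) 15 = [10, 13, 17]"
  "nb (d56_ts @ d56_os) 16 = [13, 11, 14]"
  "nb (d56_ts @ d56_os) 17 = [12, 14, 15]"
  "nb (d56_ts @ d56_os) 18 = [5, 10, 19]"
  "nb (d56_ts @ d56_os) 19 = [7, 14, 18]"
  by (simp_all add: nb_def d56_ts_def d56_os_def)
lemma d56_upt: "[0..<20] = [0, 1, 2, 3, 4, 5, 6, 7, 8, 9, 10, 11, 12, 13, 14, 15, 16, 17, 18, 19]" by code_simp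
lemma d56_1: "wf_es 20 (d56_ts @ d56_os)" unfolding d56_ts_def d56_os_def d56_rest_def by code_simp
lemma d56_2: "list_all (\<lambda>v. degl (d56_ts @ d56_os) v = 3) [0..<20]" unfolding d56_ts_def d56_os_def d56_rest_def by code_simp
lemma d56_3: "check_girth 20 (d56_ts @ d56_os)" by (simp add: check_girth_def d56_nb d56_upt)
lemma d56_4: "check_col (d56_ts @ d56_os) d56_rest (1,2) (1,6) (1,12)" unfolding d56_ts_def d56_os_def d56_rest_def by code_simp
lemma d56_5: "check_c4c 20 (d56_ts @ d56_os) d56_os d56_cert"
proof -
  have "check_c4c 20 (d56_ts @ d56_os) [(1,2), (1,6), (2,3), (3,8), (6,8), (10,11), (10,18), (11,16), (14,16), (14,19), (18,19)] d56_cert"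
    by (simp add: check_c4c_def valid_entry_def walk_def pedges_def nrm_def d56_nb upt4 d56_cert_def)
  then show ?thesis by (simp only: d56_os_def[symmetric])
qed
lemma d56_6: "check_tree 20 d56_ts [0, 12, 7, 4, 0, 0, 9, 9, 5, 4, 15, 12, 17, 0, 17, 13, 13, 15, 5, 7] [0, 5, 4, 2, 1, 1, 3, 3, 2, 2, 3, 5, 4, 1, 4, 2, 2, 3, 2, 4]" unfolding d56_ts_def d56_os_def d56_rest_def by code_simp
lemma d56_7: "check_oc 20 d56_ts d56_os [1, 2, 3, 8, 6] [10, 11, 16, 14, 19, 18]" unfolding d56_ts_def d56_os_def d56_rest_def by code_simp
lemma d56: "check_all 20 d56_ts d56_os d56_cert d56_rest (1,2) (1,6) (1,12) [0, 12, 7, 4, 0, 0, 9, 9, 5, 4, 15, 12, 17, 0, 17, 13, 13, 15, 5, 7] [0, 5, 4, 2, 1, 1, 3, 3, 2, 2, 3, 5, 4, 1, 4, 2, 2, 3, 2, 4] [1, 2, 3, 8, 6] [10, 11, 16, 14, 19, 18]"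
  unfolding check_all_def using d56_1 d56_2 d56_3 d56_4 d56_5 d56_6 d56_7 by blast

lemma p56: "\<exists>(V :: nat set) (E :: nat set set) T. snark V E \<and> hist V E T \<and> oc V E T = {#5, 6#}"
  by (rule inst_helper[OF d56]) simp_all

definition d57_ts :: "(nat\<times>nat) list" where "d57_ts = [(0,5), (1,12), (2,7), (3,4), (4,9), (4,20), (5,8), (5,18), (6,9), (7,9), (7,19), (10,18), (11,16), (12,17), (12,21), (13,16), (14,16), (14,17), (14,19), (15,17), (18,19)]"
definition d57_os :: "(nat\<times>nat) list" where "d57_os = [(0,13), (0,20), (1,2), (1,6), (2,3), (3,8), (6,8), (10,11), (10,15), (11,21), (13,15), (20,21)]"
definition d57_rest :: "(nat\<times>nat) list" where "d57_rest = [(6,8), (6,9), (2,3), (2,7), (7,9), (4,9), (7,19), (3,4), (3,8), (5,8), (4,20), (0,5), (5,18), (18,19), (10,18), (14,19), (0,20), (0,13), (20,21), (12,21), (12,17), (11,21), (10,11), (10,15), (11,16), (13,15), (15,17), (13,16), (14,16), (14,17)]"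
definition d57_cert :: "((nat\<times>nat)\<times>((nat\<times>nat)\<times>nat list list) list) list" where "d57_cert = [((0,5),[((1,2),[[0, 13, 15, 17, 12, 1], [0, 20, 4, 3, 2], [5, 18, 19, 7, 2], [5, 8, 6, 1]]), ((1,6),[[0, 13, 15, 17, 12, 1], [0, 20, 4, 9, 6], [5, 18, 19, 7, 2, 1], [5, 8, 6]]), ((2,3),[[0, 13, 15, 17, 12, 1, 2], [0, 20, 4, 3], [5, 18, 19, 7, 2], [5, 8, 3]]), ((3,8),[[0, 13, 15, 17, 12, 1, 6, 8], [0, 20, 4, 3], [5, 18, 19, 7, 2, 3], [5, 8]]), ((6,8),[[0, 13, 15, 17, 12, 1, 6], [0, 20, 4, 3, 8], [5, 18, 19, 7, 9, 6], [5, 8]]), ((10,11),[[0, 20, 21, 11], [0, 13, 15, 10], [5, 8, 6, 1, 12, 17, 14, 16, 11], [5, 18, 10]]), ((10,15),[[0, 20, 21, 11, 10], [0, 13, 15], [5, 8, 6, 1, 12, 17, 15], [5, 18, 10]]), ((11,21),[[0, 13, 16, 11], [0, 20, 21], [5, 8, 6, 1, 12, 21], [5, 18, 10, 11]]), ((13,15),[[0, 20, 21, 11, 16, 13], [0, 13], [5, 8, 6, 1, 12, 17, 15], [5, 18, 10, 15]]), ((20,21),[[0, 13, 16, 11, 21], [0, 20], [5, 18, 10, 15, 17, 12, 21], [5, 8, 3, 4, 20]])]), ((1,12),[((0,13),[[1, 2, 7, 19, 14, 16, 13], [1, 6, 8, 5, 0], [12, 21, 20, 0], [12, 17, 15, 13]]),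 ((0,20),[[1, 6, 8, 5, 0], [1, 2, 3, 4, 20], [12, 17, 15, 13, 0], [12, 21, 20]]), ((2,3),[[1, 6, 8, 3], [1, 2], [12, 17, 14, 19, 7, 2], [12, 21, 20, 4, 3]]), ((3,8),[[1, 6, 8], [1, 2, 3], [12, 17, 15, 13, 0, 5, 8], [12, 21, 20, 4, 3]]), ((6,8),[[1, 2, 3, 8], [1, 6], [12, 17, 14, 19, 7, 9, 6], [12, 21, 20, 0, 5, 8]]), ((10,11),[[1, 6, 8, 5, 0, 13, 16, 11], [1, 2, 7, 19, 18, 10], [12, 17, 15, 10], [12, 21, 11]]), ((10,15),[[1, 6, 8, 5, 0, 13, 15], [1, 2, 7, 19, 18, 10], [12, 21, 11, 10], [12, 17, 15]]), ((11,21),[[1, 6, 8, 5, 0, 13, 16, 11], [1, 2, 3, 4, 20, 21], [12, 17, 15, 10, 11], [12, 21]]), ((13,15),[[1, 2, 7, 19, 14, 16, 13], [1, 6, 8, 5, 0, 13], [12, 21, 11, 10, 15], [12, 17, 15]]), ((20,21),[[1, 6, 8, 5, 0, 20], [1, 2, 3, 4, 20], [12, 17, 15, 10, 11, 21], [12, 21]])]), ((2,7),[((0,13),[[2, 1, 12, 17, 15, 13], [2, 3, 4, 20, 0], [7, 9, 6, 8, 5, 0], [7, 19, 14, 16, 13]]), ((0,20),[[2, 1, 12, 21, 20], [2, 3, 4, 20], [7, 9, 6, 8, 5, 0], [7, 19, 18, 10, 15, 13, 0]]), ((1,6),[[2, 3, 8, 6], [2, 1], [7, 19, 14, 17, 12,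 1], [7, 9, 6]]), ((3,8),[[2, 1, 6, 8], [2, 3], [7, 19, 18, 5, 8], [7, 9, 4, 3]]), ((6,8),[[2, 3, 8], [2, 1, 6], [7, 19, 18, 5, 8], [7, 9, 6]]), ((10,11),[[2, 3, 4, 20, 0, 13, 15, 10], [2, 1, 12, 21, 11], [7, 9, 6, 8, 5, 18, 10], [7, 19, 14, 16, 11]]), ((10,15),[[2, 3, 4, 20, 21, 11, 10], [2, 1, 12, 17, 15], [7, 9, 6, 8, 5, 0, 13, 15], [7, 19, 18, 10]]), ((11,21),[[2, 3, 4, 20, 21], [2, 1, 12, 21], [7, 9, 6, 8, 5, 18, 10, 11], [7, 19, 14, 16, 11]]), ((13,15),[[2, 3, 4, 20, 0, 13], [2, 1, 12, 17, 15], [7, 9, 6, 8, 5, 18, 10, 15], [7, 19, 14, 16, 13]]), ((20,21),[[2, 3, 4, 20], [2, 1, 12, 21], [7, 9, 6, 8, 5, 0, 20], [7, 19, 14, 16, 11, 21]])]), ((3,4),[((0,13),[[3, 2, 1, 12, 17, 15, 13], [3, 8, 5, 0], [4, 9, 7, 19, 14, 16, 13], [4, 20, 0]]), ((0,20),[[3, 2, 1, 12, 21, 20], [3, 8, 5, 0], [4, 9, 7, 19, 14, 16, 13, 0], [4, 20]]), ((1,2),[[3, 8, 6, 1], [3, 2], [4, 20, 21, 12, 1], [4, 9, 7, 2]]), ((1,6),[[3, 8, 6], [3, 2, 1], [4, 20, 21, 12, 1], [4, 9, 6]]), ((6,8),[[3, 2, 1, 6], [3, 8], [4, 20, 0, 5,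 8], [4, 9, 6]]), ((10,11),[[3, 2, 1, 12, 17, 15, 10], [3, 8, 5, 18, 10], [4, 9, 7, 19, 14, 16, 11], [4, 20, 21, 11]]), ((10,15),[[3, 2, 1, 12, 17, 15], [3, 8, 5, 18, 10], [4, 9, 7, 19, 14, 16, 11, 10], [4, 20, 0, 13, 15]]), ((11,21),[[3, 8, 5, 18, 10, 11], [3, 2, 1, 12, 21], [4, 9, 7, 19, 14, 16, 11], [4, 20, 21]]), ((13,15),[[3, 8, 5, 18, 10, 15], [3, 2, 1, 12, 17, 15], [4, 9, 7, 19, 14, 16, 13], [4, 20, 0, 13]]), ((20,21),[[3, 8, 5, 0, 20], [3, 2, 1, 12, 21], [4, 9, 7, 19, 14, 16, 11, 21], [4, 20]])])]"
lemma d57_nb: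
  "nb (d57_ts @ d57_os) (Suc 0) = [12, 2, 6]"
  "nb (d57_ts @ d57_os) 0 = [5, 13, 20]"
  "nb (d57_ts @ d57_os) 1 = [12, 2, 6]"
  "nb (d57_ts @ d57_os) 2 = [7, 1, 3]"
  "nb (d57_ts @ d57_os) 3 = [4, 2, 8]"
  "nb (d57_ts @ d57_os) 4 = [3, 9, 20]"
  "nb (d57_ts @ d57_os) 5 = [0, 8, 18]"
  "nb (d57_ts @ d57_os) 6 = [9, 1, 8]"
  "nb (d57_ts @ d57_os) 7 = [2, 9, 19]"
  "nb (d57_ts @ d57_os) 8 = [5, 3, 6]"
  "nb (d57_ts @ d57_os) 9 = [4, 6, 7]"
  "nb (d57_ts @ d57_os) 10 = [18, 11, 15]"
  "nb (d57_ts @ d57_os) 11 = [16, 10, 21]"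
  "nb (d57_ts @ d57_os) 12 = [1, 17, 21]"
  "nb (d57_ts @ d57_os) 13 = [16, 0, 15]"
  "nb (d57_ts @ d57_os) 14 = [16, 17, 19]"
  "nb (d57_ts @ d57_os) 15 = [17, 10, 13]"
  "nb (d57_ts @ d57_os) 16 = [11, 13, 14]"
  "nb (d57_ts @ d57_os) 17 = [12, 14, 15]"
  "nb (d57_ts @ d57_os) 18 = [5, 10, 19]"
  "nb (d57_ts @ d57_os) 19 = [7, 14, 18]"
  "nb (d57_ts @ d57_os) 20 = [4, 0, 21]"
  "nb (d57_ts @ d57_os) 21 = [12, 11, 20]"
  by (simp_all add: nb_def d57_ts_def d57_os_def)
lemma d57_upt: "[0..<22] = [0, 1, 2, 3, 4, 5, 6, 7, 8, 9, 10, 11, 12, 13, 14, 15, 16, 17, 18, 19, 20, 21]" by code_simp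
lemma d57_1: "wf_es 22 (d57_ts @ d57_os)" unfolding d57_ts_def d57_os_def d57_rest_def by code_simp
lemma d57_2: "list_all (\<lambda>v. degl (d57_ts @ d57_os) v = 3) [0..<22]" unfolding d57_ts_def d57_os_def d57_rest_def by code_simp
lemma d57_3: "check_girth 22 (d57_ts @ d57_os)" by (simp add: check_girth_def d57_nb d57_upt)
lemma d57_4: "check_col (d57_ts @ d57_os) d57_rest (1,2) (1,6) (1,12)" unfolding d57_ts_def d57_os_def d57_rest_def by code_simp
lemma d57_5: "check_c4c 22 (d57_ts @ d57_os) d57_os d57_cert"
proof -
  have "check_c4c 22 (d57_ts @ d57_os) [(0,13), (0,20), (1,2), (1,6), (2,3), (3,8), (6,8), (10,11), (10,15), (11,21), (13,15), (20,21)] d57_cert"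
    by (simp add: check_c4c_def valid_entry_def walk_def pedges_def nrm_def d57_nb upt4 d57_cert_def)
  then show ?thesis by (simp only: d57_os_def[symmetric])
qed
lemma d57_6: "check_tree 22 d57_ts [0, 12, 7, 4, 9, 0, 9, 19, 5, 7, 18, 16, 17, 16, 19, 17, 14, 14, 5, 18, 4, 12] [0, 7, 5, 7, 6, 1, 6, 4, 2, 5, 3, 6, 6, 6, 4, 6, 5, 5, 2, 3, 7, 7]" unfolding d57_ts_def d57_os_def d57_rest_def by code_simp
lemma d57_7: "check_oc 22 d57_ts d57_os [1, 2, 3, 8, 6] [0, 13, 15, 10, 11, 21, 20]" unfolding d57_ts_def d57_os_def d57_rest_def by code_simp
lemma d57: "check_all 22 d57_ts d57_os d57_cert d57_rest (1,2) (1,6) (1,12) [0, 12, 7, 4, 9, 0, 9, 19, 5, 7, 18, 16, 17, 16, 19, 17, 14, 14, 5, 18, 4, 12] [0, 7, 5, 7, 6, 1, 6, 4, 2, 5, 3, 6, 6, 6, 4, 6, 5, 5, 2, 3, 7, 7] [1, 2, 3, 8, 6] [0, 13, 15, 10, 11, 21, 20]"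
  unfolding check_all_def using d57_1 d57_2 d57_3 d57_4 d57_5 d57_6 d57_7 by blast

lemma p57: "\<exists>(V :: nat set) (E :: nat set set) T. snark V E \<and> hist V E T \<and> oc V E T = {#5, 7#}"
  by (rule inst_helper[OF d57]) simp_all

definition d58_ts :: "(nat\<times>nat) list" where "d58_ts = [(0,4), (1,12), (2,7), (3,4), (4,9), (5,22), (6,9), (7,9), (7,23), (8,22), (10,15), (11,12), (12,17), (13,15), (14,16), (14,17), (14,21), (15,17), (18,19), (19,21), (19,23), (20,21), (22,23)]"
definition d58_os :: "(nat\<times>nat) list" where "d58_os = [(0,13), (0,20), (1,2), (1,6), (2,3), (3,8), (5,18), (5,20), (6,8), (10,11), (10,18), (11,16), (13,16)]"
definition d58_rest :: "(nat\<times>nat) list" where "d58_rest = [(10,11), (10,15), (13,15), (15,17), (11,12), (11,16), (13,16), (14,16), (0,13), (12,17), (14,17), (1,12), (14,21), (19,21), (20,21), (19,23), (0,20), (5,20), (0,4), (5,22), (22,23), (8,22), (7,23), (1,2), (1,6), (6,8), (3,8), (6,9), (2,3), (2,7), (7,9), (3,4), (4,9)]"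
definition d58_cert :: "((nat\<times>nat)\<times>((nat\<times>nat)\<times>nat list list) list) list" where "d58_cert = [((0,4),[((1,2),[[0, 20, 5, 22, 8, 6, 1], [0, 13, 15, 17, 12, 1], [4, 9, 7, 2], [4, 3, 2]]), ((1,6),[[0, 20, 5, 22, 8, 6], [0, 13, 15, 17, 12, 1], [4, 3, 2, 1], [4, 9, 6]]), ((2,3),[[0, 13, 15, 17, 12, 1, 2], [0, 20, 5, 22, 8, 3], [4, 9, 7, 2], [4, 3]]), ((3,8),[[0, 13, 15, 17, 12, 1, 2, 3], [0, 20, 5, 22, 8], [4, 9, 6, 8], [4, 3]]), ((5,18),[[0, 13, 15, 10, 18], [0, 20, 5], [4, 9, 7, 23, 19, 18], [4, 3, 8, 22, 5]]), ((5,20),[[0, 13, 15, 10, 18, 5], [0, 20], [4, 9, 7, 23, 19, 21, 20], [4, 3, 8, 22, 5]]), ((6,8),[[0, 13, 15, 17, 12, 1, 6], [0, 20, 5, 22, 8], [4, 9, 6], [4, 3, 8]]), ((10,11),[[0, 20, 5, 18, 10], [0, 13, 15, 10], [4, 9, 7, 23, 19, 21, 14, 16, 11], [4, 3, 2, 1, 12, 11]]), ((10,18),[[0, 20, 5, 18], [0, 13, 15, 10], [4, 3, 2, 1, 12, 11, 10], [4, 9, 7, 23, 19, 18]]), ((11,16),[[0, 20, 21, 14, 16], [0, 13, 16], [4, 9, 7, 23, 19, 18, 10, 11], [4, 3, 2, 1, 12, 11]]), ((13,16),[[0, 20, 21, 14, 16], [0, 13], [4, 9, 7, 23, 19, 18,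 10, 15, 13], [4, 3, 2, 1, 12, 11, 16]])]), ((1,12),[((0,13),[[1, 6, 8, 22, 5, 20, 0], [1, 2, 3, 4, 0], [12, 17, 15, 13], [12, 11, 16, 13]]), ((0,20),[[1, 6, 8, 22, 5, 20], [1, 2, 3, 4, 0], [12, 17, 14, 21, 20], [12, 11, 16, 13, 0]]), ((2,3),[[1, 6, 8, 3], [1, 2], [12, 17, 14, 21, 19, 23, 7, 2], [12, 11, 16, 13, 0, 4, 3]]), ((3,8),[[1, 6, 8], [1, 2, 3], [12, 17, 15, 13, 0, 4, 3], [12, 11, 10, 18, 5, 22, 8]]), ((5,18),[[1, 2, 7, 23, 19, 18], [1, 6, 8, 22, 5], [12, 17, 14, 21, 20, 5], [12, 11, 10, 18]]), ((5,20),[[1, 2, 3, 4, 0, 20], [1, 6, 8, 22, 5], [12, 17, 14, 21, 20], [12, 11, 10, 18, 5]]), ((6,8),[[1, 2, 3, 8], [1, 6], [12, 17, 15, 13, 0, 4, 9, 6], [12, 11, 10, 18, 5, 22, 8]]), ((10,11),[[1, 6, 9, 4, 0, 13, 16, 11], [1, 2, 7, 23, 19, 18, 10], [12, 17, 15, 10], [12, 11]]), ((10,18),[[1, 6, 8, 22, 5, 18], [1, 2, 7, 23, 19, 18], [12, 17, 15, 10], [12, 11, 10]]), ((11,16),[[1, 6, 8, 22, 5, 18, 10, 11], [1, 2, 3, 4, 0, 13, 16], [12, 17, 14, 16], [12, 11]]), ((13,16),[[1, 6, 8, 22, 5, 20, 21, 14, 16], [1, 2, 3, 4, 0, 13], [12,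 17, 15, 13], [12, 11, 16]])]), ((2,7),[((0,13),[[2, 1, 12, 11, 16, 13], [2, 3, 4, 0], [7, 9, 6, 8, 22, 5, 18, 10, 15, 13], [7, 23, 19, 21, 20, 0]]), ((0,20),[[2, 1, 12, 11, 16, 13, 0], [2, 3, 4, 0], [7, 9, 6, 8, 22, 5, 20], [7, 23, 19, 21, 20]]), ((1,6),[[2, 3, 8, 6], [2, 1], [7, 23, 19, 18, 10, 11, 12, 1], [7, 9, 6]]), ((3,8),[[2, 1, 6, 8], [2, 3], [7, 23, 22, 8], [7, 9, 4, 3]]), ((5,18),[[2, 1, 12, 11, 10, 18], [2, 3, 8, 22, 5], [7, 9, 4, 0, 20, 5], [7, 23, 19, 18]]), ((5,20),[[2, 1, 12, 11, 10, 18, 5], [2, 3, 4, 0, 20], [7, 9, 6, 8, 22, 5], [7, 23, 19, 21, 20]]), ((6,8),[[2, 3, 8], [2, 1, 6], [7, 23, 22, 8], [7, 9, 6]]), ((10,11),[[2, 3, 4, 0, 13, 15, 10], [2, 1, 12, 11], [7, 9, 6, 8, 22, 5, 20, 21, 14, 16, 11], [7, 23, 19, 18, 10]]), ((10,18),[[2, 3, 8, 22, 5, 18], [2, 1, 12, 11, 10], [7, 9, 4, 0, 13, 15, 10], [7, 23, 19, 18]]), ((11,16),[[2, 3, 4, 0, 13, 16], [2, 1, 12, 11], [7, 9, 6, 8, 22, 5, 20, 21, 14, 16], [7, 23, 19, 18, 10, 11]]), ((13,16),[[2, 3, 4, 0, 13], [2, 1, 12, 11, 16], [7, 9, 6, 8,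 22, 5, 18, 10, 15, 13], [7, 23, 19, 21, 14, 16]])]), ((3,4),[((0,13),[[3, 2, 1, 12, 11, 16, 13], [3, 8, 22, 5, 20, 0], [4, 9, 7, 23, 19, 18, 10, 15, 13], [4, 0]]), ((0,20),[[3, 2, 7, 23, 19, 21, 20], [3, 8, 22, 5, 20], [4, 9, 6, 1, 12, 11, 16, 13, 0], [4, 0]]), ((1,2),[[3, 8, 6, 1], [3, 2], [4, 0, 13, 15, 17, 12, 1], [4, 9, 7, 2]]), ((1,6),[[3, 8, 6], [3, 2, 1], [4, 0, 13, 15, 17, 12, 1], [4, 9, 6]]), ((5,18),[[3, 2, 7, 23, 19, 18], [3, 8, 22, 5], [4, 9, 6, 1, 12, 11, 10, 18], [4, 0, 20, 5]]), ((5,20),[[3, 2, 7, 23, 19, 18, 5], [3, 8, 22, 5], [4, 9, 6, 1, 12, 17, 14, 21, 20], [4, 0, 20]]), ((6,8),[[3, 2, 1, 6], [3, 8], [4, 0, 20, 5, 22, 8], [4, 9, 6]]), ((10,11),[[3, 8, 22, 5, 18, 10], [3, 2, 1, 12, 11], [4, 9, 7, 23, 19, 21, 14, 16, 11], [4, 0, 13, 15, 10]]), ((10,18),[[3, 2, 1, 12, 11, 10], [3, 8, 22, 5, 18], [4, 9, 7, 23, 19, 18], [4, 0, 13, 15, 10]]), ((11,16),[[3, 8, 22, 5, 18, 10, 11], [3, 2, 1, 12, 11], [4, 9, 7, 23, 19, 21, 14, 16], [4, 0, 13, 16]]), ((13,16),[[3, 8, 22, 5, 18, 10, 15, 13], [3,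 2, 1, 12, 11, 16], [4, 9, 7, 23, 19, 21, 14, 16], [4, 0, 13]])])]"
lemma d58_nb:
  "nb (d58_ts @ d58_os) (Suc 0) = [12, 2, 6]"
  "nb (d58_ts @ d58_os) 0 = [4, 13, 20]"
  "nb (d58_ts @ d58_os) 1 = [12, 2, 6]"
  "nb (d58_ts @ d58_os) 2 = [7, 1, 3]"
  "nb (d58_ts @ d58_os) 3 = [4, 2, 8]"
  "nb (d58_ts @ d58_os) 4 = [0, 3, 9]"
  "nb (d58_ts @ d58_os) 5 = [22, 18, 20]"
  "nb (d58_ts @ d58_os) 6 = [9, 1, 8]"
  "nb (d58_ts @ d58_os) 7 = [2, 9, 23]"
  "nb (d58_ts @ d58_os) 8 = [22, 3, 6]"
  "nb (d58_ts @ d58_os) 9 = [4, 6, 7]"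
  "nb (d58_ts @ d58_os) 10 = [15, 11, 18]"
  "nb (d58_ts @ d58_os) 11 = [12, 10, 16]"
  "nb (d58_ts @ d58_os) 12 = [1, 11, 17]"
  "nb (d58_ts @ d58_os) 13 = [15, 0, 16]"
  "nb (d58_ts @ d58_os) 14 = [16, 17, 21]"
  "nb (d58_ts @ d58_os) 15 = [10, 13, 17]"
  "nb (d58_ts @ d58_os) 16 = [14, 11, 13]"
  "nb (d58_ts @ d58_os) 17 = [12, 14, 15]"
  "nb (d58_ts @ d58_os) 18 = [19, 5, 10]"
  "nb (d58_ts @ d58_os) 19 = [18, 21, 23]"
  "nb (d58_ts @ d58_os) 20 = [21, 0, 5]"
  "nb (d58_ts @ d58_os) 21 = [14, 19, 20]"
  "nb (d58_ts @ d58_os) 22 = [5, 8, 23]"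
  "nb (d58_ts @ d58_os) 23 = [7, 19, 22]"
  by (simp_all add: nb_def d58_ts_def d58_os_def)
lemma d58_upt: "[0..<24] = [0, 1, 2, 3, 4, 5, 6, 7, 8, 9, 10, 11, 12, 13, 14, 15, 16, 17, 18, 19, 20, 21, 22, 23]" by code_simp
lemma d58_1: "wf_es 24 (d58_ts @ d58_os)" unfolding d58_ts_def d58_os_def d58_rest_def by code_simp
lemma d58_2: "list_all (\<lambda>v. degl (d58_ts @ d58_os) v = 3) [0..<24]" unfolding d58_ts_def d58_os_def d58_rest_def by code_simp
lemma d58_3: "check_girth 24 (d58_ts @ d58_os)" by (simp add: check_girth_def d58_nb d58_upt)
lemma d58_4: "check_col (d58_ts @ d58_os) d58_rest (5,18) (10,18) (18,19)" unfolding d58_ts_def d58_os_def d58_rest_def by code_simp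
lemma d58_5: "check_c4c 24 (d58_ts @ d58_os) d58_os d58_cert"
proof -
  have "check_c4c 24 (d58_ts @ d58_os) [(0,13), (0,20), (1,2), (1,6), (2,3), (3,8), (5,18), (5,20), (6,8), (10,11), (10,18), (11,16), (13,16)] d58_cert"
    by (simp add: check_c4c_def valid_entry_def walk_def pedges_def nrm_def d58_nb upt4 d58_cert_def)
  then show ?thesis by (simp only: d58_os_def[symmetric])
qed
lemma d58_6: "check_tree 24 d58_ts [0, 12, 7, 4, 0, 22, 9, 9, 22, 4, 15, 12, 17, 15, 21, 17, 14, 14, 19, 23, 21, 19, 23, 7] [0, 10, 4, 2, 1, 6, 3, 3, 6, 2, 10, 10, 9, 10, 7, 9, 8, 8, 6, 5, 7, 6, 5, 4]" unfolding d58_ts_def d58_os_def d58_rest_def by code_simp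
lemma d58_7: "check_oc 24 d58_ts d58_os [1, 2, 3, 8, 6] [0, 13, 16, 11, 10, 18, 5, 20]" unfolding d58_ts_def d58_os_def d58_rest_def by code_simp
lemma d58: "check_all 24 d58_ts d58_os d58_cert d58_rest (5,18) (10,18) (18,19) [0, 12, 7, 4, 0, 22, 9, 9, 22, 4, 15, 12, 17, 15, 21, 17, 14, 14, 19, 23, 21, 19, 23, 7] [0, 10, 4, 2, 1, 6, 3, 3, 6, 2, 10, 10, 9, 10, 7, 9, 8, 8, 6, 5, 7, 6, 5, 4] [1, 2, 3, 8, 6] [0, 13, 16, 11, 10, 18, 5, 20]"
  unfolding check_all_def using d58_1 d58_2 d58_3 d58_4 d58_5 d58_6 d58_7 by blast

lemma p58: "\<exists>(V :: nat set) (E :: nat set set) T. snark V E \<and> hist V E T \<and> oc V E T = {#5, 8#}"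
  by (rule inst_helper[OF d58]) simp_all

definition d66_ts :: "(nat\<times>nat) list" where "d66_ts = [(0,5), (0,13), (0,20), (1,12), (2,7), (3,8), (4,20), (5,8), (5,18), (6,8), (7,9), (7,19), (10,18), (11,21), (12,17), (12,21), (13,15), (13,16), (14,19), (18,19), (20,21)]"
definition d66_os :: "(nat\<times>nat) list" where "d66_os = [(1,2), (1,6), (2,3), (3,4), (4,9), (6,9), (10,11), (10,15), (11,16), (14,16), (14,17), (15,17)]"
definition d66_rest :: "(nat\<times>nat) list" where "d66_rest = [(6,8), (6,9), (2,3), (2,7), (7,9), (4,9), (7,19), (3,4), (3,8), (5,8), (4,20), (0,5), (5,18), (18,19), (10,18), (14,19), (0,20), (0,13), (20,21), (12,21), (12,17), (11,21), (10,11), (10,15), (11,16), (13,15), (15,17), (13,16), (14,16), (14,17)]"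
definition d66_cert :: "((nat\<times>nat)\<times>((nat\<times>nat)\<times>nat list list) list) list" where "d66_cert = [((0,5),[((1,2),[[0, 13, 15, 17, 12, 1], [0, 20, 4, 3, 2], [5, 18, 19, 7, 2], [5, 8, 6, 1]]), ((1,6),[[0, 13, 15, 17, 12, 1], [0, 20, 4, 9, 6], [5, 18, 19, 7, 2, 1], [5, 8, 6]]), ((2,3),[[0, 13, 15, 17, 12, 1, 2], [0, 20, 4, 3], [5, 18, 19, 7, 2], [5, 8, 3]]), ((3,4),[[0, 13, 15, 17, 12, 1, 6, 9, 4], [0, 20, 4], [5, 18, 19, 7, 2, 3], [5, 8, 3]]), ((4,9),[[0, 13, 15, 17, 12, 1, 2, 3, 4], [0, 20, 4], [5, 18, 19, 7, 9], [5, 8, 6, 9]]), ((6,9),[[0, 13, 15, 17, 12, 1, 6], [0, 20, 4, 9], [5, 18, 19, 7, 9], [5, 8, 6]]), ((10,11),[[0, 20, 21, 11], [0, 13, 15, 10], [5, 8, 6, 1, 12, 17, 14, 16, 11], [5, 18, 10]]), ((10,15),[[0, 20, 21, 11, 10], [0, 13, 15], [5, 8, 6, 1, 12, 17, 15], [5, 18, 10]]), ((11,16),[[0, 20, 21, 11], [0, 13, 16], [5, 8, 6, 1, 12, 17, 14, 16], [5, 18, 10, 11]]), ((14,16),[[0, 20, 21, 11, 16], [0, 13, 16], [5, 8, 6, 1, 12, 17, 14], [5, 18, 19, 14]]), ((14,17),[[0, 20, 21, 11, 16, 14], [0, 13, 15, 17], [5, 8, 6, 1, 12, 17], [5, 18,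 19, 14]]), ((15,17),[[0, 20, 21, 12, 17], [0, 13, 15], [5, 8, 6, 9, 7, 19, 14, 17], [5, 18, 10, 15]])]), ((0,13),[((1,2),[[0, 20, 4, 3, 2], [0, 5, 8, 6, 1], [13, 16, 14, 19, 7, 2], [13, 15, 17, 12, 1]]), ((1,6),[[0, 20, 4, 9, 6], [0, 5, 8, 6], [13, 16, 14, 19, 7, 2, 1], [13, 15, 17, 12, 1]]), ((2,3),[[0, 20, 4, 3], [0, 5, 8, 3], [13, 16, 14, 19, 7, 2], [13, 15, 17, 12, 1, 2]]), ((3,4),[[0, 5, 8, 3], [0, 20, 4], [13, 16, 14, 19, 7, 9, 4], [13, 15, 17, 12, 1, 2, 3]]), ((4,9),[[0, 5, 8, 6, 9], [0, 20, 4], [13, 15, 17, 12, 1, 2, 3, 4], [13, 16, 14, 19, 7, 9]]), ((6,9),[[0, 20, 4, 9], [0, 5, 8, 6], [13, 16, 14, 19, 7, 9], [13, 15, 17, 12, 1, 6]]), ((10,11),[[0, 20, 21, 11], [0, 5, 18, 10], [13, 16, 11], [13, 15, 10]]), ((10,15),[[0, 20, 21, 12, 17, 15], [0, 5, 18, 10], [13, 16, 11, 10], [13, 15]]), ((11,16),[[0, 5, 18, 19, 14, 16], [0, 20, 21, 11], [13, 15, 10, 11], [13, 16]]), ((14,16),[[0, 20, 21, 11, 16], [0, 5, 18, 19, 14], [13, 15, 17, 14], [13, 16]]), ((14,17),[[0, 20, 21, 12, 17], [0, 5, 18, 19, 14], [13, 16, 14], [13, 15, 17]]), ((15,17),[[0,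 20, 21, 12, 17], [0, 5, 18, 10, 15], [13, 16, 14, 17], [13, 15]])]), ((0,20),[((1,2),[[0, 13, 16, 14, 19, 7, 2], [0, 5, 8, 6, 1], [20, 21, 12, 1], [20, 4, 3, 2]]), ((1,6),[[0, 13, 16, 14, 19, 7, 2, 1], [0, 5, 8, 6], [20, 21, 12, 1], [20, 4, 9, 6]]), ((2,3),[[0, 13, 16, 14, 19, 7, 2], [0, 5, 8, 3], [20, 21, 12, 1, 2], [20, 4, 3]]), ((3,4),[[0, 13, 16, 14, 19, 7, 9, 4], [0, 5, 8, 3], [20, 21, 12, 1, 2, 3], [20, 4]]), ((4,9),[[0, 13, 16, 14, 19, 7, 9], [0, 5, 8, 6, 9], [20, 21, 12, 1, 2, 3, 4], [20, 4]]), ((6,9),[[0, 13, 16, 14, 19, 7, 9], [0, 5, 8, 6], [20, 21, 12, 1, 6], [20, 4, 9]]), ((10,11),[[0, 13, 15, 10], [0, 5, 18, 10], [20, 4, 9, 7, 19, 14, 16, 11], [20, 21, 11]]), ((10,15),[[0, 5, 18, 10], [0, 13, 15], [20, 4, 3, 2, 1, 12, 17, 15], [20, 21, 11, 10]]), ((11,16),[[0, 5, 18, 10, 11], [0, 13, 16], [20, 4, 9, 7, 19, 14, 16], [20, 21, 11]]), ((14,16),[[0, 5, 18, 19, 14], [0, 13, 16], [20, 4, 3, 2, 1, 12, 17, 14], [20, 21, 11, 16]]), ((14,17),[[0, 5, 18, 19, 14], [0, 13, 15, 17], [20, 4, 3, 2, 1, 12, 17], [20, 21, 11, 16, 14]]),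 ((15,17),[[0, 5, 18, 10, 15], [0, 13, 15], [20, 4, 9, 7, 19, 14, 17], [20, 21, 12, 17]])]), ((1,12),[((2,3),[[1, 6, 8, 3], [1, 2], [12, 17, 14, 19, 7, 2], [12, 21, 20, 4, 3]]), ((3,4),[[1, 6, 8, 3], [1, 2, 3], [12, 17, 14, 19, 7, 9, 4], [12, 21, 20, 4]]), ((4,9),[[1, 2, 3, 4], [1, 6, 9], [12, 17, 14, 19, 7, 9], [12, 21, 20, 4]]), ((6,9),[[1, 2, 7, 9], [1, 6], [12, 17, 15, 13, 0, 5, 8, 6], [12, 21, 20, 4, 9]]), ((10,11),[[1, 6, 8, 5, 0, 13, 16, 11], [1, 2, 7, 19, 18, 10], [12, 17, 15, 10], [12, 21, 11]]), ((10,15),[[1, 6, 8, 5, 0, 13, 15], [1, 2, 7, 19, 18, 10], [12, 21, 11, 10], [12, 17, 15]]), ((11,16),[[1, 6, 8, 5, 0, 13, 16], [1, 2, 7, 19, 18, 10, 11], [12, 17, 14, 16], [12, 21, 11]]), ((14,16),[[1, 6, 8, 5, 0, 13, 16], [1, 2, 7, 19, 14], [12, 21, 11, 16], [12, 17, 14]]), ((14,17),[[1, 6, 8, 5, 0, 13, 15, 17], [1, 2, 7, 19, 14], [12, 21, 11, 16, 14], [12, 17]]), ((15,17),[[1, 6, 8, 5, 0, 13, 15], [1, 2, 7, 19, 14, 17], [12, 21, 11, 10, 15], [12, 17]])])]"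
lemma d66_nb:
  "nb (d66_ts @ d66_os) (Suc 0) = [12, 2, 6]"
  "nb (d66_ts @ d66_os) 0 = [5, 13, 20]"
  "nb (d66_ts @ d66_os) 1 = [12, 2, 6]"
  "nb (d66_ts @ d66_os) 2 = [7, 1, 3]"
  "nb (d66_ts @ d66_os) 3 = [8, 2, 4]"
  "nb (d66_ts @ d66_os) 4 = [20, 3, 9]"
  "nb (d66_ts @ d66_os) 5 = [0, 8, 18]"
  "nb (d66_ts @ d66_os) 6 = [8, 1, 9]"
  "nb (d66_ts @ d66_os) 7 = [2, 9, 19]"
  "nb (d66_ts @ d66_os) 8 = [3, 5, 6]"
  "nb (d66_ts @ d66_os) 9 = [7, 4, 6]"
  "nb (d66_ts @ d66_os) 10 = [18, 11, 15]"
  "nb (d66_ts @ d66_os) 11 = [21, 10, 16]"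
  "nb (d66_ts @ d66_os) 12 = [1, 17, 21]"
  "nb (d66_ts @ d66_os) 13 = [0, 15, 16]"
  "nb (d66_ts @ d66_os) 14 = [19, 16, 17]"
  "nb (d66_ts @ d66_os) 15 = [13, 10, 17]"
  "nb (d66_ts @ d66_os) 16 = [13, 11, 14]"
  "nb (d66_ts @ d66_os) 17 = [12, 14, 15]"
  "nb (d66_ts @ d66_os) 18 = [5, 10, 19]"
  "nb (d66_ts @ d66_os) 19 = [7, 14, 18]"
  "nb (d66_ts @ d66_os) 20 = [0, 4, 21]"
  "nb (d66_ts @ d66_os) 21 = [11, 12, 20]"
  by (simp_all add: nb_def d66_ts_def d66_os_def)
lemma d66_upt: "[0..<22] = [0, 1, 2, 3, 4, 5, 6, 7, 8, 9, 10, 11, 12, 13, 14, 15, 16, 17, 18, 19, 20, 21]" by code_simp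
lemma d66_1: "wf_es 22 (d66_ts @ d66_os)" unfolding d66_ts_def d66_os_def d66_rest_def by code_simp
lemma d66_2: "list_all (\<lambda>v. degl (d66_ts @ d66_os) v = 3) [0..<22]" unfolding d66_ts_def d66_os_def d66_rest_def by code_simp
lemma d66_3: "check_girth 22 (d66_ts @ d66_os)" by (simp add: check_girth_def d66_nb d66_upt)
lemma d66_4: "check_col (d66_ts @ d66_os) d66_rest (1,2) (1,6) (1,12)" unfolding d66_ts_def d66_os_def d66_rest_def by code_simp
lemma d66_5: "check_c4c 22 (d66_ts @ d66_os) d66_os d66_cert"
proof -
  have "check_c4c 22 (d66_ts @ d66_os) [(1,2), (1,6), (2,3), (3,4), (4,9), (6,9), (10,11), (10,15), (11,16), (14,16), (14,17), (15,17)] d66_cert"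
    by (simp add: check_c4c_def valid_entry_def walk_def pedges_def nrm_def d66_nb upt4 d66_cert_def)
  then show ?thesis by (simp only: d66_os_def[symmetric])
qed
lemma d66_6: "check_tree 22 d66_ts [0, 12, 7, 8, 20, 0, 8, 19, 5, 7, 18, 21, 21, 0, 19, 13, 13, 12, 5, 18, 0, 20] [0, 4, 5, 3, 2, 1, 3, 4, 2, 5, 3, 3, 3, 1, 4, 2, 2, 4, 2, 3, 1, 2]" unfolding d66_ts_def d66_os_def d66_rest_def by code_simp
lemma d66_7: "check_oc 22 d66_ts d66_os [1, 2, 3, 4, 9, 6] [10, 11, 16, 14, 17, 15]" unfolding d66_ts_def d66_os_def d66_rest_def by code_simp
lemma d66: "check_all 22 d66_ts d66_os d66_cert d66_rest (1,2) (1,6) (1,12) [0, 12, 7, 8, 20, 0, 8, 19, 5, 7, 18, 21, 21, 0, 19, 13, 13, 12, 5, 18, 0, 20] [0, 4, 5, 3, 2, 1, 3, 4, 2, 5, 3, 3, 3, 1, 4, 2, 2, 4, 2, 3, 1, 2] [1, 2, 3, 4, 9, 6] [10, 11, 16, 14, 17, 15]"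
  unfolding check_all_def using d66_1 d66_2 d66_3 d66_4 d66_5 d66_6 d66_7 by blast

lemma p66: "\<exists>(V :: nat set) (E :: nat set set) T. snark V E \<and> hist V E T \<and> oc V E T = {#6, 6#}"
  by (rule inst_helper[OF d66]) simp_all

definition d67_ts :: "(nat\<times>nat) list" where "d67_ts = [(0,4), (0,13), (0,20), (1,12), (2,7), (3,8), (5,18), (5,20), (5,22), (6,8), (7,9), (7,23), (8,22), (10,15), (11,12), (12,17), (13,15), (13,16), (14,17), (15,17), (19,23), (20,21), (22,23)]"
definition d67_os :: "(nat\<times>nat) list" where "d67_os = [(1,2), (1,6), (2,3), (3,4), (4,9), (6,9), (10,11), (10,18), (11,16), (14,16), (14,21), (18,19), (19,21)]"
definition d67_rest :: "(nat\<times>nat) list" where "d67_rest = [(10,11), (10,15), (13,15), (15,17), (11,12), (11,16), (13,16), (14,16), (0,13), (12,17), (14,17), (1,12), (14,21), (19,21), (20,21), (19,23), (0,20), (5,20), (0,4), (5,22), (22,23), (8,22), (7,23), (1,2), (1,6), (6,8), (3,8), (6,9), (2,3), (2,7), (7,9), (3,4), (4,9)]"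
definition d67_cert :: "((nat\<times>nat)\<times>((nat\<times>nat)\<times>nat list list) list) list" where "d67_cert = [((0,4),[((1,2),[[0, 20, 5, 22, 8, 6, 1], [0, 13, 15, 17, 12, 1], [4, 9, 7, 2], [4, 3, 2]]), ((1,6),[[0, 20, 5, 22, 8, 6], [0, 13, 15, 17, 12, 1], [4, 3, 2, 1], [4, 9, 6]]), ((2,3),[[0, 13, 15, 17, 12, 1, 2], [0, 20, 5, 22, 8, 3], [4, 9, 7, 2], [4, 3]]), ((6,9),[[0, 20, 5, 22, 23, 7, 9], [0, 13, 15, 17, 12, 1, 6], [4, 3, 8, 6], [4, 9]]), ((10,11),[[0, 20, 5, 18, 10], [0, 13, 15, 10], [4, 9, 7, 23, 19, 21, 14, 16, 11], [4, 3, 2, 1, 12, 11]]), ((10,18),[[0, 20, 5, 18], [0, 13, 15, 10], [4, 3, 2, 1, 12, 11, 10], [4, 9, 7, 23, 19, 18]]), ((11,16),[[0, 20, 21, 14, 16], [0, 13, 16], [4, 9, 7, 23, 19, 18, 10, 11], [4, 3, 2, 1, 12, 11]]), ((14,16),[[0, 20, 21, 14], [0, 13, 16], [4, 9, 7, 23, 19, 18, 10, 15, 17, 14], [4, 3, 2, 1, 12, 11, 16]]), ((14,21),[[0, 13, 16, 14], [0, 20, 21], [4, 3, 2, 1, 12, 17, 14], [4, 9, 7, 23, 19, 21]]), ((18,19),[[0, 13, 15, 10, 18], [0, 20, 21, 19], [4, 3, 8, 22, 5, 18], [4, 9, 7, 23, 19]]), ((19,21),[[0, 13, 16, 14, 21],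 [0, 20, 21], [4, 3, 8, 22, 5, 18, 19], [4, 9, 7, 23, 19]])]), ((0,13),[((1,2),[[0, 20, 5, 22, 8, 6, 1], [0, 4, 3, 2], [13, 16, 14, 21, 19, 23, 7, 2], [13, 15, 17, 12, 1]]), ((1,6),[[0, 20, 5, 22, 8, 6], [0, 4, 9, 6], [13, 16, 14, 21, 19, 23, 7, 2, 1], [13, 15, 17, 12, 1]]), ((2,3),[[0, 20, 5, 22, 8, 3], [0, 4, 3], [13, 16, 14, 21, 19, 23, 7, 2], [13, 15, 17, 12, 1, 2]]), ((3,4),[[0, 20, 5, 22, 8, 3], [0, 4], [13, 16, 14, 21, 19, 23, 7, 9, 4], [13, 15, 17, 12, 1, 2, 3]]), ((4,9),[[0, 20, 5, 22, 8, 6, 9], [0, 4], [13, 16, 11, 12, 1, 2, 3, 4], [13, 15, 10, 18, 19, 23, 7, 9]]), ((6,9),[[0, 20, 5, 22, 8, 6], [0, 4, 9], [13, 16, 14, 21, 19, 23, 7, 9], [13, 15, 17, 12, 1, 6]]), ((10,11),[[0, 4, 3, 2, 1, 12, 11], [0, 20, 5, 18, 10], [13, 16, 11], [13, 15, 10]]), ((10,18),[[0, 4, 9, 7, 23, 19, 18], [0, 20, 5, 18], [13, 16, 11, 10], [13, 15, 10]]), ((11,16),[[0, 4, 3, 2, 1, 12, 11], [0, 20, 21, 14, 16], [13, 15, 10, 11], [13, 16]]), ((14,16),[[0, 4, 3, 2, 1, 12, 11, 16], [0, 20, 21, 14], [13, 15, 17, 14], [13, 16]]), ((14,21),[[0,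 4, 9, 7, 23, 19, 21], [0, 20, 21], [13, 15, 17, 14], [13, 16, 14]]), ((18,19),[[0, 4, 9, 7, 23, 19], [0, 20, 5, 18], [13, 16, 14, 21, 19], [13, 15, 10, 18]]), ((19,21),[[0, 4, 9, 7, 23, 19], [0, 20, 21], [13, 15, 10, 18, 19], [13, 16, 14, 21]])]), ((0,20),[((1,2),[[0, 13, 15, 17, 12, 1], [0, 4, 3, 2], [20, 21, 19, 23, 7, 2], [20, 5, 22, 8, 6, 1]]), ((1,6),[[0, 13, 15, 17, 12, 1], [0, 4, 9, 6], [20, 21, 19, 23, 7, 2, 1], [20, 5, 22, 8, 6]]), ((2,3),[[0, 13, 15, 17, 12, 1, 2], [0, 4, 3], [20, 21, 19, 23, 7, 2], [20, 5, 22, 8, 3]]), ((3,4),[[0, 13, 15, 17, 12, 1, 6, 9, 4], [0, 4], [20, 21, 19, 23, 7, 2, 3], [20, 5, 22, 8, 3]]), ((4,9),[[0, 13, 15, 17, 12, 1, 2, 3, 4], [0, 4], [20, 21, 19, 23, 7, 9], [20, 5, 22, 8, 6, 9]]), ((6,9),[[0, 13, 15, 17, 12, 1, 6], [0, 4, 9], [20, 21, 19, 23, 7, 9], [20, 5, 22, 8, 6]]), ((10,11),[[0, 4, 3, 2, 1, 12, 11], [0, 13, 15, 10], [20, 21, 14, 16, 11], [20, 5, 18, 10]]), ((10,18),[[0, 4, 3, 2, 1, 12, 11, 10], [0, 13, 15, 10], [20, 21, 19, 18], [20, 5, 18]]), ((11,16),[[0, 4, 3, 2, 1, 12, 11], [0,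 13, 16], [20, 5, 18, 10, 11], [20, 21, 14, 16]]), ((14,16),[[0, 4, 3, 2, 1, 12, 17, 14], [0, 13, 16], [20, 5, 18, 10, 11, 16], [20, 21, 14]]), ((14,21),[[0, 4, 3, 2, 1, 12, 17, 14], [0, 13, 16, 14], [20, 5, 18, 19, 21], [20, 21]]), ((18,19),[[0, 4, 9, 7, 23, 19], [0, 13, 15, 10, 18], [20, 21, 19], [20, 5, 18]]), ((19,21),[[0, 4, 9, 7, 23, 19], [0, 13, 16, 14, 21], [20, 5, 18, 19], [20, 21]])]), ((1,12),[((2,3),[[1, 6, 8, 3], [1, 2], [12, 17, 14, 21, 19, 23, 7, 2], [12, 11, 16, 13, 0, 4, 3]]), ((3,4),[[1, 6, 8, 3], [1, 2, 3], [12, 17, 14, 21, 19, 23, 7, 9, 4], [12, 11, 16, 13, 0, 4]]), ((4,9),[[1, 2, 3, 4], [1, 6, 9], [12, 17, 14, 21, 19, 23, 7, 9], [12, 11, 16, 13, 0, 4]]), ((6,9),[[1, 2, 7, 9], [1, 6], [12, 17, 15, 10, 18, 5, 22, 8, 6], [12, 11, 16, 13, 0, 4, 9]]), ((10,11),[[1, 6, 9, 4, 0, 13, 16, 11], [1, 2, 7, 23, 19, 18, 10], [12, 17, 15, 10], [12, 11]]), ((10,18),[[1, 6, 8, 22, 5, 18], [1, 2, 7, 23, 19, 18], [12, 17, 15, 10], [12, 11, 10]]), ((11,16),[[1, 6, 8, 22, 5, 18, 10, 11], [1, 2, 3, 4, 0, 13, 16], [12, 17, 14, 16], [12, 11]]),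 ((14,16),[[1, 6, 8, 22, 5, 20, 21, 14], [1, 2, 3, 4, 0, 13, 16], [12, 17, 14], [12, 11, 16]]), ((14,21),[[1, 6, 8, 22, 5, 20, 21], [1, 2, 7, 23, 19, 21], [12, 11, 16, 14], [12, 17, 14]]), ((18,19),[[1, 6, 8, 22, 5, 18], [1, 2, 7, 23, 19], [12, 17, 14, 21, 19], [12, 11, 10, 18]]), ((19,21),[[1, 6, 8, 22, 5, 20, 21], [1, 2, 7, 23, 19], [12, 11, 10, 18, 19], [12, 17, 14, 21]])])]"
lemma d67_nb:
  "nb (d67_ts @ d67_os) (Suc 0) = [12, 2, 6]"
  "nb (d67_ts @ d67_os) 0 = [4, 13, 20]"
  "nb (d67_ts @ d67_os) 1 = [12, 2, 6]"
  "nb (d67_ts @ d67_os) 2 = [7, 1, 3]"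
  "nb (d67_ts @ d67_os) 3 = [8, 2, 4]"
  "nb (d67_ts @ d67_os) 4 = [0, 3, 9]"
  "nb (d67_ts @ d67_os) 5 = [18, 20, 22]"
  "nb (d67_ts @ d67_os) 6 = [8, 1, 9]"
  "nb (d67_ts @ d67_os) 7 = [2, 9, 23]"
  "nb (d67_ts @ d67_os) 8 = [3, 6, 22]"
  "nb (d67_ts @ d67_os) 9 = [7, 4, 6]"
  "nb (d67_ts @ d67_os) 10 = [15, 11, 18]"
  "nb (d67_ts @ d67_os) 11 = [12, 10, 16]"
  "nb (d67_ts @ d67_os) 12 = [1, 11, 17]"
  "nb (d67_ts @ d67_os) 13 = [0, 15, 16]"
  "nb (d67_ts @ d67_os) 14 = [17, 16, 21]"
  "nb (d67_ts @ d67_os) 15 = [10, 13, 17]"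
  "nb (d67_ts @ d67_os) 16 = [13, 11, 14]"
  "nb (d67_ts @ d67_os) 17 = [12, 14, 15]"
  "nb (d67_ts @ d67_os) 18 = [5, 10, 19]"
  "nb (d67_ts @ d67_os) 19 = [23, 18, 21]"
  "nb (d67_ts @ d67_os) 20 = [0, 5, 21]"
  "nb (d67_ts @ d67_os) 21 = [20, 14, 19]"
  "nb (d67_ts @ d67_os) 22 = [5, 8, 23]"
  "nb (d67_ts @ d67_os) 23 = [7, 19, 22]"
  by (simp_all add: nb_def d67_ts_def d67_os_def)
lemma d67_upt: "[0..<24] = [0, 1, 2, 3, 4, 5, 6, 7, 8, 9, 10, 11, 12, 13, 14, 15, 16, 17, 18, 19, 20, 21, 22, 23]" by code_simp
lemma d67_1: "wf_es 24 (d67_ts @ d67_os)" unfolding d67_ts_def d67_os_def d67_rest_def by code_simp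
lemma d67_2: "list_all (\<lambda>v. degl (d67_ts @ d67_os) v = 3) [0..<24]" unfolding d67_ts_def d67_os_def d67_rest_def by code_simp
lemma d67_3: "check_girth 24 (d67_ts @ d67_os)" by (simp add: check_girth_def d67_nb d67_upt)
lemma d67_4: "check_col (d67_ts @ d67_os) d67_rest (5,18) (10,18) (18,19)" unfolding d67_ts_def d67_os_def d67_rest_def by code_simp
lemma d67_5: "check_c4c 24 (d67_ts @ d67_os) d67_os d67_cert"
proof -
  have "check_c4c 24 (d67_ts @ d67_os) [(1,2), (1,6), (2,3), (3,4), (4,9), (6,9), (10,11), (10,18), (11,16), (14,16), (14,21), (18,19), (19,21)] d67_cert"
    by (simp add: check_c4c_def valid_entry_def walk_def pedges_def nrm_def d67_nb upt4 d67_cert_def)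
  then show ?thesis by (simp only: d67_os_def[symmetric])
qed
lemma d67_6: "check_tree 24 d67_ts [0, 12, 7, 8, 0, 20, 8, 23, 22, 7, 15, 12, 17, 0, 17, 13, 13, 15, 5, 23, 0, 20, 5, 22] [0, 5, 6, 5, 1, 2, 5, 5, 4, 6, 3, 5, 4, 1, 4, 2, 2, 3, 3, 5, 1, 2, 3, 4]" unfolding d67_ts_def d67_os_def d67_rest_def by code_simp
lemma d67_7: "check_oc 24 d67_ts d67_os [1, 2, 3, 4, 9, 6] [10, 11, 16, 14, 21, 19, 18]" unfolding d67_ts_def d67_os_def d67_rest_def by code_simp
lemma d67: "check_all 24 d67_ts d67_os d67_cert d67_rest (5,18) (10,18) (18,19) [0, 12, 7, 8, 0, 20, 8, 23, 22, 7, 15, 12, 17, 0, 17, 13, 13, 15, 5, 23, 0, 20, 5, 22] [0, 5, 6, 5, 1, 2, 5, 5, 4, 6, 3, 5, 4, 1, 4, 2, 2, 3, 3, 5, 1, 2, 3, 4] [1, 2, 3, 4, 9, 6] [10, 11, 16, 14, 21, 19, 18]"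
  unfolding check_all_def using d67_1 d67_2 d67_3 d67_4 d67_5 d67_6 d67_7 by blast

lemma p67: "\<exists>(V :: nat set) (E :: nat set set) T. snark V E \<and> hist V E T \<and> oc V E T = {#6, 7#}"
  by (rule inst_helper[OF d67]) simp_all

definition d68_ts :: "(nat\<times>nat) list" where "d68_ts = [(0,4), (0,13), (0,22), (1,23), (2,7), (3,8), (5,8), (5,21), (5,22), (6,8), (7,19), (7,20), (9,25), (10,15), (11,16), (12,23), (13,15), (13,16), (14,16), (15,17), (18,21), (20,21), (20,25), (22,23), (24,25)]"
definition d68_os :: "(nat\<times>nat) list" where "d68_os = [(1,2), (1,6), (2,3), (3,4), (4,9), (6,9), (10,11), (10,18), (11,12), (12,17), (14,17), (14,24), (18,19), (19,24)]"
definition d68_rest :: "(nat\<times>nat) list" where "d68_rest = [(13,15), (15,17), (11,12), (11,16), (13,16), (14,16), (0,13), (12,17), (14,17), (12,23), (14,24), (0,4), (0,22), (22,23), (5,22), (1,23), (1,2), (1,6), (6,8), (6,9), (5,8), (3,8), (5,21), (2,3), (3,4), (4,9), (2,7), (9,25), (18,21), (18,19), (20,21), (7,19), (7,20), (19,24), (20,25), (24,25)]"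
definition d68_cert :: "((nat\<times>nat)\<times>((nat\<times>nat)\<times>nat list list) list) list" where "d68_cert = [((0,4),[((1,2),[[0, 13, 15, 10, 18, 19, 7, 2], [0, 22, 23, 1], [4, 9, 6, 1], [4, 3, 2]]), ((1,6),[[0, 13, 15, 10, 18, 21, 5, 8, 6], [0, 22, 23, 1], [4, 3, 2, 1], [4, 9, 6]]), ((2,3),[[0, 13, 15, 10, 18, 19, 7, 2], [0, 22, 5, 8, 3], [4, 9, 6, 1, 2], [4, 3]]), ((6,9),[[0, 13, 16, 14, 24, 25, 9], [0, 22, 23, 1, 6], [4, 3, 8, 6], [4, 9]]), ((10,11),[[0, 22, 23, 12, 11], [0, 13, 15, 10], [4, 9, 25, 24, 14, 16, 11], [4, 3, 2, 7, 19, 18, 10]]), ((10,18),[[0, 22, 5, 21, 18], [0, 13, 15, 10], [4, 9, 6, 1, 23, 12, 11, 10], [4, 3, 2, 7, 19, 18]]), ((11,12),[[0, 22, 23, 12], [0, 13, 16, 11], [4, 3, 2, 7, 19, 18, 10, 11], [4, 9, 25, 24, 14, 17, 12]]), ((12,17),[[0, 22, 23, 12], [0, 13, 15, 17], [4, 3, 2, 7, 19, 18, 10, 11, 12], [4, 9, 25, 24, 14, 17]]), ((14,17),[[0, 22, 23, 12, 17], [0, 13, 15, 17], [4, 3, 2, 7, 19, 18, 10, 11, 16, 14], [4, 9, 25, 24, 14]]), ((14,24),[[0, 22, 23, 12, 17, 14], [0, 13, 16, 14], [4, 3, 2, 7, 19, 24], [4, 9, 25, 24]]), ((18,19),[[0,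 22, 5, 21, 18], [0, 13, 15, 10, 18], [4, 9, 25, 24, 19], [4, 3, 2, 7, 19]]), ((19,24),[[0, 22, 5, 21, 18, 19], [0, 13, 16, 14, 24], [4, 3, 2, 7, 19], [4, 9, 25, 24]])]), ((0,13),[((1,2),[[0, 22, 23, 1], [0, 4, 3, 2], [13, 16, 14, 24, 25, 9, 6, 1], [13, 15, 10, 18, 19, 7, 2]]), ((1,6),[[0, 22, 5, 8, 6], [0, 4, 9, 6], [13, 16, 11, 12, 23, 1], [13, 15, 10, 18, 19, 7, 2, 1]]), ((2,3),[[0, 22, 5, 8, 3], [0, 4, 3], [13, 16, 11, 12, 23, 1, 2], [13, 15, 10, 18, 19, 7, 2]]), ((3,4),[[0, 22, 5, 8, 3], [0, 4], [13, 15, 10, 18, 19, 7, 2, 3], [13, 16, 14, 24, 25, 9, 4]]), ((4,9),[[0, 22, 5, 8, 6, 9], [0, 4], [13, 15, 10, 18, 19, 7, 2, 3, 4], [13, 16, 14, 24, 25, 9]]), ((6,9),[[0, 22, 5, 8, 6], [0, 4, 9], [13, 15, 17, 12, 23, 1, 6], [13, 16, 14, 24, 25, 9]]), ((10,11),[[0, 4, 3, 2, 7, 19, 18, 10], [0, 22, 23, 12, 11], [13, 16, 11], [13, 15, 10]]), ((10,18),[[0, 4, 3, 2, 7, 19, 18], [0, 22, 5, 21, 18], [13, 16, 11, 10], [13, 15, 10]]), ((11,12),[[0, 4, 9, 25, 24, 14, 17, 12], [0, 22, 23, 12], [13, 15, 10, 11], [13, 16, 11]]), ((12,17),[[0, 4,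 9, 25, 24, 14, 17], [0, 22, 23, 12], [13, 16, 11, 12], [13, 15, 17]]), ((14,17),[[0, 4, 9, 25, 24, 14], [0, 22, 23, 12, 17], [13, 16, 14], [13, 15, 17]]), ((14,24),[[0, 22, 5, 21, 18, 19, 24], [0, 4, 9, 25, 24], [13, 15, 17, 14], [13, 16, 14]]), ((18,19),[[0, 4, 3, 2, 7, 19], [0, 22, 5, 21, 18], [13, 16, 14, 24, 19], [13, 15, 10, 18]]), ((19,24),[[0, 22, 5, 21, 20, 7, 19], [0, 4, 9, 25, 24], [13, 15, 10, 18, 19], [13, 16, 14, 24]])]), ((0,22),[((1,2),[[0, 13, 15, 10, 18, 19, 7, 2], [0, 4, 3, 2], [22, 5, 8, 6, 1], [22, 23, 1]]), ((1,6),[[0, 13, 15, 10, 18, 19, 7, 2, 1], [0, 4, 9, 6], [22, 5, 8, 6], [22, 23, 1]]), ((2,3),[[0, 13, 15, 10, 18, 19, 7, 2], [0, 4, 3], [22, 23, 1, 2], [22, 5, 8, 3]]), ((3,4),[[0, 13, 16, 14, 24, 25, 9, 4], [0, 4], [22, 23, 1, 2, 3], [22, 5, 8, 3]]), ((4,9),[[0, 13, 16, 14, 24, 25, 9], [0, 4], [22, 23, 1, 2, 3, 4], [22, 5, 8, 6, 9]]), ((6,9),[[0, 13, 16, 14, 24, 25, 9], [0, 4, 9], [22, 23, 1, 6], [22, 5, 8, 6]]), ((10,11),[[0, 4, 9, 25, 24, 14, 16, 11], [0, 13, 15, 10], [22, 5, 21, 18, 10], [22, 23, 12, 11]]), ((10,18),[[0,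 4, 3, 2, 7, 19, 18], [0, 13, 15, 10], [22, 23, 12, 11, 10], [22, 5, 21, 18]]), ((11,12),[[0, 4, 9, 25, 24, 14, 17, 12], [0, 13, 16, 11], [22, 5, 21, 18, 10, 11], [22, 23, 12]]), ((12,17),[[0, 4, 9, 25, 24, 14, 17], [0, 13, 15, 17], [22, 5, 21, 18, 10, 11, 12], [22, 23, 12]]), ((14,17),[[0, 4, 9, 25, 24, 14], [0, 13, 15, 17], [22, 5, 21, 18, 10, 11, 16, 14], [22, 23, 12, 17]]), ((14,24),[[0, 4, 9, 25, 24], [0, 13, 16, 14], [22, 5, 21, 18, 19, 24], [22, 23, 12, 17, 14]]), ((18,19),[[0, 4, 3, 2, 7, 19], [0, 13, 15, 10, 18], [22, 23, 12, 17, 14, 24, 19], [22, 5, 21, 18]]), ((19,24),[[0, 13, 16, 14, 24], [0, 4, 9, 25, 24], [22, 23, 1, 2, 7, 19], [22, 5, 21, 18, 19]])]), ((1,23),[((2,3),[[1, 6, 8, 3], [1, 2], [23, 12, 11, 10, 18, 19, 7, 2], [23, 22, 0, 4, 3]]), ((3,4),[[1, 6, 8, 3], [1, 2, 3], [23, 12, 17, 14, 24, 25, 9, 4], [23, 22, 0, 4]]), ((4,9),[[1, 2, 3, 4], [1, 6, 9], [23, 12, 17, 14, 24, 25, 9], [23, 22, 0, 4]]), ((6,9),[[1, 2, 3, 4, 9], [1, 6], [23, 12, 17, 14, 24, 25, 9], [23, 22, 5, 8, 6]]), ((10,11),[[1, 6, 9, 25, 24, 14, 16, 11], [1, 2, 7,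 19, 18, 10], [23, 22, 0, 13, 15, 10], [23, 12, 11]]), ((10,18),[[1, 6, 9, 4, 0, 13, 15, 10], [1, 2, 7, 19, 18], [23, 22, 5, 21, 18], [23, 12, 11, 10]]), ((11,12),[[1, 6, 9, 25, 24, 14, 17, 12], [1, 2, 7, 19, 18, 10, 11], [23, 22, 0, 13, 16, 11], [23, 12]]), ((12,17),[[1, 6, 8, 5, 21, 18, 10, 11, 12], [1, 2, 7, 19, 24, 14, 17], [23, 22, 0, 13, 15, 17], [23, 12]]), ((14,17),[[1, 6, 8, 5, 21, 18, 10, 11, 16, 14], [1, 2, 7, 19, 24, 14], [23, 22, 0, 13, 15, 17], [23, 12, 17]]), ((14,24),[[1, 6, 9, 25, 24], [1, 2, 7, 19, 24], [23, 22, 0, 13, 16, 14], [23, 12, 17, 14]]), ((18,19),[[1, 6, 9, 25, 24, 19], [1, 2, 7, 19], [23, 22, 5, 21, 18], [23, 12, 11, 10, 18]]), ((19,24),[[1, 6, 9, 25, 24], [1, 2, 7, 19], [23, 22, 5, 21, 18, 19], [23, 12, 17, 14, 24]])])]"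
lemma d68_nb:
  "nb (d68_ts @ d68_os) (Suc 0) = [23, 2, 6]"
  "nb (d68_ts @ d68_os) 0 = [4, 13, 22]"
  "nb (d68_ts @ d68_os) 1 = [23, 2, 6]"
  "nb (d68_ts @ d68_os) 2 = [7, 1, 3]"
  "nb (d68_ts @ d68_os) 3 = [8, 2, 4]"
  "nb (d68_ts @ d68_os) 4 = [0, 3, 9]"
  "nb (d68_ts @ d68_os) 5 = [8, 21, 22]"
  "nb (d68_ts @ d68_os) 6 = [8, 1, 9]"
  "nb (d68_ts @ d68_os) 7 = [2, 19, 20]"
  "nb (d68_ts @ d68_os) 8 = [3, 5, 6]"
  "nb (d68_ts @ d68_os) 9 = [25, 4, 6]"
  "nb (d68_ts @ d68_os) 10 = [15, 11, 18]"
  "nb (d68_ts @ d68_os) 11 = [16, 10, 12]"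
  "nb (d68_ts @ d68_os) 12 = [23, 11, 17]"
  "nb (d68_ts @ d68_os) 13 = [0, 15, 16]"
  "nb (d68_ts @ d68_os) 14 = [16, 17, 24]"
  "nb (d68_ts @ d68_os) 15 = [10, 13, 17]"
  "nb (d68_ts @ d68_os) 16 = [11, 13, 14]"
  "nb (d68_ts @ d68_os) 17 = [15, 12, 14]"
  "nb (d68_ts @ d68_os) 18 = [21, 10, 19]"
  "nb (d68_ts @ d68_os) 19 = [7, 18, 24]"
  "nb (d68_ts @ d68_os) 20 = [7, 21, 25]"
  "nb (d68_ts @ d68_os) 21 = [5, 18, 20]"
  "nb (d68_ts @ d68_os) 22 = [0, 5, 23]"
  "nb (d68_ts @ d68_os) 23 = [1, 12, 22]"
  "nb (d68_ts @ d68_os) 24 = [25, 14, 19]"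
  "nb (d68_ts @ d68_os) 25 = [9, 20, 24]"
  by (simp_all add: nb_def d68_ts_def d68_os_def)
lemma d68_upt: "[0..<26] = [0, 1, 2, 3, 4, 5, 6, 7, 8, 9, 10, 11, 12, 13, 14, 15, 16, 17, 18, 19, 20, 21, 22, 23, 24, 25]" by code_simp
lemma d68_1: "wf_es 26 (d68_ts @ d68_os)" unfolding d68_ts_def d68_os_def d68_rest_def by code_simp
lemma d68_2: "list_all (\<lambda>v. degl (d68_ts @ d68_os) v = 3) [0..<26]" unfolding d68_ts_def d68_os_def d68_rest_def by code_simp
lemma d68_3: "check_girth 26 (d68_ts @ d68_os)" by (simp add: check_girth_def d68_nb d68_upt)
lemma d68_4: "check_col (d68_ts @ d68_os) d68_rest (10,11) (10,15) (10,18)" unfolding d68_ts_def d68_os_def d68_rest_def by code_simp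
lemma d68_5: "check_c4c 26 (d68_ts @ d68_os) d68_os d68_cert"
proof -
  have "check_c4c 26 (d68_ts @ d68_os) [(1,2), (1,6), (2,3), (3,4), (4,9), (6,9), (10,11), (10,18), (11,12), (12,17), (14,17), (14,24), (18,19), (19,24)] d68_cert"
    by (simp add: check_c4c_def valid_entry_def walk_def pedges_def nrm_def d68_nb upt4 d68_cert_def)
  then show ?thesis by (simp only: d68_os_def[symmetric])
qed
lemma d68_6: "check_tree 26 d68_ts [0, 23, 7, 8, 0, 22, 8, 20, 5, 25, 15, 16, 23, 0, 16, 13, 13, 15, 21, 7, 21, 5, 0, 22, 25, 20] [0, 3, 6, 4, 1, 2, 4, 5, 3, 6, 3, 3, 3, 1, 3, 2, 2, 3, 4, 6, 4, 3, 1, 2, 6, 5]" unfolding d68_ts_def d68_os_def d68_rest_def by code_simp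
lemma d68_7: "check_oc 26 d68_ts d68_os [1, 2, 3, 4, 9, 6] [10, 11, 12, 17, 14, 24, 19, 18]" unfolding d68_ts_def d68_os_def d68_rest_def by code_simp
lemma d68: "check_all 26 d68_ts d68_os d68_cert d68_rest (10,11) (10,15) (10,18) [0, 23, 7, 8, 0, 22, 8, 20, 5, 25, 15, 16, 23, 0, 16, 13, 13, 15, 21, 7, 21, 5, 0, 22, 25, 20] [0, 3, 6, 4, 1, 2, 4, 5, 3, 6, 3, 3, 3, 1, 3, 2, 2, 3, 4, 6, 4, 3, 1, 2, 6, 5] [1, 2, 3, 4, 9, 6] [10, 11, 12, 17, 14, 24, 19, 18]"
  unfolding check_all_def using d68_1 d68_2 d68_3 d68_4 d68_5 d68_6 d68_7 by blast

lemma p68: "\<exists>(V :: nat set) (E :: nat set set) T. snark V E \<and> hist V E T \<and> oc V E T = {#6, 8#}"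
  by (rule inst_helper[OF d68]) simp_all

definition d77_ts :: "(nat\<times>nat) list" where "d77_ts = [(0,13), (1,2), (1,6), (1,23), (2,3), (2,7), (3,4), (3,8), (5,21), (7,19), (7,20), (9,25), (10,15), (11,12), (12,17), (12,23), (13,15), (13,16), (14,17), (15,17), (18,21), (20,21), (20,25), (22,23), (24,25)]"
definition d77_os :: "(nat\<times>nat) list" where "d77_os = [(0,4), (0,22), (4,9), (5,8), (5,22), (6,8), (6,9), (10,11), (10,18), (11,16), (14,16), (14,24), (18,19), (19,24)]"
definition d77_rest :: "(nat\<times>nat) list" where "d77_rest = [(13,15), (15,17), (11,12), (11,16), (13,16), (14,16), (0,13), (12,17), (14,17), (12,23), (14,24), (0,4), (0,22), (22,23), (5,22), (1,23), (1,2), (1,6), (6,8), (6,9), (5,8), (3,8), (5,21), (2,3), (3,4), (4,9), (2,7), (9,25), (18,21), (18,19), (20,21), (7,19), (7,20), (19,24), (20,25), (24,25)]"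
definition d77_cert :: "((nat\<times>nat)\<times>((nat\<times>nat)\<times>nat list list) list) list" where "d77_cert = [((0,13),[((4,9),[[0, 22, 5, 8, 6, 9], [0, 4], [13, 15, 10, 18, 19, 7, 2, 3, 4], [13, 16, 14, 24, 25, 9]]), ((5,8),[[0, 4, 3, 8], [0, 22, 5], [13, 16, 14, 24, 25, 9, 6, 8], [13, 15, 10, 18, 21, 5]]), ((5,22),[[0, 4, 3, 8, 5], [0, 22], [13, 16, 11, 12, 23, 22], [13, 15, 10, 18, 21, 5]]), ((6,8),[[0, 22, 5, 8], [0, 4, 3, 8], [13, 16, 14, 24, 25, 9, 6], [13, 15, 17, 12, 23, 1, 6]]), ((6,9),[[0, 22, 5, 8, 6], [0, 4, 9], [13, 15, 17, 12, 23, 1, 6], [13, 16, 14, 24, 25, 9]]), ((10,11),[[0, 4, 3, 2, 7, 19, 18, 10], [0, 22, 23, 12, 11], [13, 16, 11], [13, 15, 10]]), ((10,18),[[0, 4, 3, 2, 7, 19, 18], [0, 22, 5, 21, 18], [13, 16, 11, 10], [13, 15, 10]]), ((11,16),[[0, 4, 9, 25, 24, 14, 16], [0, 22, 23, 12, 11], [13, 15, 10, 11], [13, 16]]), ((14,16),[[0, 22, 23, 12, 11, 16], [0, 4, 9, 25, 24, 14], [13, 15, 17, 14], [13, 16]]), ((14,24),[[0, 22, 5, 21, 18, 19, 24], [0, 4, 9, 25, 24], [13, 15, 17, 14], [13, 16, 14]]), ((18,19),[[0, 4, 3, 2, 7, 19], [0, 22, 5, 21, 18], [13, 16, 14, 24,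 19], [13, 15, 10, 18]]), ((19,24),[[0, 22, 5, 21, 20, 7, 19], [0, 4, 9, 25, 24], [13, 15, 10, 18, 19], [13, 16, 14, 24]])]), ((1,2),[((0,4),[[1, 23, 22, 0], [1, 6, 9, 4], [2, 7, 19, 18, 10, 15, 13, 0], [2, 3, 4]]), ((0,22),[[1, 6, 8, 5, 22], [1, 23, 22], [2, 7, 19, 18, 10, 15, 13, 0], [2, 3, 4, 0]]), ((4,9),[[1, 23, 22, 0, 4], [1, 6, 9], [2, 7, 20, 25, 9], [2, 3, 4]]), ((5,8),[[1, 23, 22, 5], [1, 6, 8], [2, 7, 20, 21, 5], [2, 3, 8]]), ((5,22),[[1, 6, 8, 5], [1, 23, 22], [2, 7, 20, 21, 5], [2, 3, 4, 0, 22]]), ((6,8),[[1, 23, 22, 5, 8], [1, 6], [2, 7, 20, 25, 9, 6], [2, 3, 8]]), ((6,9),[[1, 23, 22, 5, 8, 6], [1, 6], [2, 7, 20, 25, 9], [2, 3, 4, 9]]), ((10,11),[[1, 6, 9, 25, 24, 14, 16, 11], [1, 23, 12, 11], [2, 3, 4, 0, 13, 15, 10], [2, 7, 19, 18, 10]]), ((10,18),[[1, 6, 8, 5, 21, 18], [1, 23, 12, 11, 10], [2, 3, 4, 0, 13, 15, 10], [2, 7, 19, 18]]), ((11,16),[[1, 6, 9, 25, 24, 14, 16], [1, 23, 12, 11], [2, 7, 19, 18, 10, 11], [2, 3, 4, 0, 13, 16]]), ((14,16),[[1, 6, 8, 5, 21, 18, 10, 15, 17, 14], [1, 23, 12, 11,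 16], [2, 3, 4, 0, 13, 16], [2, 7, 19, 24, 14]]), ((14,24),[[1, 23, 12, 17, 14], [1, 6, 9, 25, 24], [2, 3, 4, 0, 13, 16, 14], [2, 7, 19, 24]]), ((18,19),[[1, 23, 12, 11, 10, 18], [1, 6, 8, 5, 21, 18], [2, 3, 4, 9, 25, 24, 19], [2, 7, 19]]), ((19,24),[[1, 23, 12, 17, 14, 24], [1, 6, 9, 25, 24], [2, 3, 8, 5, 21, 18, 19], [2, 7, 19]])]), ((1,6),[((0,4),[[1, 23, 22, 0], [1, 2, 3, 4], [6, 8, 5, 21, 18, 10, 15, 13, 0], [6, 9, 4]]), ((0,22),[[1, 2, 7, 19, 18, 10, 15, 13, 0], [1, 23, 22], [6, 9, 4, 0], [6, 8, 5, 22]]), ((4,9),[[1, 23, 22, 0, 4], [1, 2, 3, 4], [6, 8, 5, 21, 20, 25, 9], [6, 9]]), ((5,8),[[1, 23, 22, 5], [1, 2, 3, 8], [6, 9, 25, 20, 21, 5], [6, 8]]), ((5,22),[[1, 2, 7, 20, 21, 5], [1, 23, 22], [6, 9, 4, 0, 22], [6, 8, 5]]), ((10,11),[[1, 2, 7, 19, 18, 10], [1, 23, 12, 11], [6, 8, 3, 4, 0, 13, 15, 10], [6, 9, 25, 24, 14, 16, 11]]), ((10,18),[[1, 23, 12, 11, 10], [1, 2, 7, 19, 18], [6, 9, 4, 0, 13, 15, 10], [6, 8, 5, 21, 18]]), ((11,16),[[1, 2, 7, 19, 18, 10, 11], [1, 23, 12, 11], [6, 8, 3, 4, 0, 13, 16],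 [6, 9, 25, 24, 14, 16]]), ((14,16),[[1, 2, 3, 4, 0, 13, 16], [1, 23, 12, 11, 16], [6, 8, 5, 21, 18, 10, 15, 17, 14], [6, 9, 25, 24, 14]]), ((14,24),[[1, 23, 12, 17, 14], [1, 2, 7, 19, 24], [6, 8, 3, 4, 0, 13, 16, 14], [6, 9, 25, 24]]), ((18,19),[[1, 23, 12, 11, 10, 18], [1, 2, 7, 19], [6, 9, 25, 24, 19], [6, 8, 5, 21, 18]]), ((19,24),[[1, 23, 12, 17, 14, 24], [1, 2, 7, 19], [6, 8, 5, 21, 18, 19], [6, 9, 25, 24]])]), ((1,23),[((0,4),[[1, 6, 9, 4], [1, 2, 3, 4], [23, 12, 11, 16, 13, 0], [23, 22, 0]]), ((0,22),[[1, 6, 8, 5, 22], [1, 2, 3, 4, 0], [23, 12, 11, 16, 13, 0], [23, 22]]), ((4,9),[[1, 2, 3, 4], [1, 6, 9], [23, 12, 17, 14, 24, 25, 9], [23, 22, 0, 4]]), ((5,8),[[1, 2, 3, 8], [1, 6, 8], [23, 12, 11, 10, 18, 21, 5], [23, 22, 5]]), ((5,22),[[1, 2, 3, 4, 0, 22], [1, 6, 8, 5], [23, 12, 11, 10, 18, 21, 5], [23, 22]]), ((6,8),[[1, 2, 3, 8], [1, 6], [23, 12, 17, 14, 24, 25, 9, 6], [23, 22, 5, 8]]), ((6,9),[[1, 2, 3, 4, 9], [1, 6], [23, 12, 17, 14, 24, 25, 9], [23, 22, 5, 8, 6]]), ((10,11),[[1, 6, 9, 25, 24, 14, 16, 11],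 [1, 2, 7, 19, 18, 10], [23, 22, 0, 13, 15, 10], [23, 12, 11]]), ((10,18),[[1, 6, 9, 4, 0, 13, 15, 10], [1, 2, 7, 19, 18], [23, 22, 5, 21, 18], [23, 12, 11, 10]]), ((11,16),[[1, 6, 9, 25, 24, 14, 16], [1, 2, 7, 19, 18, 10, 11], [23, 22, 0, 13, 16], [23, 12, 11]]), ((14,16),[[1, 6, 8, 5, 21, 18, 10, 15, 17, 14], [1, 2, 7, 19, 24, 14], [23, 22, 0, 13, 16], [23, 12, 11, 16]]), ((14,24),[[1, 6, 9, 25, 24], [1, 2, 7, 19, 24], [23, 22, 0, 13, 16, 14], [23, 12, 17, 14]]), ((18,19),[[1, 6, 9, 25, 24, 19], [1, 2, 7, 19], [23, 22, 5, 21, 18], [23, 12, 11, 10, 18]]), ((19,24),[[1, 6, 9, 25, 24], [1, 2, 7, 19], [23, 22, 5, 21, 18, 19], [23, 12, 17, 14, 24]])])]"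
lemma d77_nb:
  "nb (d77_ts @ d77_os) (Suc 0) = [2, 6, 23]"
  "nb (d77_ts @ d77_os) 0 = [13, 4, 22]"
  "nb (d77_ts @ d77_os) 1 = [2, 6, 23]"
  "nb (d77_ts @ d77_os) 2 = [1, 3, 7]"
  "nb (d77_ts @ d77_os) 3 = [2, 4, 8]"
  "nb (d77_ts @ d77_os) 4 = [3, 0, 9]"
  "nb (d77_ts @ d77_os) 5 = [21, 8, 22]"
  "nb (d77_ts @ d77_os) 6 = [1, 8, 9]"
  "nb (d77_ts @ d77_os) 7 = [2, 19, 20]"
  "nb (d77_ts @ d77_os) 8 = [3, 5, 6]"
  "nb (d77_ts @ d77_os) 9 = [25, 4, 6]"
  "nb (d77_ts @ d77_os) 10 = [15, 11, 18]"
  "nb (d77_ts @ d77_os) 11 = [12, 10, 16]"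
  "nb (d77_ts @ d77_os) 12 = [11, 17, 23]"
  "nb (d77_ts @ d77_os) 13 = [0, 15, 16]"
  "nb (d77_ts @ d77_os) 14 = [17, 16, 24]"
  "nb (d77_ts @ d77_os) 15 = [10, 13, 17]"
  "nb (d77_ts @ d77_os) 16 = [13, 11, 14]"
  "nb (d77_ts @ d77_os) 17 = [12, 14, 15]"
  "nb (d77_ts @ d77_os) 18 = [21, 10, 19]"
  "nb (d77_ts @ d77_os) 19 = [7, 18, 24]"
  "nb (d77_ts @ d77_os) 20 = [7, 21, 25]"
  "nb (d77_ts @ d77_os) 21 = [5, 18, 20]"
  "nb (d77_ts @ d77_os) 22 = [23, 0, 5]"
  "nb (d77_ts @ d77_os) 23 = [1, 12, 22]"
  "nb (d77_ts @ d77_os) 24 = [25, 14, 19]"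
  "nb (d77_ts @ d77_os) 25 = [9, 20, 24]"
  by (simp_all add: nb_def d77_ts_def d77_os_def)
lemma d77_upt: "[0..<26] = [0, 1, 2, 3, 4, 5, 6, 7, 8, 9, 10, 11, 12, 13, 14, 15, 16, 17, 18, 19, 20, 21, 22, 23, 24, 25]" by code_simp
lemma d77_1: "wf_es 26 (d77_ts @ d77_os)" unfolding d77_ts_def d77_os_def d77_rest_def by code_simp
lemma d77_2: "list_all (\<lambda>v. degl (d77_ts @ d77_os) v = 3) [0..<26]" unfolding d77_ts_def d77_os_def d77_rest_def by code_simp
lemma d77_3: "check_girth 26 (d77_ts @ d77_os)" by (simp add: check_girth_def d77_nb d77_upt)
lemma d77_4: "check_col (d77_ts @ d77_os) d77_rest (10,11) (10,15) (10,18)" unfolding d77_ts_def d77_os_def d77_rest_def by code_simp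
lemma d77_5: "check_c4c 26 (d77_ts @ d77_os) d77_os d77_cert"
proof -
  have "check_c4c 26 (d77_ts @ d77_os) [(0,4), (0,22), (4,9), (5,8), (5,22), (6,8), (6,9), (10,11), (10,18), (11,16), (14,16), (14,24), (18,19), (19,24)] d77_cert"
    by (simp add: check_c4c_def valid_entry_def walk_def pedges_def nrm_def d77_nb upt4 d77_cert_def)
  then show ?thesis by (simp only: d77_os_def[symmetric])
qed
lemma d77_6: "check_tree 26 d77_ts [0, 23, 1, 2, 3, 21, 1, 2, 3, 25, 15, 12, 17, 0, 17, 13, 13, 15, 21, 7, 7, 20, 23, 12, 25, 20] [0, 6, 7, 8, 9, 11, 7, 8, 9, 11, 3, 5, 4, 1, 4, 2, 2, 3, 11, 9, 9, 10, 6, 5, 11, 10]" unfolding d77_ts_def d77_os_def d77_rest_def by code_simp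
lemma d77_7: "check_oc 26 d77_ts d77_os [0, 4, 9, 6, 8, 5, 22] [10, 11, 16, 14, 24, 19, 18]" unfolding d77_ts_def d77_os_def d77_rest_def by code_simp
lemma d77: "check_all 26 d77_ts d77_os d77_cert d77_rest (10,11) (10,15) (10,18) [0, 23, 1, 2, 3, 21, 1, 2, 3, 25, 15, 12, 17, 0, 17, 13, 13, 15, 21, 7, 7, 20, 23, 12, 25, 20] [0, 6, 7, 8, 9, 11, 7, 8, 9, 11, 3, 5, 4, 1, 4, 2, 2, 3, 11, 9, 9, 10, 6, 5, 11, 10] [0, 4, 9, 6, 8, 5, 22] [10, 11, 16, 14, 24, 19, 18]"
  unfolding check_all_def using d77_1 d77_2 d77_3 d77_4 d77_5 d77_6 d77_7 by blast

lemma p77: "\<exists>(V :: nat set) (E :: nat set set) T. snark V E \<and> hist V E T \<and> oc V E T = {#7, 7#}"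
  by (rule inst_helper[OF d77]) simp_all

definition d78_ts :: "(nat\<times>nat) list" where "d78_ts = [(0,24), (1,6), (2,7), (3,8), (4,9), (5,8), (5,21), (5,24), (6,8), (6,9), (7,19), (7,20), (9,20), (10,15), (11,12), (12,17), (12,25), (13,15), (13,16), (13,22), (14,17), (15,17), (18,19), (19,26), (20,27), (23,25), (24,25)]"
definition d78_os :: "(nat\<times>nat) list" where "d78_os = [(0,4), (0,22), (1,2), (1,23), (2,3), (3,4), (10,11), (10,18), (11,16), (14,16), (14,26), (18,21), (21,27), (22,23), (26,27)]"
definition d78_rest :: "(nat\<times>nat) list" where "d78_rest = [(13,15), (15,17), (11,12), (11,16), (13,16), (14,16), (13,22), (12,17), (14,17), (12,25), (14,26), (18,19), (18,21), (19,26), (7,19), (26,27), (21,27), (5,21), (20,27), (7,20), (2,7), (9,20), (1,2), (2,3), (1,6), (1,23), (6,9), (6,8), (4,9), (3,4), (3,8), (5,8), (0,4), (5,24), (0,22), (22,23), (0,24), (23,25), (24,25)]"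
definition d78_cert :: "((nat\<times>nat)\<times>((nat\<times>nat)\<times>nat list list) list) list" where "d78_cert = [((0,24),[((1,2),[[0, 22, 23, 1], [0, 4, 3, 2], [24, 25, 12, 11, 10, 18, 19, 7, 2], [24, 5, 8, 6, 1]]), ((1,23),[[0, 4, 3, 2, 1], [0, 22, 23], [24, 5, 8, 6, 1], [24, 25, 23]]), ((2,3),[[0, 22, 23, 1, 2], [0, 4, 3], [24, 25, 12, 11, 10, 18, 19, 7, 2], [24, 5, 8, 3]]), ((3,4),[[0, 22, 23, 1, 2, 3], [0, 4], [24, 25, 12, 17, 14, 26, 27, 20, 9, 4], [24, 5, 8, 3]]), ((10,11),[[0, 4, 9, 20, 27, 26, 14, 16, 11], [0, 22, 13, 15, 10], [24, 5, 21, 18, 10], [24, 25, 12, 11]]), ((10,18),[[0, 4, 3, 2, 7, 19, 18], [0, 22, 13, 15, 10], [24, 25, 12, 11, 10], [24, 5, 21, 18]]), ((11,16),[[0, 4, 9, 20, 27, 26, 14, 16], [0, 22, 13, 16], [24, 5, 21, 18, 10, 11], [24, 25, 12, 11]]), ((14,16),[[0, 4, 3, 2, 7, 19, 18, 10, 15, 17, 14], [0, 22, 13, 16], [24, 5, 21, 27, 26, 14], [24, 25, 12, 11, 16]]), ((14,26),[[0, 4, 3, 2, 7, 19, 26], [0, 22, 13, 16, 14], [24, 25, 12, 17, 14], [24, 5, 21, 27, 26]]), ((18,21),[[0, 22, 13, 15, 10, 18], [0, 4, 9, 20, 27, 21], [24, 25, 12, 17, 14, 26, 19, 18], [24, 5,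 21]]), ((21,27),[[0, 22, 13, 15, 10, 18, 21], [0, 4, 9, 20, 27], [24, 25, 12, 17, 14, 26, 27], [24, 5, 21]]), ((22,23),[[0, 4, 3, 2, 1, 23], [0, 22], [24, 5, 21, 18, 10, 15, 13, 22], [24, 25, 23]]), ((26,27),[[0, 22, 13, 16, 14, 26], [0, 4, 9, 20, 27], [24, 25, 12, 11, 10, 18, 19, 26], [24, 5, 21, 27]])]), ((1,6),[((0,4),[[1, 23, 22, 0], [1, 2, 3, 4], [6, 8, 5, 24, 0], [6, 9, 4]]), ((0,22),[[1, 2, 7, 19, 18, 10, 15, 13, 22], [1, 23, 22], [6, 8, 5, 24, 0], [6, 9, 4, 0]]), ((2,3),[[1, 23, 22, 0, 4, 3], [1, 2], [6, 9, 20, 7, 2], [6, 8, 3]]), ((3,4),[[1, 23, 22, 0, 4], [1, 2, 3], [6, 9, 4], [6, 8, 3]]), ((10,11),[[1, 2, 7, 19, 18, 10], [1, 23, 25, 12, 11], [6, 8, 5, 21, 27, 26, 14, 16, 11], [6, 9, 4, 0, 22, 13, 15, 10]]), ((10,18),[[1, 23, 22, 13, 15, 10], [1, 2, 7, 19, 18], [6, 9, 4, 0, 24, 25, 12, 11, 10], [6, 8, 5, 21, 18]]), ((11,16),[[1, 2, 7, 19, 18, 10, 11], [1, 23, 22, 13, 16], [6, 9, 20, 27, 26, 14, 16], [6, 8, 5, 24, 25, 12, 11]]), ((14,16),[[1, 2, 7, 19, 26, 14], [1, 23, 22, 13, 16], [6, 9, 4, 0, 24, 25, 12, 17, 14], [6,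 8, 5, 21, 18, 10, 11, 16]]), ((14,26),[[1, 23, 22, 13, 16, 14], [1, 2, 7, 19, 26], [6, 8, 5, 24, 25, 12, 17, 14], [6, 9, 20, 27, 26]]), ((18,21),[[1, 23, 22, 13, 15, 10, 18], [1, 2, 7, 19, 18], [6, 9, 20, 27, 21], [6, 8, 5, 21]]), ((21,27),[[1, 23, 22, 13, 16, 14, 26, 27], [1, 2, 7, 19, 18, 21], [6, 9, 20, 27], [6, 8, 5, 21]]), ((22,23),[[1, 2, 7, 19, 18, 10, 15, 13, 22], [1, 23], [6, 8, 5, 24, 25, 23], [6, 9, 4, 0, 22]]), ((26,27),[[1, 23, 22, 13, 16, 14, 26], [1, 2, 7, 19, 26], [6, 8, 5, 21, 27], [6, 9, 20, 27]])]), ((2,7),[((0,4),[[2, 1, 23, 22, 0], [2, 3, 4], [7, 19, 18, 21, 5, 24, 0], [7, 20, 9, 4]]), ((0,22),[[2, 3, 4, 0], [2, 1, 23, 22], [7, 20, 27, 21, 5, 24, 0], [7, 19, 18, 10, 15, 13, 22]]), ((1,23),[[2, 3, 8, 6, 1], [2, 1], [7, 19, 18, 10, 11, 12, 25, 23], [7, 20, 9, 4, 0, 22, 23]]), ((3,4),[[2, 1, 6, 8, 3], [2, 3], [7, 19, 18, 21, 5, 24, 0, 4], [7, 20, 9, 4]]), ((10,11),[[2, 3, 4, 0, 22, 13, 15, 10], [2, 1, 23, 25, 12, 11], [7, 20, 27, 26, 14, 16, 11], [7, 19, 18, 10]]), ((10,18),[[2, 3, 4, 0, 24, 25, 12, 11,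 10], [2, 1, 23, 22, 13, 15, 10], [7, 20, 27, 21, 18], [7, 19, 18]]), ((11,16),[[2, 3, 4, 0, 24, 25, 12, 11], [2, 1, 23, 22, 13, 16], [7, 20, 27, 26, 14, 16], [7, 19, 18, 10, 11]]), ((14,16),[[2, 3, 4, 0, 24, 25, 12, 17, 14], [2, 1, 23, 22, 13, 16], [7, 20, 27, 21, 18, 10, 11, 16], [7, 19, 26, 14]]), ((14,26),[[2, 3, 4, 0, 24, 25, 12, 17, 14], [2, 1, 23, 22, 13, 16, 14], [7, 20, 27, 26], [7, 19, 26]]), ((18,21),[[2, 1, 23, 22, 13, 15, 10, 18], [2, 3, 8, 5, 21], [7, 20, 27, 21], [7, 19, 18]]), ((21,27),[[2, 1, 23, 22, 13, 16, 14, 26, 27], [2, 3, 8, 5, 21], [7, 19, 18, 21], [7, 20, 27]]), ((22,23),[[2, 3, 4, 0, 22], [2, 1, 23], [7, 20, 27, 21, 5, 24, 25, 23], [7, 19, 18, 10, 15, 13, 22]]), ((26,27),[[2, 1, 23, 22, 13, 16, 14, 26], [2, 3, 8, 5, 21, 27], [7, 20, 27], [7, 19, 26]])]), ((3,8),[((0,4),[[3, 2, 1, 23, 22, 0], [3, 4], [8, 5, 24, 0], [8, 6, 9, 4]]), ((0,22),[[3, 2, 1, 23, 22], [3, 4, 0], [8, 6, 9, 20, 27, 26, 14, 16, 13, 22], [8, 5, 24, 0]]), ((1,2),[[3, 4, 0, 22, 23, 1], [3, 2], [8, 5, 21, 18, 19, 7, 2], [8, 6, 1]]), ((1,23),[[3,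 4, 0, 22, 23], [3, 2, 1], [8, 5, 24, 25, 23], [8, 6, 1]]), ((10,11),[[3, 4, 0, 22, 13, 15, 10], [3, 2, 1, 23, 25, 12, 11], [8, 6, 9, 20, 27, 26, 14, 16, 11], [8, 5, 21, 18, 10]]), ((10,18),[[3, 4, 0, 22, 13, 15, 10], [3, 2, 7, 19, 18], [8, 6, 1, 23, 25, 12, 11, 10], [8, 5, 21, 18]]), ((11,16),[[3, 2, 1, 23, 25, 12, 11], [3, 4, 0, 22, 13, 16], [8, 6, 9, 20, 27, 26, 14, 16], [8, 5, 21, 18, 10, 11]]), ((14,16),[[3, 4, 0, 22, 13, 16], [3, 2, 7, 19, 26, 14], [8, 6, 1, 23, 25, 12, 17, 14], [8, 5, 21, 18, 10, 11, 16]]), ((14,26),[[3, 4, 0, 22, 13, 16, 14], [3, 2, 7, 19, 26], [8, 6, 1, 23, 25, 12, 17, 14], [8, 5, 21, 27, 26]]), ((18,21),[[3, 4, 9, 20, 27, 21], [3, 2, 7, 19, 18], [8, 6, 1, 23, 22, 13, 15, 10, 18], [8, 5, 21]]), ((21,27),[[3, 4, 9, 20, 27], [3, 2, 7, 19, 18, 21], [8, 6, 1, 23, 22, 13, 16, 14, 26, 27], [8, 5, 21]]), ((22,23),[[3, 4, 0, 22], [3, 2, 1, 23], [8, 6, 9, 20, 27, 26, 14, 16, 13, 22], [8, 5, 24, 25, 23]]), ((26,27),[[3, 4, 9, 20, 27], [3, 2, 7, 19, 26], [8, 6, 1, 23, 22, 13, 16, 14, 26], [8, 5, 21, 27]])]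)]"
lemma d78_nb:
  "nb (d78_ts @ d78_os) (Suc 0) = [6, 2, 23]"
  "nb (d78_ts @ d78_os) 0 = [24, 4, 22]"
  "nb (d78_ts @ d78_os) 1 = [6, 2, 23]"
  "nb (d78_ts @ d78_os) 2 = [7, 1, 3]"
  "nb (d78_ts @ d78_os) 3 = [8, 2, 4]"
  "nb (d78_ts @ d78_os) 4 = [9, 0, 3]"
  "nb (d78_ts @ d78_os) 5 = [8, 21, 24]"
  "nb (d78_ts @ d78_os) 6 = [1, 8, 9]"
  "nb (d78_ts @ d78_os) 7 = [2, 19, 20]"
  "nb (d78_ts @ d78_os) 8 = [3, 5, 6]"
  "nb (d78_ts @ d78_os) 9 = [4, 6, 20]"
  "nb (d78_ts @ d78_os) 10 = [15, 11, 18]"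
  "nb (d78_ts @ d78_os) 11 = [12, 10, 16]"
  "nb (d78_ts @ d78_os) 12 = [11, 17, 25]"
  "nb (d78_ts @ d78_os) 13 = [15, 16, 22]"
  "nb (d78_ts @ d78_os) 14 = [17, 16, 26]"
  "nb (d78_ts @ d78_os) 15 = [10, 13, 17]"
  "nb (d78_ts @ d78_os) 16 = [13, 11, 14]"
  "nb (d78_ts @ d78_os) 17 = [12, 14, 15]"
  "nb (d78_ts @ d78_os) 18 = [19, 10, 21]"
  "nb (d78_ts @ d78_os) 19 = [7, 18, 26]"
  "nb (d78_ts @ d78_os) 20 = [7, 9, 27]"
  "nb (d78_ts @ d78_os) 21 = [5, 18, 27]"
  "nb (d78_ts @ d78_os) 22 = [13, 0, 23]"
  "nb (d78_ts @ d78_os) 23 = [25, 1, 22]"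
  "nb (d78_ts @ d78_os) 24 = [0, 5, 25]"
  "nb (d78_ts @ d78_os) 25 = [12, 23, 24]"
  "nb (d78_ts @ d78_os) 26 = [19, 14, 27]"
  "nb (d78_ts @ d78_os) 27 = [20, 21, 26]"
  by (simp_all add: nb_def d78_ts_def d78_os_def)
lemma d78_upt: "[0..<28] = [0, 1, 2, 3, 4, 5, 6, 7, 8, 9, 10, 11, 12, 13, 14, 15, 16, 17, 18, 19, 20, 21, 22, 23, 24, 25, 26, 27]" by code_simp
lemma d78_1: "wf_es 28 (d78_ts @ d78_os)" unfolding d78_ts_def d78_os_def d78_rest_def by code_simp
lemma d78_2: "list_all (\<lambda>v. degl (d78_ts @ d78_os) v = 3) [0..<28]" unfolding d78_ts_def d78_os_def d78_rest_def by code_simp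
lemma d78_3: "check_girth 28 (d78_ts @ d78_os)" by (simp add: check_girth_def d78_nb d78_upt)
lemma d78_4: "check_col (d78_ts @ d78_os) d78_rest (10,11) (10,15) (10,18)" unfolding d78_ts_def d78_os_def d78_rest_def by code_simp
lemma d78_5: "check_c4c 28 (d78_ts @ d78_os) d78_os d78_cert"
proof -
  have "check_c4c 28 (d78_ts @ d78_os) [(0,4), (0,22), (1,2), (1,23), (2,3), (3,4), (10,11), (10,18), (11,16), (14,16), (14,26), (18,21), (21,27), (22,23), (26,27)] d78_cert"
    by (simp add: check_c4c_def valid_entry_def walk_def pedges_def nrm_def d78_nb upt4 d78_cert_def)
  then show ?thesis by (simp only: d78_os_def[symmetric])
qed
lemma d78_6: "check_tree 28 d78_ts [0, 6, 7, 8, 9, 24, 8, 20, 5, 6, 15, 12, 25, 15, 17, 17, 13, 12, 19, 7, 9, 5, 13, 25, 0, 24, 19, 20] [0, 5, 8, 4, 6, 2, 4, 7, 3, 5, 6, 4, 3, 6, 5, 5, 7, 4, 9, 8, 6, 3, 7, 3, 1, 2, 9, 7]" unfolding d78_ts_def d78_os_def d78_rest_def by code_simp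
lemma d78_7: "check_oc 28 d78_ts d78_os [0, 4, 3, 2, 1, 23, 22] [10, 11, 16, 14, 26, 27, 21, 18]" unfolding d78_ts_def d78_os_def d78_rest_def by code_simp
lemma d78: "check_all 28 d78_ts d78_os d78_cert d78_rest (10,11) (10,15) (10,18) [0, 6, 7, 8, 9, 24, 8, 20, 5, 6, 15, 12, 25, 15, 17, 17, 13, 12, 19, 7, 9, 5, 13, 25, 0, 24, 19, 20] [0, 5, 8, 4, 6, 2, 4, 7, 3, 5, 6, 4, 3, 6, 5, 5, 7, 4, 9, 8, 6, 3, 7, 3, 1, 2, 9, 7] [0, 4, 3, 2, 1, 23, 22] [10, 11, 16, 14, 26, 27, 21, 18]"
  unfolding check_all_def using d78_1 d78_2 d78_3 d78_4 d78_5 d78_6 d78_7 by blast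

lemma p78: "\<exists>(V :: nat set) (E :: nat set set) T. snark V E \<and> hist V E T \<and> oc V E T = {#7, 8#}"
  by (rule inst_helper[OF d78]) simp_all

definition d88_ts :: "(nat\<times>nat) list" where "d88_ts = [(0,24), (1,2), (2,3), (2,7), (4,9), (5,8), (5,21), (5,24), (6,9), (7,19), (7,20), (9,27), (10,15), (11,12), (12,17), (12,25), (13,15), (13,16), (13,22), (14,17), (15,17), (18,21), (20,21), (20,27), (23,25), (24,25), (26,29), (27,29), (28,29)]"
definition d88_os :: "(nat\<times>nat) list" where "d88_os = [(0,4), (0,22), (1,6), (1,23), (3,4), (3,8), (6,8), (10,11), (10,28), (11,16), (14,16), (14,26), (18,19), (18,28), (19,26), (22,23)]"
definition d88_rest :: "(nat\<times>nat) list" where "d88_rest = [(13,15), (15,17), (11,12), (11,16), (13,16), (14,16), (13,22), (12,17), (14,17), (12,25), (14,26), (0,22), (22,23), (23,25), (1,23), (24,25), (0,24), (0,4), (5,24), (1,2), (1,6), (6,8), (6,9), (5,8), (3,8), (5,21), (2,3), (3,4), (4,9), (2,7), (9,27), (7,19), (7,20), (20,21), (20,27), (18,21), (27,29), (18,19), (19,26), (18,28), (26,29), (28,29)]"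
definition d88_cert :: "((nat\<times>nat)\<times>((nat\<times>nat)\<times>nat list list) list) list" where "d88_cert = [((0,24),[((1,6),[[0, 22, 23, 1], [0, 4, 9, 6], [24, 25, 12, 17, 14, 26, 19, 7, 2, 1], [24, 5, 8, 6]]), ((1,23),[[0, 4, 3, 2, 1], [0, 22, 23], [24, 5, 8, 6, 1], [24, 25, 23]]), ((3,4),[[0, 22, 23, 1, 2, 3], [0, 4], [24, 25, 12, 11, 10, 28, 29, 27, 9, 4], [24, 5, 8, 3]]), ((3,8),[[0, 22, 23, 1, 2, 3], [0, 4, 3], [24, 25, 12, 11, 10, 28, 29, 27, 9, 6, 8], [24, 5, 8]]), ((6,8),[[0, 22, 23, 1, 6], [0, 4, 3, 8], [24, 25, 12, 11, 10, 28, 29, 27, 9, 6], [24, 5, 8]]), ((10,11),[[0, 4, 9, 27, 29, 26, 14, 16, 11], [0, 22, 13, 15, 10], [24, 5, 21, 18, 28, 10], [24, 25, 12, 11]]), ((10,28),[[0, 4, 9, 27, 29, 28], [0, 22, 13, 15, 10], [24, 25, 12, 11, 10], [24, 5, 21, 18, 28]]), ((11,16),[[0, 4, 9, 27, 29, 26, 14, 16], [0, 22, 13, 16], [24, 5, 21, 18, 28, 10, 11], [24, 25, 12, 11]]), ((14,16),[[0, 4, 9, 27, 29, 26, 14], [0, 22, 13, 16], [24, 5, 21, 18, 28, 10, 15, 17, 14], [24, 25, 12, 11, 16]]), ((14,26),[[0, 4, 9, 27, 29, 26], [0, 22, 13, 16, 14], [24, 5, 21, 18, 19, 26], [24, 25,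 12, 17, 14]]), ((18,19),[[0, 22, 13, 15, 10, 28, 18], [0, 4, 3, 2, 7, 19], [24, 25, 12, 17, 14, 26, 19], [24, 5, 21, 18]]), ((18,28),[[0, 22, 13, 15, 10, 28], [0, 4, 9, 27, 29, 28], [24, 25, 12, 17, 14, 26, 19, 18], [24, 5, 21, 18]]), ((19,26),[[0, 22, 13, 16, 14, 26], [0, 4, 3, 2, 7, 19], [24, 25, 12, 11, 10, 28, 29, 26], [24, 5, 21, 18, 19]]), ((22,23),[[0, 4, 3, 2, 1, 23], [0, 22], [24, 5, 21, 18, 28, 10, 15, 13, 22], [24, 25, 23]])]), ((1,2),[((0,4),[[1, 23, 22, 0], [1, 6, 9, 4], [2, 7, 20, 21, 5, 24, 0], [2, 3, 4]]), ((0,22),[[1, 6, 8, 5, 24, 0], [1, 23, 22], [2, 7, 19, 26, 14, 16, 13, 22], [2, 3, 4, 0]]), ((3,4),[[1, 23, 22, 0, 4], [1, 6, 8, 3], [2, 7, 20, 27, 9, 4], [2, 3]]), ((3,8),[[1, 23, 22, 0, 4, 3], [1, 6, 8], [2, 7, 20, 21, 5, 8], [2, 3]]), ((6,8),[[1, 23, 25, 24, 5, 8], [1, 6], [2, 7, 20, 27, 9, 6], [2, 3, 8]]), ((10,11),[[1, 6, 9, 27, 29, 26, 14, 16, 11], [1, 23, 25, 12, 11], [2, 3, 4, 0, 22, 13, 15, 10], [2, 7, 19, 18, 28, 10]]), ((10,28),[[1, 23, 22, 13, 15, 10], [1, 6, 9, 27, 29, 28], [2, 3, 4, 0, 24, 25,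 12, 11, 10], [2, 7, 19, 18, 28]]), ((11,16),[[1, 6, 8, 5, 24, 25, 12, 11], [1, 23, 22, 13, 16], [2, 3, 4, 9, 27, 29, 28, 10, 11], [2, 7, 19, 26, 14, 16]]), ((14,16),[[1, 6, 8, 5, 24, 25, 12, 11, 16], [1, 23, 22, 13, 16], [2, 3, 4, 9, 27, 29, 28, 10, 15, 17, 14], [2, 7, 19, 26, 14]]), ((14,26),[[1, 23, 22, 13, 16, 14], [1, 6, 9, 27, 29, 26], [2, 3, 4, 0, 24, 25, 12, 17, 14], [2, 7, 19, 26]]), ((18,19),[[1, 23, 22, 13, 15, 10, 28, 18], [1, 6, 8, 5, 21, 18], [2, 3, 4, 9, 27, 29, 26, 19], [2, 7, 19]]), ((18,28),[[1, 23, 22, 13, 15, 10, 28], [1, 6, 8, 5, 21, 18], [2, 3, 4, 9, 27, 29, 28], [2, 7, 19, 18]]), ((19,26),[[1, 23, 22, 13, 16, 14, 26], [1, 6, 9, 27, 29, 26], [2, 3, 8, 5, 21, 18, 19], [2, 7, 19]]), ((22,23),[[1, 6, 8, 5, 24, 25, 23], [1, 23], [2, 7, 19, 26, 14, 16, 13, 22], [2, 3, 4, 0, 22]])]), ((2,3),[((0,4),[[2, 7, 19, 26, 14, 16, 13, 22, 0], [2, 1, 6, 9, 4], [3, 8, 5, 24, 0], [3, 4]]), ((0,22),[[2, 7, 19, 26, 14, 16, 13, 22], [2, 1, 23, 22], [3, 8, 5, 24, 0], [3, 4, 0]]), ((1,6),[[2, 7, 20, 21, 5, 24, 25, 23, 1],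 [2, 1], [3, 4, 9, 6], [3, 8, 6]]), ((1,23),[[2, 7, 20, 21, 5, 24, 25, 23], [2, 1], [3, 4, 0, 22, 23], [3, 8, 6, 1]]), ((6,8),[[2, 7, 20, 21, 5, 8], [2, 1, 6], [3, 4, 9, 6], [3, 8]]), ((10,11),[[2, 7, 19, 18, 28, 10], [2, 1, 23, 25, 12, 11], [3, 8, 6, 9, 27, 29, 26, 14, 16, 11], [3, 4, 0, 22, 13, 15, 10]]), ((10,28),[[2, 1, 23, 22, 13, 15, 10], [2, 7, 19, 18, 28], [3, 8, 5, 24, 25, 12, 11, 10], [3, 4, 9, 27, 29, 28]]), ((11,16),[[2, 7, 19, 26, 14, 16], [2, 1, 23, 22, 13, 16], [3, 8, 5, 21, 18, 28, 10, 11], [3, 4, 0, 24, 25, 12, 11]]), ((14,16),[[2, 1, 23, 22, 13, 16], [2, 7, 19, 26, 14], [3, 8, 5, 21, 18, 28, 10, 15, 17, 14], [3, 4, 0, 24, 25, 12, 11, 16]]), ((14,26),[[2, 1, 23, 22, 13, 16, 14], [2, 7, 19, 26], [3, 8, 5, 24, 25, 12, 17, 14], [3, 4, 9, 27, 29, 26]]), ((18,19),[[2, 1, 23, 22, 13, 15, 10, 28, 18], [2, 7, 19], [3, 4, 9, 27, 29, 26, 19], [3, 8, 5, 21, 18]]), ((18,28),[[2, 1, 23, 22, 13, 15, 10, 28], [2, 7, 19, 18], [3, 4, 9, 27, 29, 28], [3, 8, 5, 21, 18]]), ((19,26),[[2, 1, 23, 22, 13, 16, 14, 26], [2, 7, 19],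 [3, 8, 5, 21, 18, 19], [3, 4, 9, 27, 29, 26]]), ((22,23),[[2, 7, 19, 26, 14, 16, 13, 22], [2, 1, 23], [3, 8, 5, 24, 25, 23], [3, 4, 0, 22]])]), ((2,7),[((0,4),[[2, 1, 6, 9, 4], [2, 3, 4], [7, 19, 26, 14, 16, 13, 22, 0], [7, 20, 21, 5, 24, 0]]), ((0,22),[[2, 3, 4, 0], [2, 1, 23, 22], [7, 19, 26, 14, 16, 13, 22], [7, 20, 21, 5, 24, 0]]), ((1,6),[[2, 3, 8, 6], [2, 1], [7, 19, 18, 21, 5, 24, 25, 23, 1], [7, 20, 27, 9, 6]]), ((1,23),[[2, 3, 8, 6, 1], [2, 1], [7, 19, 26, 14, 16, 13, 22, 23], [7, 20, 21, 5, 24, 25, 23]]), ((3,4),[[2, 1, 6, 8, 3], [2, 3], [7, 19, 18, 21, 5, 24, 0, 4], [7, 20, 27, 9, 4]]), ((3,8),[[2, 1, 6, 8], [2, 3], [7, 19, 26, 29, 27, 9, 4, 3], [7, 20, 21, 5, 8]]), ((6,8),[[2, 3, 8], [2, 1, 6], [7, 19, 26, 29, 27, 9, 6], [7, 20, 21, 5, 8]]), ((10,11),[[2, 3, 4, 0, 22, 13, 15, 10], [2, 1, 23, 25, 12, 11], [7, 20, 27, 29, 26, 14, 16, 11], [7, 19, 18, 28, 10]]), ((10,28),[[2, 3, 4, 0, 24, 25, 12, 11, 10], [2, 1, 23, 22, 13, 15, 10], [7, 20, 27, 29, 28], [7, 19, 18, 28]]), ((11,16),[[2, 3, 4, 0,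 24, 25, 12, 11], [2, 1, 23, 22, 13, 16], [7, 20, 21, 18, 28, 10, 11], [7, 19, 26, 14, 16]]), ((14,16),[[2, 3, 4, 0, 24, 25, 12, 17, 14], [2, 1, 23, 22, 13, 16], [7, 20, 21, 18, 28, 10, 11, 16], [7, 19, 26, 14]]), ((14,26),[[2, 3, 4, 0, 24, 25, 12, 17, 14], [2, 1, 23, 22, 13, 16, 14], [7, 20, 27, 29, 26], [7, 19, 26]]), ((18,19),[[2, 3, 4, 0, 22, 13, 15, 10, 28, 18], [2, 1, 6, 9, 27, 29, 26, 19], [7, 20, 21, 18], [7, 19]]), ((18,28),[[2, 3, 4, 0, 22, 13, 15, 10, 28], [2, 1, 6, 9, 27, 29, 28], [7, 20, 21, 18], [7, 19, 18]]), ((19,26),[[2, 3, 4, 0, 22, 13, 16, 14, 26], [2, 1, 6, 9, 27, 29, 26], [7, 20, 21, 18, 19], [7, 19]]), ((22,23),[[2, 3, 4, 0, 22], [2, 1, 23], [7, 20, 21, 5, 24, 25, 23], [7, 19, 26, 14, 16, 13, 22]])])]"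
lemma d88_nb:
  "nb (d88_ts @ d88_os) (Suc 0) = [2, 6, 23]"
  "nb (d88_ts @ d88_os) 0 = [24, 4, 22]"
  "nb (d88_ts @ d88_os) 1 = [2, 6, 23]"
  "nb (d88_ts @ d88_os) 2 = [1, 3, 7]"
  "nb (d88_ts @ d88_os) 3 = [2, 4, 8]"
  "nb (d88_ts @ d88_os) 4 = [9, 0, 3]"
  "nb (d88_ts @ d88_os) 5 = [8, 21, 24]"
  "nb (d88_ts @ d88_os) 6 = [9, 1, 8]"
  "nb (d88_ts @ d88_os) 7 = [2, 19, 20]"
  "nb (d88_ts @ d88_os) 8 = [5, 3, 6]"
  "nb (d88_ts @ d88_os) 9 = [4, 6, 27]"
  "nb (d88_ts @ d88_os) 10 = [15, 11, 28]"
  "nb (d88_ts @ d88_os) 11 = [12, 10, 16]"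
  "nb (d88_ts @ d88_os) 12 = [11, 17, 25]"
  "nb (d88_ts @ d88_os) 13 = [15, 16, 22]"
  "nb (d88_ts @ d88_os) 14 = [17, 16, 26]"
  "nb (d88_ts @ d88_os) 15 = [10, 13, 17]"
  "nb (d88_ts @ d88_os) 16 = [13, 11, 14]"
  "nb (d88_ts @ d88_os) 17 = [12, 14, 15]"
  "nb (d88_ts @ d88_os) 18 = [21, 19, 28]"
  "nb (d88_ts @ d88_os) 19 = [7, 18, 26]"
  "nb (d88_ts @ d88_os) 20 = [7, 21, 27]"
  "nb (d88_ts @ d88_os) 21 = [5, 18, 20]"
  "nb (d88_ts @ d88_os) 22 = [13, 0, 23]"
  "nb (d88_ts @ d88_os) 23 = [25, 1, 22]"
  "nb (d88_ts @ d88_os) 24 = [0, 5, 25]"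
  "nb (d88_ts @ d88_os) 25 = [12, 23, 24]"
  "nb (d88_ts @ d88_os) 26 = [29, 14, 19]"
  "nb (d88_ts @ d88_os) 27 = [9, 20, 29]"
  "nb (d88_ts @ d88_os) 28 = [29, 10, 18]"
  "nb (d88_ts @ d88_os) 29 = [26, 27, 28]"
  by (simp_all add: nb_def d88_ts_def d88_os_def)
lemma d88_upt: "[0..<30] = [0, 1, 2, 3, 4, 5, 6, 7, 8, 9, 10, 11, 12, 13, 14, 15, 16, 17, 18, 19, 20, 21, 22, 23, 24, 25, 26, 27, 28, 29]" by code_simp
lemma d88_1: "wf_es 30 (d88_ts @ d88_os)" unfolding d88_ts_def d88_os_def d88_rest_def by code_simp
lemma d88_2: "list_all (\<lambda>v. degl (d88_ts @ d88_os) v = 3) [0..<30]" unfolding d88_ts_def d88_os_def d88_rest_def by code_simp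
lemma d88_3: "check_girth 30 (d88_ts @ d88_os)" by (simp add: check_girth_def d88_nb d88_upt)
lemma d88_4: "check_col (d88_ts @ d88_os) d88_rest (10,11) (10,15) (10,28)" unfolding d88_ts_def d88_os_def d88_rest_def by code_simp
lemma d88_5: "check_c4c 30 (d88_ts @ d88_os) d88_os d88_cert"
proof -
  have "check_c4c 30 (d88_ts @ d88_os) [(0,4), (0,22), (1,6), (1,23), (3,4), (3,8), (6,8), (10,11), (10,28), (11,16), (14,16), (14,26), (18,19), (18,28), (19,26), (22,23)] d88_cert"
    by (simp add: check_c4c_def valid_entry_def walk_def pedges_def nrm_def d88_nb upt4 d88_cert_def)
  then show ?thesis by (simp only: d88_os_def[symmetric])
qed
lemma d88_6: "check_tree 30 d88_ts [0, 2, 7, 2, 9, 24, 9, 20, 5, 27, 15, 12, 25, 15, 17, 17, 13, 12, 21, 7, 21, 5, 13, 25, 0, 24, 29, 20, 29, 27] [0, 7, 6, 7, 7, 2, 7, 5, 3, 6, 6, 4, 3, 6, 5, 5, 7, 4, 4, 6, 4, 3, 7, 3, 1, 2, 7, 5, 7, 6]" unfolding d88_ts_def d88_os_def d88_rest_def by code_simp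
lemma d88_7: "check_oc 30 d88_ts d88_os [0, 4, 3, 8, 6, 1, 23, 22] [10, 11, 16, 14, 26, 19, 18, 28]" unfolding d88_ts_def d88_os_def d88_rest_def by code_simp
lemma d88: "check_all 30 d88_ts d88_os d88_cert d88_rest (10,11) (10,15) (10,28) [0, 2, 7, 2, 9, 24, 9, 20, 5, 27, 15, 12, 25, 15, 17, 17, 13, 12, 21, 7, 21, 5, 13, 25, 0, 24, 29, 20, 29, 27] [0, 7, 6, 7, 7, 2, 7, 5, 3, 6, 6, 4, 3, 6, 5, 5, 7, 4, 4, 6, 4, 3, 7, 3, 1, 2, 7, 5, 7, 6] [0, 4, 3, 8, 6, 1, 23, 22] [10, 11, 16, 14, 26, 19, 18, 28]"
  unfolding check_all_def using d88_1 d88_2 d88_3 d88_4 d88_5 d88_6 d88_7 by blast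

lemma p88: "\<exists>(V :: nat set) (E :: nat set set) T. snark V E \<and> hist V E T \<and> oc V E T = {#8, 8#}"
  by (rule inst_helper[OF d88]) simp_all

theorem lemma4:
  fixes x y :: nat
  assumes "x \<in> {5, 6, 7, 8}" and "y \<in> {5, 6, 7, 8}"
  shows "\<exists>(V :: nat set) (E :: nat set set) T.
           snark V E \<and> hist V E T \<and> oc V E T = {#x, y#}"
proof -
  have sym: "{#x, y#} = {#y, x#}" by (simp add: add_mset_commute)
  have "x \<le> y \<or> y \<le> x" by arith
  then show ?thesis
  proof
    assume "x \<le> y"
    with assms show ?thesis using p55 p56 p57 p58 p66 p67 p68 p77 p78 p88 by auto
  next
    assume "y \<le> x"
    with assms show ?thesis unfolding sym using p55 p56 p57 p58 p66 p67 p68 p77 p78 p88 by auto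
  qed
qed

end
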